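(* Let $(G_x \mid x \in \mathbb{N}_0)$ be the coclass family defined by $\eta \in H^3(P,T)$, let $L$ be an elementary abelian subgroup of $P$ and $x \in \mathbb{N}_0$. Then: (a) $\overline{L}_x$ splits over $M_x$ if and only if $L \in \mathcal{L}_\eta$; (b) if $\overline{L}_x$ splits over $M_x$, then $\overline{L}$ splits over $T$.
   Context: Conventions: normalised cocycles $Z^n$, coboundaries $B^n$, cohomology $H^n$ for right modules written additively; $\mathrm{Ext}(\tau)$ for $\tau\in Z^2(G,M)$ is $G\times M$ with $(g,m)(h,n)=(gh,m^h+n+\tau(g,h))$. Setting: $S$ an infinite pro-$p$-group of finite coclass; $T = \gamma_\ell(S)$ ($\ell$ large) with $T\cong \mathbb{Z}_p^d$, $P = S/T$ finite with $|P| = p^m$, the series $T_0=T$, $T_{i+1}=[T_i,S]$ with all indices $p$; $T$ an additive $P$-module via conjugation; $S = \mathrm{Ext}(\rho)$, $\rho \in Z^2(P,T)$. For $L\leq P$, $\overline{L}$ is the full preimage of $L$ in $S$. $\mathcal{L}$ is the set of elementary abelian $L\leq P$ with $\rho_L \in B^2(L,T)$, and $\mathcal{L}_\eta = \{L\in\mathcal{L} \mid \mathrm{res}^P_L(\eta) = 0 \in H^3(L,T)\}$. Coclass family: $e=3m$, $M_x = T/p^{x+e}T$; $pro_x: Z^2(P,T)\to Z^2(P,M_x)$ induced by projection, with image $I^2(P,M_x)$; $J^2(P,M_x)$ the image of $Z^2(P,p^{x+e-m}T/p^{x+e}T)\to Z^2(P,M_x)$ induced by inclusion; $K^2(P,M_x)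 \leq J^2(P,M_x)$ fixed complements of $I^2(P,M_x)$ in $Z^2(P,M_x)$ with $mul(K^2(P,M_x)) = K^2(P,M_{x+1})$, $mul$ induced by $t+p^{x+e}T\mapsto pt+p^{x+e+1}T$. The composite $Z^2(P,M_x)\to H^2(P,M_x)\to H^3(P,p^{x+e}T)\to H^3(P,T)$ (quotient, connecting homomorphism, division by $p^{x+e}$) restricts to an isomorphism on $K^2(P,M_x)$; $\eta_x\in K^2(P,M_x)$ is the preimage of $\eta$, $\rho_x = pro_x(\rho)$, $G_x = \mathrm{Ext}(\rho_x+\eta_x)$, with $M_x$ identified with $\{(1,m)\}$. For $L \leq P$, $\overline{L}_x$ is the full preimage of $L$ under $G_x \to P$, $(g,m)\mapsto g$. *)

theory Defs
  imports "HOL-Algebra.Algebra"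
begin

text \<open>The additive group of the p-adic integers, realised as the inverse limit of the
  groups Z/p^k Z: coherent sequences of residues.\<close>

definition Zp :: "nat \<Rightarrow> (nat \<Rightarrow> int) monoid" where
  "Zp p = \<lparr>carrier = {f. \<forall>k. 0 \<le> f k \<and> f k < int p ^ k \<and> f (Suc k) mod (int p ^ k) = f k},
           monoid.mult = (\<lambda>f g k. (f k + g k) mod (int p ^ k)),
           one = (\<lambda>k. 0)\<rparr>"

section \<open>Normalised cochains, cocycles, coboundaries (right modules, written additively;
  in HOL-Algebra the module A is a commutative group written multiplicatively)\<close>

text \<open>Cochains are extended by zero outside the carrier, so that equal cochains are
  equal functions.\<close>

definition C1 :: "'g monoid \<Rightarrow> 'a monoid \<Rightarrow> ('g \<Rightarrow> 'a) set" where
  "C1 P A = {f. (\<forall>g\<in>carrier P. f g \<in> carrier A) \<and> (\<forall>g. g \<notin> carrier P \<longrightarrow> f g = \<one>\<^bsub>A\<^esub>)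
               \<and> f \<one>\<^bsub>P\<^esub> = \<one>\<^bsub>A\<^esub>}"

definition C2 :: "'g monoid \<Rightarrow> 'a monoid \<Rightarrow> ('g \<Rightarrow> 'g \<Rightarrow> 'a) set" where
  "C2 P A = {f. (\<forall>g\<in>carrier P. \<forall>h\<in>carrier P. f g h \<in> carrier A)
               \<and> (\<forall>g h. (g \<notin> carrier P \<or> h \<notin> carrier P) \<longrightarrow> f g h = \<one>\<^bsub>A\<^esub>)
               \<and> (\<forall>g\<in>carrier P. f \<one>\<^bsub>P\<^esub> g = \<one>\<^bsub>A\<^esub> \<and> f g \<one>\<^bsub>P\<^esub> = \<one>\<^bsub>A\<^esub>)}"

definition C3 :: "'g monoid \<Rightarrow> 'a monoid \<Rightarrow> ('g \<Rightarrow> 'g \<Rightarrow> 'g \<Rightarrow> 'a) set" where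
  "C3 P A = {f. (\<forall>g\<in>carrier P. \<forall>h\<in>carrier P. \<forall>k\<in>carrier P. f g h k \<in> carrier A)
               \<and> (\<forall>g h k. (g \<notin> carrier P \<or> h \<notin> carrier P \<or> k \<notin> carrier P) \<longrightarrow> f g h k = \<one>\<^bsub>A\<^esub>)
               \<and> (\<forall>g\<in>carrier P. \<forall>h\<in>carrier P. f \<one>\<^bsub>P\<^esub> g h = \<one>\<^bsub>A\<^esub> \<and> f g \<one>\<^bsub>P\<^esub> h = \<one>\<^bsub>A\<^esub>
                                           \<and> f g h \<one>\<^bsub>P\<^esub> = \<one>\<^bsub>A\<^esub>)}"

text \<open>Coboundary maps; \<open>\<alpha> g a\<close> is the right action \<open>a^g\<close>.
  (\<delta>f)(g1,..,g(n+1)) = f(g2,..) + sum (-1)^i f(..,gi gi+1,..) + (-1)^(n+1) f(g1,..,gn)^g(n+1).\<close>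

definition d1 :: "'g monoid \<Rightarrow> 'a monoid \<Rightarrow> ('g \<Rightarrow> 'a \<Rightarrow> 'a) \<Rightarrow> ('g \<Rightarrow> 'a) \<Rightarrow> ('g \<Rightarrow> 'g \<Rightarrow> 'a)" where
  "d1 P A \<alpha> f = (\<lambda>g h. if g \<in> carrier P \<and> h \<in> carrier P
      then f h \<otimes>\<^bsub>A\<^esub> inv\<^bsub>A\<^esub> (f (g \<otimes>\<^bsub>P\<^esub> h)) \<otimes>\<^bsub>A\<^esub> \<alpha> h (f g) else \<one>\<^bsub>A\<^esub>)"

definition d2 :: "'g monoid \<Rightarrow> 'a monoid \<Rightarrow> ('g \<Rightarrow> 'a \<Rightarrow> 'a) \<Rightarrow> ('g \<Rightarrow> 'g \<Rightarrow> 'a) \<Rightarrow> ('g \<Rightarrow> 'g \<Rightarrow> 'g \<Rightarrow> 'a)" where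
  "d2 P A \<alpha> f = (\<lambda>g h k. if g \<in> carrier P \<and> h \<in> carrier P \<and> k \<in> carrier P
      then f h k \<otimes>\<^bsub>A\<^esub> inv\<^bsub>A\<^esub> (f (g \<otimes>\<^bsub>P\<^esub> h) k) \<otimes>\<^bsub>A\<^esub> f g (h \<otimes>\<^bsub>P\<^esub> k)
           \<otimes>\<^bsub>A\<^esub> inv\<^bsub>A\<^esub> (\<alpha> k (f g h))
      else \<one>\<^bsub>A\<^esub>)"

definition d3 :: "'g monoid \<Rightarrow> 'a monoid \<Rightarrow> ('g \<Rightarrow> 'a \<Rightarrow> 'a) \<Rightarrow> ('g \<Rightarrow> 'g \<Rightarrow> 'g \<Rightarrow> 'a) \<Rightarrow> ('g \<Rightarrow> 'g \<Rightarrow> 'g \<Rightarrow> 'g \<Rightarrow> 'a)" where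
  "d3 P A \<alpha> f = (\<lambda>g h k l. if g \<in> carrier P \<and> h \<in> carrier P \<and> k \<in> carrier P \<and> l \<in> carrier P
      then f h k l \<otimes>\<^bsub>A\<^esub> inv\<^bsub>A\<^esub> (f (g \<otimes>\<^bsub>P\<^esub> h) k l) \<otimes>\<^bsub>A\<^esub> f g (h \<otimes>\<^bsub>P\<^esub> k) l
           \<otimes>\<^bsub>A\<^esub> inv\<^bsub>A\<^esub> (f g h (k \<otimes>\<^bsub>P\<^esub> l)) \<otimes>\<^bsub>A\<^esub> \<alpha> l (f g h k)
      else \<one>\<^bsub>A\<^esub>)"

definition Z2 :: "'g monoid \<Rightarrow> 'a monoid \<Rightarrow> ('g \<Rightarrow> 'a \<Rightarrow> 'a) \<Rightarrow> ('g \<Rightarrow> 'g \<Rightarrow> 'a) set" where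
  "Z2 P A \<alpha> = {f \<in> C2 P A. \<forall>g\<in>carrier P. \<forall>h\<in>carrier P. \<forall>k\<in>carrier P. d2 P A \<alpha> f g h k = \<one>\<^bsub>A\<^esub>}"

definition B2 :: "'g monoid \<Rightarrow> 'a monoid \<Rightarrow> ('g \<Rightarrow> 'a \<Rightarrow> 'a) \<Rightarrow> ('g \<Rightarrow> 'g \<Rightarrow> 'a) set" where
  "B2 P A \<alpha> = d1 P A \<alpha> ` C1 P A"

definition Z3 :: "'g monoid \<Rightarrow> 'a monoid \<Rightarrow> ('g \<Rightarrow> 'a \<Rightarrow> 'a) \<Rightarrow> ('g \<Rightarrow> 'g \<Rightarrow> 'g \<Rightarrow> 'a) set" where
  "Z3 P A \<alpha> = {f \<in> C3 P A. \<forall>g\<in>carrier P. \<forall>h\<in>carrier P. \<forall>k\<in>carrier P. \<forall>l\<in>carrier P.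
                              d3 P A \<alpha> f g h k l = \<one>\<^bsub>A\<^esub>}"

definition B3 :: "'g monoid \<Rightarrow> 'a monoid \<Rightarrow> ('g \<Rightarrow> 'a \<Rightarrow> 'a) \<Rightarrow> ('g \<Rightarrow> 'g \<Rightarrow> 'g \<Rightarrow> 'a) set" where
  "B3 P A \<alpha> = d2 P A \<alpha> ` C2 P A"

definition cls3 :: "'g monoid \<Rightarrow> 'a monoid \<Rightarrow> ('g \<Rightarrow> 'a \<Rightarrow> 'a) \<Rightarrow> ('g \<Rightarrow> 'g \<Rightarrow> 'g \<Rightarrow> 'a)
                    \<Rightarrow> ('g \<Rightarrow> 'g \<Rightarrow> 'g \<Rightarrow> 'a) set" where
  "cls3 P A \<alpha> z = {w \<in> Z3 P A \<alpha>. (\<lambda>g h k. w g h k \<otimes>\<^bsub>A\<^esub> inv\<^bsub>A\<^esub> (z g h k)) \<in> B3 P A \<alpha>}"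

definition H3 :: "'g monoid \<Rightarrow> 'a monoid \<Rightarrow> ('g \<Rightarrow> 'a \<Rightarrow> 'a) \<Rightarrow> ('g \<Rightarrow> 'g \<Rightarrow> 'g \<Rightarrow> 'a) set set" where
  "H3 P A \<alpha> = cls3 P A \<alpha> ` Z3 P A \<alpha>"

definition res2 :: "'a monoid \<Rightarrow> 'g set \<Rightarrow> ('g \<Rightarrow> 'g \<Rightarrow> 'a) \<Rightarrow> ('g \<Rightarrow> 'g \<Rightarrow> 'a)" where
  "res2 A L f = (\<lambda>g h. if g \<in> L \<and> h \<in> L then f g h else \<one>\<^bsub>A\<^esub>)"

definition res3 :: "'a monoid \<Rightarrow> 'g set \<Rightarrow> ('g \<Rightarrow> 'g \<Rightarrow> 'g \<Rightarrow> 'a) \<Rightarrow> ('g \<Rightarrow> 'g \<Rightarrow> 'g \<Rightarrow> 'a)" where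
  "res3 A L f = (\<lambda>g h k. if g \<in> L \<and> h \<in> L \<and> k \<in> L then f g h k else \<one>\<^bsub>A\<^esub>)"

definition resH3 :: "'g monoid \<Rightarrow> 'a monoid \<Rightarrow> ('g \<Rightarrow> 'a \<Rightarrow> 'a) \<Rightarrow> 'g set
                     \<Rightarrow> ('g \<Rightarrow> 'g \<Rightarrow> 'g \<Rightarrow> 'a) set \<Rightarrow> ('g \<Rightarrow> 'g \<Rightarrow> 'g \<Rightarrow> 'a) set" where
  "resH3 P A \<alpha> L \<eta> = cls3 (P\<lparr>carrier := L\<rparr>) A \<alpha> (res3 A L (SOME z. z \<in> \<eta>))"

definition elem_abelian :: "'g monoid \<Rightarrow> nat \<Rightarrow> 'g set \<Rightarrow> bool" where
  "elem_abelian P p L \<longleftrightarrow> subgroup L P \<and> comm_group (P\<lparr>carrier := L\<rparr>)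
                          \<and> (\<forall>g\<in>L. g [^]\<^bsub>P\<^esub> p = \<one>\<^bsub>P\<^esub>)"

definition calL :: "'g monoid \<Rightarrow> 'a monoid \<Rightarrow> ('g \<Rightarrow> 'a \<Rightarrow> 'a) \<Rightarrow> nat \<Rightarrow> ('g \<Rightarrow> 'g \<Rightarrow> 'a) \<Rightarrow> 'g set set" where
  "calL P A \<alpha> p \<rho> = {L. elem_abelian P p L \<and> res2 A L \<rho> \<in> B2 (P\<lparr>carrier := L\<rparr>) A \<alpha>}"

definition calL_eta :: "'g monoid \<Rightarrow> 'a monoid \<Rightarrow> ('g \<Rightarrow> 'a \<Rightarrow> 'a) \<Rightarrow> nat \<Rightarrow> ('g \<Rightarrow> 'g \<Rightarrow> 'a)
                        \<Rightarrow> ('g \<Rightarrow> 'g \<Rightarrow> 'g \<Rightarrow> 'a) set \<Rightarrow> 'g set set" where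
  "calL_eta P A \<alpha> p \<rho> \<eta> = {L \<in> calL P A \<alpha> p \<rho>.
       resH3 P A \<alpha> L \<eta> = cls3 (P\<lparr>carrier := L\<rparr>) A \<alpha> (\<lambda>_ _ _. \<one>\<^bsub>A\<^esub>)}"

definition Ext :: "'g monoid \<Rightarrow> 'a monoid \<Rightarrow> ('g \<Rightarrow> 'a \<Rightarrow> 'a) \<Rightarrow> ('g \<Rightarrow> 'g \<Rightarrow> 'a) \<Rightarrow> ('g \<times> 'a) monoid" where
  "Ext P A \<alpha> \<tau> = \<lparr>carrier = carrier P \<times> carrier A,
      monoid.mult = (\<lambda>x y. (fst x \<otimes>\<^bsub>P\<^esub> fst y, \<alpha> (fst y) (snd x) \<otimes>\<^bsub>A\<^esub> snd y \<otimes>\<^bsub>A\<^esub> \<tau> (fst x) (fst y))),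
      one = (\<one>\<^bsub>P\<^esub>, \<one>\<^bsub>A\<^esub>)\<rparr>"

text \<open>The module A identified with {(1,m)}, and full preimages of subgroups L of P.\<close>

definition base :: "'g monoid \<Rightarrow> 'a monoid \<Rightarrow> ('g \<times> 'a) set" where
  "base P A = {(\<one>\<^bsub>P\<^esub>, m) | m. m \<in> carrier A}"

definition preim :: "('g \<times> 'a) monoid \<Rightarrow> 'g set \<Rightarrow> ('g \<times> 'a) set" where
  "preim E L = {x \<in> carrier E. fst x \<in> L}"

definition splits_over :: "('b, 'c) monoid_scheme \<Rightarrow> 'b set \<Rightarrow> 'b set \<Rightarrow> bool" where
  "splits_over G Y N \<longleftrightarrow> (\<exists>C. subgroup C G \<and> C \<subseteq> Y \<and> C \<inter> N = {\<one>\<^bsub>G\<^esub>} \<and> set_mult G C N = Y)"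

definition commsub :: "('b, 'c) monoid_scheme \<Rightarrow> 'b set \<Rightarrow> 'b set \<Rightarrow> 'b set" where
  "commsub G A B = generate G {a \<otimes>\<^bsub>G\<^esub> b \<otimes>\<^bsub>G\<^esub> inv\<^bsub>G\<^esub> a \<otimes>\<^bsub>G\<^esub> inv\<^bsub>G\<^esub> b | a b. a \<in> A \<and> b \<in> B}"

text \<open>lcs G i = gamma_i(G), with gamma_1(G) = G.\<close>

fun lcs :: "('b, 'c) monoid_scheme \<Rightarrow> nat \<Rightarrow> 'b set" where
  "lcs G 0 = carrier G"
| "lcs G (Suc 0) = carrier G"
| "lcs G (Suc (Suc n)) = commsub G (lcs G (Suc n)) (carrier G)"

definition finite_coclass :: "('b, 'c) monoid_scheme \<Rightarrow> nat \<Rightarrow> bool" where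
  "finite_coclass G p \<longleftrightarrow> (\<exists>r::nat. \<forall>i\<ge>1. finite (rcosets\<^bsub>G\<^esub> (lcs G (Suc i)))
                               \<and> card (rcosets\<^bsub>G\<^esub> (lcs G (Suc i))) \<le> p ^ (i + r))"

primrec Tser :: "('b, 'c) monoid_scheme \<Rightarrow> 'b set \<Rightarrow> nat \<Rightarrow> 'b set" where
  "Tser G T0 0 = T0"
| "Tser G T0 (Suc n) = commsub G (Tser G T0 n) (carrier G)"

definition pT :: "'a monoid \<Rightarrow> nat \<Rightarrow> nat \<Rightarrow> 'a set" where
  "pT A p k = {t [^]\<^bsub>A\<^esub> (p ^ k) | t. t \<in> carrier A}"

definition Mq :: "'a monoid \<Rightarrow> nat \<Rightarrow> nat \<Rightarrow> 'a set monoid" where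
  "Mq A p k = A Mod (pT A p k)"

definition actM :: "('g \<Rightarrow> 'a \<Rightarrow> 'a) \<Rightarrow> 'g \<Rightarrow> 'a set \<Rightarrow> 'a set" where
  "actM \<alpha> g C = \<alpha> g ` C"

definition proj2 :: "'g monoid \<Rightarrow> 'a monoid \<Rightarrow> nat \<Rightarrow> nat \<Rightarrow> ('g \<Rightarrow> 'g \<Rightarrow> 'a) \<Rightarrow> ('g \<Rightarrow> 'g \<Rightarrow> 'a set)" where
  "proj2 P A p k \<tau> = (\<lambda>g h. if g \<in> carrier P \<and> h \<in> carrier P
        then r_coset A (pT A p k) (\<tau> g h) else pT A p k)"

definition mulc :: "'a monoid \<Rightarrow> nat \<Rightarrow> nat \<Rightarrow> 'a set \<Rightarrow> 'a set" where
  "mulc A p k C = set_mult A (pT A p (Suc k)) ((\<lambda>t. t [^]\<^bsub>A\<^esub> p) ` C)"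

definition mul2 :: "'g monoid \<Rightarrow> 'a monoid \<Rightarrow> nat \<Rightarrow> nat \<Rightarrow> ('g \<Rightarrow> 'g \<Rightarrow> 'a set) \<Rightarrow> ('g \<Rightarrow> 'g \<Rightarrow> 'a set)" where
  "mul2 P A p k \<kappa> = (\<lambda>g h. if g \<in> carrier P \<and> h \<in> carrier P
        then mulc A p k (\<kappa> g h) else pT A p (Suc k))"

definition cadd2 :: "('b, 'c) monoid_scheme \<Rightarrow> ('g \<Rightarrow> 'g \<Rightarrow> 'b) \<Rightarrow> ('g \<Rightarrow> 'g \<Rightarrow> 'b) \<Rightarrow> ('g \<Rightarrow> 'g \<Rightarrow> 'b)" where
  "cadd2 M f f' = (\<lambda>g h. f g h \<otimes>\<^bsub>M\<^esub> f' g h)"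

definition cneg2 :: "('b, 'c) monoid_scheme \<Rightarrow> ('g \<Rightarrow> 'g \<Rightarrow> 'b) \<Rightarrow> ('g \<Rightarrow> 'g \<Rightarrow> 'b)" where
  "cneg2 M f = (\<lambda>g h. inv\<^bsub>M\<^esub> (f g h))"

definition is_complement2 :: "('b, 'c) monoid_scheme \<Rightarrow> ('g \<Rightarrow> 'g \<Rightarrow> 'b) set \<Rightarrow> ('g \<Rightarrow> 'g \<Rightarrow> 'b) set
                              \<Rightarrow> ('g \<Rightarrow> 'g \<Rightarrow> 'b) set \<Rightarrow> bool" where
  "is_complement2 M Z I K \<longleftrightarrow> K \<subseteq> Z \<and> (\<lambda>_ _. \<one>\<^bsub>M\<^esub>) \<in> K
     \<and> (\<forall>a\<in>K. \<forall>b\<in>K. cadd2 M a b \<in> K) \<and> (\<forall>a\<in>K. cneg2 M a \<in> K)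
     \<and> K \<inter> I = {\<lambda>_ _. \<one>\<^bsub>M\<^esub>} \<and> (\<forall>z\<in>Z. \<exists>a\<in>K. \<exists>b\<in>I. z = cadd2 M a b)"

definition I2 :: "'g monoid \<Rightarrow> 'a monoid \<Rightarrow> ('g \<Rightarrow> 'a \<Rightarrow> 'a) \<Rightarrow> nat \<Rightarrow> nat \<Rightarrow> ('g \<Rightarrow> 'g \<Rightarrow> 'a set) set" where
  "I2 P A \<alpha> p k = proj2 P A p k ` Z2 P A \<alpha>"

text \<open>J^2(P, A/p^k A): image of Z^2(P, p^(k-m) A / p^k A) under the map induced by inclusion
  (the inclusion is the identity on cosets).\<close>
definition J2 :: "'g monoid \<Rightarrow> 'a monoid \<Rightarrow> ('g \<Rightarrow> 'a \<Rightarrow> 'a) \<Rightarrow> nat \<Rightarrow> nat \<Rightarrow> nat \<Rightarrow> ('g \<Rightarrow> 'g \<Rightarrow> 'a set) set" where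
  "J2 P A \<alpha> p m k = Z2 P ((Mq A p k)\<lparr>carrier := (\<lambda>t. r_coset A (pT A p k) (t)) ` pT A p (k - m)\<rparr>) (actM \<alpha>)"

text \<open>The composite Z^2(P,A/p^kA) -> H^2(P,A/p^kA) -> H^3(P,p^kA) -> H^3(P,A):
  lift \<kappa> to a normalised 2-cochain \<kappa>' with values in A; its coboundary takes values in
  p^k A (connecting homomorphism); divide by p^k and take the class.\<close>
definition conn :: "'g monoid \<Rightarrow> 'a monoid \<Rightarrow> ('g \<Rightarrow> 'a \<Rightarrow> 'a) \<Rightarrow> nat \<Rightarrow> nat
                    \<Rightarrow> ('g \<Rightarrow> 'g \<Rightarrow> 'a set) \<Rightarrow> ('g \<Rightarrow> 'g \<Rightarrow> 'g \<Rightarrow> 'a) set" where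
  "conn P A \<alpha> p k \<kappa> = cls3 P A \<alpha> (SOME z. z \<in> C3 P A \<and>
      (\<exists>\<kappa>'\<in>C2 P A. (\<forall>g\<in>carrier P. \<forall>h\<in>carrier P. \<kappa> g h = r_coset A (pT A p k) (\<kappa>' g h))
         \<and> (\<forall>g\<in>carrier P. \<forall>h\<in>carrier P. \<forall>l\<in>carrier P.
               z g h l [^]\<^bsub>A\<^esub> (p ^ k) = d2 P A \<alpha> \<kappa>' g h l)))"


text \<open>e = 3m; M_x = A / p^(x+e) A; eta_x is the preimage of eta in K^2(P,M_x).\<close>
definition eta_x :: "'g monoid \<Rightarrow> 'a monoid \<Rightarrow> ('g \<Rightarrow> 'a \<Rightarrow> 'a) \<Rightarrow> nat \<Rightarrow> nat
     \<Rightarrow> (nat \<Rightarrow> ('g \<Rightarrow> 'g \<Rightarrow> 'a set) set) \<Rightarrow> ('g \<Rightarrow> 'g \<Rightarrow> 'g \<Rightarrow> 'a) set \<Rightarrow> nat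
     \<Rightarrow> ('g \<Rightarrow> 'g \<Rightarrow> 'a set)" where
  "eta_x P A \<alpha> p m K \<eta> x = (THE \<kappa>. \<kappa> \<in> K x \<and> conn P A \<alpha> p (x + 3 * m) \<kappa> = \<eta>)"

definition Gx :: "'g monoid \<Rightarrow> 'a monoid \<Rightarrow> ('g \<Rightarrow> 'a \<Rightarrow> 'a) \<Rightarrow> nat \<Rightarrow> nat \<Rightarrow> ('g \<Rightarrow> 'g \<Rightarrow> 'a)
     \<Rightarrow> (nat \<Rightarrow> ('g \<Rightarrow> 'g \<Rightarrow> 'a set) set) \<Rightarrow> ('g \<Rightarrow> 'g \<Rightarrow> 'g \<Rightarrow> 'a) set \<Rightarrow> nat
     \<Rightarrow> ('g \<times> 'a set) monoid" where
  "Gx P A \<alpha> p m \<rho> K \<eta> x = Ext P (Mq A p (x + 3 * m)) (actM \<alpha>)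
      (cadd2 (Mq A p (x + 3 * m)) (proj2 P A p (x + 3 * m) \<rho>) (eta_x P A \<alpha> p m K \<eta> x))"

end

theory Submission
  imports Defs
begin


lemma (in comm_group) frac_eq1: "a \<in> carrier G \<Longrightarrow> x \<in> carrier G \<Longrightarrow> y \<in> carrier G \<Longrightarrow>
   a \<otimes> inv x \<otimes> y \<otimes> x = a \<otimes> y"
proof -
  assume c[simp]: "a \<in> carrier G" "x \<in> carrier G" "y \<in> carrier G"
  have "a \<otimes> inv x \<otimes> y \<otimes> x = a \<otimes> y \<otimes> (inv x \<otimes> x)"
    by (simp only: m_ac inv_closed m_closed c)
  also have "\<dots> = a \<otimes> y" by simp
  finally show ?thesis .
qed

lemma (in comm_group) frac_eq2: "a \<in> carrier G \<Longrightarrow> b \<in> carrier G \<Longrightarrow> c \<in> carrier G \<Longrightarrow> d \<in> carrier G \<Longrightarrow>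
   a \<otimes> inv b \<otimes> c \<otimes> inv d \<otimes> b \<otimes> d = a \<otimes> c"
proof -
  assume c[simp]: "a \<in> carrier G" "b \<in> carrier G" "c \<in> carrier G" "d \<in> carrier G"
  have "a \<otimes> inv b \<otimes> c \<otimes> inv d \<otimes> b \<otimes> d = a \<otimes> c \<otimes> (inv b \<otimes> b) \<otimes> (inv d \<otimes> d)"
    by (simp only: m_ac inv_closed m_closed c)
  also have "\<dots> = a \<otimes> c" by simp
  finally show ?thesis .
qed

lemma (in comm_group) frac_eq3: "a \<in> carrier G \<Longrightarrow> b \<in> carrier G \<Longrightarrow> c \<in> carrier G \<Longrightarrow> d \<in> carrier G
   \<Longrightarrow> e \<in> carrier G \<Longrightarrow>
   a \<otimes> inv b \<otimes> c \<otimes> inv d \<otimes> e \<otimes> b \<otimes> d = a \<otimes> c \<otimes> e"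
proof -
  assume c[simp]: "a \<in> carrier G" "b \<in> carrier G" "c \<in> carrier G" "d \<in> carrier G" "e \<in> carrier G"
  have "a \<otimes> inv b \<otimes> c \<otimes> inv d \<otimes> e \<otimes> b \<otimes> d = a \<otimes> c \<otimes> e \<otimes> (inv b \<otimes> b) \<otimes> (inv d \<otimes> d)"
    by (simp only: m_ac inv_closed m_closed c)
  also have "\<dots> = a \<otimes> c \<otimes> e" by simp
  finally show ?thesis .
qed

lemma (in comm_group) frac_eq4: "a \<in> carrier G \<Longrightarrow> b \<in> carrier G \<Longrightarrow> c \<in> carrier G \<Longrightarrow>
   inv a \<otimes> inv b \<otimes> (b \<otimes> a \<otimes> c) = c"
proof -
  assume e[simp]: "a \<in> carrier G" "b \<in> carrier G" "c \<in> carrier G"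
  have "inv a \<otimes> inv b \<otimes> (b \<otimes> a \<otimes> c) = (inv a \<otimes> a) \<otimes> (inv b \<otimes> b) \<otimes> c"
    by (simp only: m_ac inv_closed m_closed e)
  also have "\<dots> = c" by simp
  finally show ?thesis .
qed

lemma (in comm_group) frac_eq5: "a \<in> carrier G \<Longrightarrow> x \<in> carrier G \<Longrightarrow> a \<otimes> (x \<otimes> inv a) = x"
  by (metis inv_closed m_assoc m_comm r_inv r_one)

lemma Zp_carrier_mod:
  assumes y: "y \<in> carrier (Zp p)" shows "y (k + l) mod (int p ^ k) = y k"
proof (induction l)
  case 0
  then show ?case using y by (simp add: Zp_def)
next
  case (Suc l)
  have pk: "int p ^ k dvd int p ^ (k + l)" by (simp add: le_imp_power_dvd)
  have "y (k + Suc l) mod (int p ^ k) = (y (Suc (k + l)) mod int p ^ (k + l)) mod (int p ^ k)"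
    using pk by (simp add: mod_mod_cancel)
  also have "\<dots> = y (k + l) mod (int p ^ k)" using y by (simp add: Zp_def)
  finally show ?case using Suc by simp
qed

lemma Zp_torsion:
  assumes p: "p > 0" and y: "y \<in> carrier (Zp p)" and t: "\<forall>k. (int (p ^ j) * y k) mod (int p ^ k) = 0"
  shows "y k = 0"
proof -
  have "int p ^ (k + j) dvd int (p ^ j) * y (k + j)" using t[rule_format, of "k + j"] by (simp add: dvd_eq_mod_eq_0)
  hence "int p ^ k * int p ^ j dvd int p ^ j * y (k + j)" by (simp add: power_add of_nat_power)
  hence d: "int p ^ k dvd y (k + j)" using p by (simp add: mult.commute)
  have "y k = y (k + j) mod (int p ^ k)" using Zp_carrier_mod[OF y] by simp
  thus ?thesis using d by simp
qed

lemma TF_from_iso: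
  fixes T :: "'a monoid"
  assumes T: "comm_group T" and iso: "T \<cong> product_group I (\<lambda>_. Zp p)" and p: "p > 0"
    and t: "t \<in> carrier T" and tp: "t [^]\<^bsub>T\<^esub> (p ^ j) = \<one>\<^bsub>T\<^esub>"
  shows "t = \<one>\<^bsub>T\<^esub>"
proof -
  interpret T: comm_group T by (rule T)
  let ?G = "product_group I (\<lambda>_. Zp p)"
  obtain \<phi> where phi: "\<phi> \<in> iso T ?G" using iso unfolding is_iso_def by blast
  have hom: "\<phi> \<in> hom T ?G" using phi by (simp add: iso_def)
  have inj: "inj_on \<phi> (carrier T)" using phi by (simp add: iso_def bij_betw_def)
  have phic: "\<And>a. a \<in> carrier T \<Longrightarrow> \<phi> a \<in> carrier ?G" using hom by (auto simp: hom_def)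
  have phim: "\<And>a b. a \<in> carrier T \<Longrightarrow> b \<in> carrier T \<Longrightarrow> \<phi> (a \<otimes>\<^bsub>T\<^esub> b) = \<phi> a \<otimes>\<^bsub>?G\<^esub> \<phi> b"
    using hom by (auto simp: hom_def)
  have Zc: "\<And>a i. a \<in> carrier T \<Longrightarrow> i \<in> I \<Longrightarrow> \<phi> a i \<in> carrier (Zp p)"
    using phic by (auto simp: PiE_def Pi_def)
  have Zc': "\<And>a i. a \<in> carrier T \<Longrightarrow> i \<notin> I \<Longrightarrow> \<phi> a i = undefined"
    using phic by (auto simp: PiE_def extensional_def)
  have one: "\<phi> \<one>\<^bsub>T\<^esub> = (\<lambda>i\<in>I. \<lambda>k. 0)"
  proof
    fix i show "\<phi> \<one>\<^bsub>T\<^esub> i = (\<lambda>i\<in>I. \<lambda>k. 0) i"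
    proof (cases "i \<in> I")
      case True
      have e: "\<phi> \<one>\<^bsub>T\<^esub> = \<phi> \<one>\<^bsub>T\<^esub> \<otimes>\<^bsub>?G\<^esub> \<phi> \<one>\<^bsub>T\<^esub>" using phim[of "\<one>\<^bsub>T\<^esub>" "\<one>\<^bsub>T\<^esub>"] by simp
      show ?thesis
      proof
        fix k
        let ?y = "\<phi> \<one>\<^bsub>T\<^esub> i"
        have yc: "?y \<in> carrier (Zp p)" using Zc True by simp
        have "?y k = (?y k + ?y k) mod (int p ^ k)" using fun_cong[OF fun_cong[OF e, of i], of k] True
          by (simp add: Zp_def)
        moreover have "0 \<le> ?y k" "?y k < int p ^ k" using yc by (auto simp: Zp_def)
        ultimately have "?y k = 0"
          by (smt (verit, ccfv_threshold) div_mod_decomp_int mod_div_trivial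
              mod_eq_self_iff_div_eq_0 nonzero_mult_div_cancel_right)
        thus "?y k = (\<lambda>i\<in>I. \<lambda>k. 0) i k" using True by simp
      qed
    qed (simp add: Zc')
  qed
  have pw: "\<phi> (t [^]\<^bsub>T\<^esub> n) = (\<lambda>i\<in>I. \<lambda>k. (int n * \<phi> t i k) mod (int p ^ k))" for n
  proof (induction n)
    case 0
    show ?case using one by simp
  next
    case (Suc n)
    have "\<phi> (t [^]\<^bsub>T\<^esub> Suc n) = \<phi> (t [^]\<^bsub>T\<^esub> n) \<otimes>\<^bsub>?G\<^esub> \<phi> t" using t phim by simp
    also have "\<dots> = (\<lambda>i\<in>I. \<lambda>k. (int (Suc n) * \<phi> t i k) mod (int p ^ k))"
      unfolding Suc
    proof
      fix i show "((\<lambda>i\<in>I. \<lambda>k. (int n * \<phi> t i k) mod (int p ^ k)) \<otimes>\<^bsub>?G\<^esub> \<phi> t) i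
          = (\<lambda>i\<in>I. \<lambda>k. (int (Suc n) * \<phi> t i k) mod (int p ^ k)) i"
      proof (cases "i \<in> I")
        case True
        have "\<And>k. ((int n * \<phi> t i k) mod (int p ^ k) + \<phi> t i k) mod (int p ^ k) = (int (Suc n) * \<phi> t i k) mod (int p ^ k)"
          by (simp add: mod_add_left_eq distrib_right add.commute mod_add_right_eq)
        thus ?thesis using True by (simp add: Zp_def)
      qed simp
    qed
    finally show ?case .
  qed
  have "\<phi> t = (\<lambda>i\<in>I. \<lambda>k. 0)"
  proof
    fix i show "\<phi> t i = (\<lambda>i\<in>I. \<lambda>k. 0) i"
    proof (cases "i \<in> I")
      case True
      have "\<forall>k. (int (p ^ j) * \<phi> t i k) mod (int p ^ k) = 0"
      proof
        fix k
        have "\<phi> (t [^]\<^bsub>T\<^esub> (p ^ j)) i k = 0" using tp one True by simp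
        thus "(int (p ^ j) * \<phi> t i k) mod (int p ^ k) = 0" using pw[of "p ^ j"] True by simp
      qed
      hence "\<phi> t i k = 0" for k using Zp_torsion[OF p Zc[OF t True]] by blast
      thus ?thesis using True by auto
    qed (simp add: Zc' t)
  qed
  hence "\<phi> t = \<phi> \<one>\<^bsub>T\<^esub>" using one by simp
  thus ?thesis using inj t T.one_closed by (meson inj_onD)
qed


section \<open>Group actions on abelian groups\<close>

locale gmod =
  fixes P :: "'g monoid" and A :: "'b monoid" and \<alpha> :: "'g \<Rightarrow> 'b \<Rightarrow> 'b"
  assumes Pg: "group P" and Ag: "comm_group A"
    and ahom: "\<And>g. g \<in> carrier P \<Longrightarrow> \<alpha> g \<in> hom A A"
    and aone: "\<And>t. t \<in> carrier A \<Longrightarrow> \<alpha> \<one>\<^bsub>P\<^esub> t = t"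
    and amult: "\<And>g h t. g \<in> carrier P \<Longrightarrow> h \<in> carrier P \<Longrightarrow> t \<in> carrier A \<Longrightarrow>
                 \<alpha> (g \<otimes>\<^bsub>P\<^esub> h) t = \<alpha> h (\<alpha> g t)"
begin

sublocale P: group P by (rule Pg)
sublocale A: comm_group A by (rule Ag)

lemma a_closed[simp]: "g \<in> carrier P \<Longrightarrow> t \<in> carrier A \<Longrightarrow> \<alpha> g t \<in> carrier A"
  using ahom by (auto simp: hom_def)

lemma a_m[simp]: "g \<in> carrier P \<Longrightarrow> s \<in> carrier A \<Longrightarrow> t \<in> carrier A \<Longrightarrow>
   \<alpha> g (s \<otimes>\<^bsub>A\<^esub> t) = \<alpha> g s \<otimes>\<^bsub>A\<^esub> \<alpha> g t"
  using ahom by (auto simp: hom_def)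

lemma a_gh: "g \<in> carrier P \<Longrightarrow> group_hom A A (\<alpha> g)"
  using ahom by (simp add: group_hom_def group_hom_axioms_def A.is_group)

lemma a_one[simp]: "g \<in> carrier P \<Longrightarrow> \<alpha> g \<one>\<^bsub>A\<^esub> = \<one>\<^bsub>A\<^esub>"
  by (rule group_hom.hom_one[OF a_gh])

lemma a_inv[simp]: "g \<in> carrier P \<Longrightarrow> t \<in> carrier A \<Longrightarrow> \<alpha> g (inv\<^bsub>A\<^esub> t) = inv\<^bsub>A\<^esub> (\<alpha> g t)"
  by (rule group_hom.hom_inv[OF a_gh])

lemma a_pow[simp]: "g \<in> carrier P \<Longrightarrow> t \<in> carrier A \<Longrightarrow> \<alpha> g (t [^]\<^bsub>A\<^esub> (n::nat)) = (\<alpha> g t) [^]\<^bsub>A\<^esub> n"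
  by (rule group_hom.hom_nat_pow[OF a_gh])

lemma a_invg: "g \<in> carrier P \<Longrightarrow> t \<in> carrier A \<Longrightarrow> \<alpha> g (\<alpha> (inv\<^bsub>P\<^esub> g) t) = t"
proof -
  assume a: "g \<in> carrier P" "t \<in> carrier A"
  have "\<alpha> g (\<alpha> (inv\<^bsub>P\<^esub> g) t) = \<alpha> (inv\<^bsub>P\<^esub> g \<otimes>\<^bsub>P\<^esub> g) t" using amult[of "inv\<^bsub>P\<^esub> g" g t] a by (simp del: P.l_inv)
  also have "\<dots> = t" using a by (simp add: aone)
  finally show ?thesis .
qed

lemma a_invg': "g \<in> carrier P \<Longrightarrow> t \<in> carrier A \<Longrightarrow> \<alpha> (inv\<^bsub>P\<^esub> g) (\<alpha> g t) = t"
proof -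
  assume a: "g \<in> carrier P" "t \<in> carrier A"
  have "\<alpha> (inv\<^bsub>P\<^esub> g) (\<alpha> g t) = \<alpha> (g \<otimes>\<^bsub>P\<^esub> inv\<^bsub>P\<^esub> g) t" using amult[of g "inv\<^bsub>P\<^esub> g" t] a by (simp del: P.r_inv)
  also have "\<dots> = t" using a by (simp add: aone)
  finally show ?thesis .
qed


lemma C1_in: "f \<in> C1 P A \<Longrightarrow> g \<in> carrier P \<Longrightarrow> f g \<in> carrier A"
  by (simp add: C1_def)
lemma C1_out: "f \<in> C1 P A \<Longrightarrow> g \<notin> carrier P \<Longrightarrow> f g = \<one>\<^bsub>A\<^esub>"
  by (simp add: C1_def)
lemma C1_1: "f \<in> C1 P A \<Longrightarrow> f \<one>\<^bsub>P\<^esub> = \<one>\<^bsub>A\<^esub>"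
  by (simp add: C1_def)
lemma C2_in: "f \<in> C2 P A \<Longrightarrow> g \<in> carrier P \<Longrightarrow> h \<in> carrier P \<Longrightarrow> f g h \<in> carrier A"
  by (simp add: C2_def)
lemma C2_out: "f \<in> C2 P A \<Longrightarrow> g \<notin> carrier P \<or> h \<notin> carrier P \<Longrightarrow> f g h = \<one>\<^bsub>A\<^esub>"
  by (simp add: C2_def)
lemma C2_1: "f \<in> C2 P A \<Longrightarrow> g \<in> carrier P \<Longrightarrow> f \<one>\<^bsub>P\<^esub> g = \<one>\<^bsub>A\<^esub> \<and> f g \<one>\<^bsub>P\<^esub> = \<one>\<^bsub>A\<^esub>"
  by (simp add: C2_def)

lemma d1_eq:
  assumes f: "\<And>g. g \<in> carrier P \<Longrightarrow> f g \<in> carrier A" and gh: "g \<in> carrier P" "h \<in> carrier P"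
  shows "d1 P A \<alpha> f g h \<otimes>\<^bsub>A\<^esub> f (g \<otimes>\<^bsub>P\<^esub> h) = f h \<otimes>\<^bsub>A\<^esub> \<alpha> h (f g)"
  using gh by (simp add: d1_def A.frac_eq1 f)

lemma d1_closed:
  assumes f: "\<And>g. g \<in> carrier P \<Longrightarrow> f g \<in> carrier A"
  shows "d1 P A \<alpha> f g h \<in> carrier A"
  by (simp add: d1_def f)

lemma d1_unique:
  assumes f: "\<And>g. g \<in> carrier P \<Longrightarrow> f g \<in> carrier A" and gh: "g \<in> carrier P" "h \<in> carrier P"
    and w: "w \<in> carrier A" and e: "w \<otimes>\<^bsub>A\<^esub> f (g \<otimes>\<^bsub>P\<^esub> h) = f h \<otimes>\<^bsub>A\<^esub> \<alpha> h (f g)"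
  shows "d1 P A \<alpha> f g h = w"
proof -
  have "d1 P A \<alpha> f g h \<otimes>\<^bsub>A\<^esub> f (g \<otimes>\<^bsub>P\<^esub> h) = w \<otimes>\<^bsub>A\<^esub> f (g \<otimes>\<^bsub>P\<^esub> h)"
    using d1_eq[OF f gh] e by simp
  thus ?thesis using gh w f d1_closed[where f=f, OF f] by (simp del: A.r_cancel_one A.r_cancel_one')
qed

lemma d2_eq:
  assumes f: "\<And>g h. g \<in> carrier P \<Longrightarrow> h \<in> carrier P \<Longrightarrow> f g h \<in> carrier A"
    and ghk: "g \<in> carrier P" "h \<in> carrier P" "k \<in> carrier P"
  shows "d2 P A \<alpha> f g h k \<otimes>\<^bsub>A\<^esub> f (g \<otimes>\<^bsub>P\<^esub> h) k \<otimes>\<^bsub>A\<^esub> \<alpha> k (f g h)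
         = f h k \<otimes>\<^bsub>A\<^esub> f g (h \<otimes>\<^bsub>P\<^esub> k)"
  using ghk by (simp add: d2_def A.frac_eq2 f)

lemma d2_closed:
  assumes f: "\<And>g h. g \<in> carrier P \<Longrightarrow> h \<in> carrier P \<Longrightarrow> f g h \<in> carrier A"
  shows "d2 P A \<alpha> f g h k \<in> carrier A"
  by (simp add: d2_def f)

lemma d2_unique:
  assumes f: "\<And>g h. g \<in> carrier P \<Longrightarrow> h \<in> carrier P \<Longrightarrow> f g h \<in> carrier A"
    and ghk: "g \<in> carrier P" "h \<in> carrier P" "k \<in> carrier P"
    and w: "w \<in> carrier A"
    and e: "w \<otimes>\<^bsub>A\<^esub> f (g \<otimes>\<^bsub>P\<^esub> h) k \<otimes>\<^bsub>A\<^esub> \<alpha> k (f g h) = f h k \<otimes>\<^bsub>A\<^esub> f g (h \<otimes>\<^bsub>P\<^esub> k)"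
  shows "d2 P A \<alpha> f g h k = w"
proof -
  have "d2 P A \<alpha> f g h k \<otimes>\<^bsub>A\<^esub> (f (g \<otimes>\<^bsub>P\<^esub> h) k \<otimes>\<^bsub>A\<^esub> \<alpha> k (f g h))
      = w \<otimes>\<^bsub>A\<^esub> (f (g \<otimes>\<^bsub>P\<^esub> h) k \<otimes>\<^bsub>A\<^esub> \<alpha> k (f g h))"
    using d2_eq[OF f ghk] e ghk f w by (simp add: A.m_assoc d2_closed)
  thus ?thesis using ghk w f d2_closed[where f=f, OF f] by (simp del: A.r_cancel_one A.r_cancel_one')
qed

lemma d1_C2: assumes f: "f \<in> C1 P A" shows "d1 P A \<alpha> f \<in> C2 P A"
proof -
  have "d1 P A \<alpha> f \<one>\<^bsub>P\<^esub> g = \<one>\<^bsub>A\<^esub>" if "g \<in> carrier P" for g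
    using that C1_in[OF f] C1_1[OF f] by (simp add: d1_def A.m_assoc)
  moreover have "d1 P A \<alpha> f g \<one>\<^bsub>P\<^esub> = \<one>\<^bsub>A\<^esub>" if "g \<in> carrier P" for g
    using that C1_in[OF f] C1_1[OF f] by (simp add: d1_def aone)
  ultimately show ?thesis using C1_in[OF f] by (auto simp: C2_def d1_def)
qed

lemma d2_C3: assumes f: "f \<in> C2 P A" shows "d2 P A \<alpha> f \<in> C3 P A"
proof -
  note fi = C2_in[OF f] and f1 = C2_1[OF f]
  have "d2 P A \<alpha> f \<one>\<^bsub>P\<^esub> g h = \<one>\<^bsub>A\<^esub>" if "g \<in> carrier P" "h \<in> carrier P" for g h
    using that fi f1 by (simp add: d2_def)
  moreover have "d2 P A \<alpha> f g \<one>\<^bsub>P\<^esub> h = \<one>\<^bsub>A\<^esub>" if "g \<in> carrier P" "h \<in> carrier P" for g h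
    using that fi f1 by (simp add: d2_def A.m_assoc)
  moreover have "d2 P A \<alpha> f g h \<one>\<^bsub>P\<^esub> = \<one>\<^bsub>A\<^esub>" if "g \<in> carrier P" "h \<in> carrier P" for g h
    using that fi f1 by (simp add: d2_def aone A.m_assoc)
  ultimately show ?thesis using fi by (auto simp: C3_def d2_def)
qed


lemma d2_d1:
  assumes f: "\<And>g. g \<in> carrier P \<Longrightarrow> f g \<in> carrier A"
    and g: "g \<in> carrier P" and h: "h \<in> carrier P" and k: "k \<in> carrier P"
  shows "d2 P A \<alpha> (d1 P A \<alpha> f) g h k = \<one>\<^bsub>A\<^esub>"
proof (rule d2_unique[OF d1_closed[where f=f, OF f] g h k A.one_closed])
  let ?D = "d1 P A \<alpha> f"
  note [simp] = f g h k d1_closed[where f=f, OF f]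
  have e1: "?D (g \<otimes>\<^bsub>P\<^esub> h) k \<otimes>\<^bsub>A\<^esub> f (g \<otimes>\<^bsub>P\<^esub> h \<otimes>\<^bsub>P\<^esub> k) = f k \<otimes>\<^bsub>A\<^esub> \<alpha> k (f (g \<otimes>\<^bsub>P\<^esub> h))"
    by (rule d1_eq) simp_all
  have e2: "\<alpha> k (?D g h) \<otimes>\<^bsub>A\<^esub> \<alpha> k (f (g \<otimes>\<^bsub>P\<^esub> h)) = \<alpha> k (f h) \<otimes>\<^bsub>A\<^esub> \<alpha> k (\<alpha> h (f g))"
  proof -
    have "\<alpha> k (?D g h \<otimes>\<^bsub>A\<^esub> f (g \<otimes>\<^bsub>P\<^esub> h)) = \<alpha> k (f h \<otimes>\<^bsub>A\<^esub> \<alpha> h (f g))"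
      using d1_eq[where f=f, OF f g h] by simp
    thus ?thesis by simp
  qed
  have e3: "?D h k \<otimes>\<^bsub>A\<^esub> f (h \<otimes>\<^bsub>P\<^esub> k) = f k \<otimes>\<^bsub>A\<^esub> \<alpha> k (f h)"
    by (rule d1_eq) simp_all
  have e4: "?D g (h \<otimes>\<^bsub>P\<^esub> k) \<otimes>\<^bsub>A\<^esub> f (g \<otimes>\<^bsub>P\<^esub> h \<otimes>\<^bsub>P\<^esub> k) = f (h \<otimes>\<^bsub>P\<^esub> k) \<otimes>\<^bsub>A\<^esub> \<alpha> k (\<alpha> h (f g))"
    using d1_eq[where f=f and g=g and h="h \<otimes>\<^bsub>P\<^esub> k", OF f g] by (simp add: P.m_assoc amult)
  define x1 where "x1 = f (g \<otimes>\<^bsub>P\<^esub> h \<otimes>\<^bsub>P\<^esub> k)"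
  define x2 where "x2 = \<alpha> k (f (g \<otimes>\<^bsub>P\<^esub> h))"
  define x3 where "x3 = f (h \<otimes>\<^bsub>P\<^esub> k)"
  have [simp]: "x1 \<in> carrier A" "x2 \<in> carrier A" "x3 \<in> carrier A" by (simp_all add: x1_def x2_def x3_def)
  have "(?D (g \<otimes>\<^bsub>P\<^esub> h) k \<otimes>\<^bsub>A\<^esub> \<alpha> k (?D g h)) \<otimes>\<^bsub>A\<^esub> (x1 \<otimes>\<^bsub>A\<^esub> x2 \<otimes>\<^bsub>A\<^esub> x3)
      = (?D (g \<otimes>\<^bsub>P\<^esub> h) k \<otimes>\<^bsub>A\<^esub> x1) \<otimes>\<^bsub>A\<^esub> (\<alpha> k (?D g h) \<otimes>\<^bsub>A\<^esub> x2) \<otimes>\<^bsub>A\<^esub> x3"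
    by (simp add: A.m_ac)
  also have "\<dots> = (f k \<otimes>\<^bsub>A\<^esub> x2) \<otimes>\<^bsub>A\<^esub> (\<alpha> k (f h) \<otimes>\<^bsub>A\<^esub> \<alpha> k (\<alpha> h (f g))) \<otimes>\<^bsub>A\<^esub> x3"
    using e1 e2 by (simp add: x1_def x2_def)
  also have "\<dots> = (f k \<otimes>\<^bsub>A\<^esub> \<alpha> k (f h)) \<otimes>\<^bsub>A\<^esub> (x3 \<otimes>\<^bsub>A\<^esub> \<alpha> k (\<alpha> h (f g))) \<otimes>\<^bsub>A\<^esub> x2"
    by (simp add: A.m_ac)
  also have "\<dots> = (?D h k \<otimes>\<^bsub>A\<^esub> x3) \<otimes>\<^bsub>A\<^esub> (?D g (h \<otimes>\<^bsub>P\<^esub> k) \<otimes>\<^bsub>A\<^esub> x1) \<otimes>\<^bsub>A\<^esub> x2"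
    using e3 e4 by (simp add: x1_def x3_def)
  also have "\<dots> = (?D h k \<otimes>\<^bsub>A\<^esub> ?D g (h \<otimes>\<^bsub>P\<^esub> k)) \<otimes>\<^bsub>A\<^esub> (x1 \<otimes>\<^bsub>A\<^esub> x2 \<otimes>\<^bsub>A\<^esub> x3)"
    by (simp add: A.m_ac)
  finally have "?D (g \<otimes>\<^bsub>P\<^esub> h) k \<otimes>\<^bsub>A\<^esub> \<alpha> k (?D g h) = ?D h k \<otimes>\<^bsub>A\<^esub> ?D g (h \<otimes>\<^bsub>P\<^esub> k)"
    by (simp del: A.r_cancel_one A.r_cancel_one')
  thus "\<one>\<^bsub>A\<^esub> \<otimes>\<^bsub>A\<^esub> ?D (g \<otimes>\<^bsub>P\<^esub> h) k \<otimes>\<^bsub>A\<^esub> \<alpha> k (?D g h) = ?D h k \<otimes>\<^bsub>A\<^esub> ?D g (h \<otimes>\<^bsub>P\<^esub> k)"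
    by (simp add: A.m_assoc)
qed

lemma d1_mult:
  assumes f: "\<And>g. g \<in> carrier P \<Longrightarrow> f g \<in> carrier A" and f': "\<And>g. g \<in> carrier P \<Longrightarrow> f' g \<in> carrier A"
    and g: "g \<in> carrier P" and h: "h \<in> carrier P"
  shows "d1 P A \<alpha> (\<lambda>x. f x \<otimes>\<^bsub>A\<^esub> f' x) g h = d1 P A \<alpha> f g h \<otimes>\<^bsub>A\<^esub> d1 P A \<alpha> f' g h"
proof (rule d1_unique)
  note [simp] = f f' g h d1_closed[where f=f, OF f] d1_closed[where f=f', OF f']
  have "d1 P A \<alpha> f g h \<otimes>\<^bsub>A\<^esub> d1 P A \<alpha> f' g h \<otimes>\<^bsub>A\<^esub> (f (g \<otimes>\<^bsub>P\<^esub> h) \<otimes>\<^bsub>A\<^esub> f' (g \<otimes>\<^bsub>P\<^esub> h))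
     = (d1 P A \<alpha> f g h \<otimes>\<^bsub>A\<^esub> f (g \<otimes>\<^bsub>P\<^esub> h)) \<otimes>\<^bsub>A\<^esub> (d1 P A \<alpha> f' g h \<otimes>\<^bsub>A\<^esub> f' (g \<otimes>\<^bsub>P\<^esub> h))"
    by (simp add: A.m_ac)
  also have "\<dots> = (f h \<otimes>\<^bsub>A\<^esub> \<alpha> h (f g)) \<otimes>\<^bsub>A\<^esub> (f' h \<otimes>\<^bsub>A\<^esub> \<alpha> h (f' g))"
    by (simp add: d1_eq[where f=f, OF f g h] d1_eq[where f=f', OF f' g h])
  also have "\<dots> = (f h \<otimes>\<^bsub>A\<^esub> f' h) \<otimes>\<^bsub>A\<^esub> \<alpha> h (f g \<otimes>\<^bsub>A\<^esub> f' g)"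
    by (simp add: A.m_ac)
  finally show "d1 P A \<alpha> f g h \<otimes>\<^bsub>A\<^esub> d1 P A \<alpha> f' g h \<otimes>\<^bsub>A\<^esub> (f (g \<otimes>\<^bsub>P\<^esub> h) \<otimes>\<^bsub>A\<^esub> f' (g \<otimes>\<^bsub>P\<^esub> h))
     = (f h \<otimes>\<^bsub>A\<^esub> f' h) \<otimes>\<^bsub>A\<^esub> \<alpha> h (f g \<otimes>\<^bsub>A\<^esub> f' g)" .
qed (use f f' g h d1_closed[where f=f, OF f] d1_closed[where f=f', OF f'] in auto)

lemma d1_pow:
  assumes f: "\<And>g. g \<in> carrier P \<Longrightarrow> f g \<in> carrier A"
    and g: "g \<in> carrier P" and h: "h \<in> carrier P"
  shows "d1 P A \<alpha> (\<lambda>x. f x [^]\<^bsub>A\<^esub> (n::nat)) g h = d1 P A \<alpha> f g h [^]\<^bsub>A\<^esub> n"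
proof (rule d1_unique)
  note [simp] = f g h d1_closed[where f=f, OF f]
  have "d1 P A \<alpha> f g h [^]\<^bsub>A\<^esub> n \<otimes>\<^bsub>A\<^esub> f (g \<otimes>\<^bsub>P\<^esub> h) [^]\<^bsub>A\<^esub> n
     = (d1 P A \<alpha> f g h \<otimes>\<^bsub>A\<^esub> f (g \<otimes>\<^bsub>P\<^esub> h)) [^]\<^bsub>A\<^esub> n"
    by (simp add: A.pow_mult_distrib A.m_comm)
  also have "\<dots> = (f h \<otimes>\<^bsub>A\<^esub> \<alpha> h (f g)) [^]\<^bsub>A\<^esub> n" by (simp add: d1_eq[where f=f, OF f g h])
  also have "\<dots> = f h [^]\<^bsub>A\<^esub> n \<otimes>\<^bsub>A\<^esub> \<alpha> h (f g [^]\<^bsub>A\<^esub> n)"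
    by (simp add: A.pow_mult_distrib A.m_comm)
  finally show "d1 P A \<alpha> f g h [^]\<^bsub>A\<^esub> n \<otimes>\<^bsub>A\<^esub> f (g \<otimes>\<^bsub>P\<^esub> h) [^]\<^bsub>A\<^esub> n
     = f h [^]\<^bsub>A\<^esub> n \<otimes>\<^bsub>A\<^esub> \<alpha> h (f g [^]\<^bsub>A\<^esub> n)" .
qed (use f g h d1_closed[where f=f, OF f] in auto)

lemma d2_mult:
  assumes f: "\<And>g h. g \<in> carrier P \<Longrightarrow> h \<in> carrier P \<Longrightarrow> f g h \<in> carrier A"
    and f': "\<And>g h. g \<in> carrier P \<Longrightarrow> h \<in> carrier P \<Longrightarrow> f' g h \<in> carrier A"
    and g: "g \<in> carrier P" and h: "h \<in> carrier P" and k: "k \<in> carrier P"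
  shows "d2 P A \<alpha> (\<lambda>x y. f x y \<otimes>\<^bsub>A\<^esub> f' x y) g h k = d2 P A \<alpha> f g h k \<otimes>\<^bsub>A\<^esub> d2 P A \<alpha> f' g h k"
proof (rule d2_unique)
  note [simp] = f f' g h k d2_closed[where f=f, OF f] d2_closed[where f=f', OF f']
  have "d2 P A \<alpha> f g h k \<otimes>\<^bsub>A\<^esub> d2 P A \<alpha> f' g h k \<otimes>\<^bsub>A\<^esub> (f (g \<otimes>\<^bsub>P\<^esub> h) k \<otimes>\<^bsub>A\<^esub> f' (g \<otimes>\<^bsub>P\<^esub> h) k)
          \<otimes>\<^bsub>A\<^esub> \<alpha> k (f g h \<otimes>\<^bsub>A\<^esub> f' g h)
     = (d2 P A \<alpha> f g h k \<otimes>\<^bsub>A\<^esub> f (g \<otimes>\<^bsub>P\<^esub> h) k \<otimes>\<^bsub>A\<^esub> \<alpha> k (f g h))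
       \<otimes>\<^bsub>A\<^esub> (d2 P A \<alpha> f' g h k \<otimes>\<^bsub>A\<^esub> f' (g \<otimes>\<^bsub>P\<^esub> h) k \<otimes>\<^bsub>A\<^esub> \<alpha> k (f' g h))"
    by (simp add: A.m_ac)
  also have "\<dots> = (f h k \<otimes>\<^bsub>A\<^esub> f g (h \<otimes>\<^bsub>P\<^esub> k)) \<otimes>\<^bsub>A\<^esub> (f' h k \<otimes>\<^bsub>A\<^esub> f' g (h \<otimes>\<^bsub>P\<^esub> k))"
    by (simp add: d2_eq[where f=f, OF f g h k] d2_eq[where f=f', OF f' g h k])
  also have "\<dots> = (f h k \<otimes>\<^bsub>A\<^esub> f' h k) \<otimes>\<^bsub>A\<^esub> (f g (h \<otimes>\<^bsub>P\<^esub> k) \<otimes>\<^bsub>A\<^esub> f' g (h \<otimes>\<^bsub>P\<^esub> k))"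
    by (simp add: A.m_ac)
  finally show "d2 P A \<alpha> f g h k \<otimes>\<^bsub>A\<^esub> d2 P A \<alpha> f' g h k \<otimes>\<^bsub>A\<^esub> (f (g \<otimes>\<^bsub>P\<^esub> h) k \<otimes>\<^bsub>A\<^esub> f' (g \<otimes>\<^bsub>P\<^esub> h) k)
          \<otimes>\<^bsub>A\<^esub> \<alpha> k (f g h \<otimes>\<^bsub>A\<^esub> f' g h)
     = (f h k \<otimes>\<^bsub>A\<^esub> f' h k) \<otimes>\<^bsub>A\<^esub> (f g (h \<otimes>\<^bsub>P\<^esub> k) \<otimes>\<^bsub>A\<^esub> f' g (h \<otimes>\<^bsub>P\<^esub> k))" .
qed (use f f' g h k d2_closed[where f=f, OF f] d2_closed[where f=f', OF f'] in auto)

lemma d2_pow: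
  assumes f: "\<And>g h. g \<in> carrier P \<Longrightarrow> h \<in> carrier P \<Longrightarrow> f g h \<in> carrier A"
    and g: "g \<in> carrier P" and h: "h \<in> carrier P" and k: "k \<in> carrier P"
  shows "d2 P A \<alpha> (\<lambda>x y. f x y [^]\<^bsub>A\<^esub> (n::nat)) g h k = d2 P A \<alpha> f g h k [^]\<^bsub>A\<^esub> n"
proof (rule d2_unique)
  note [simp] = f g h k d2_closed[where f=f, OF f]
  have "d2 P A \<alpha> f g h k [^]\<^bsub>A\<^esub> n \<otimes>\<^bsub>A\<^esub> f (g \<otimes>\<^bsub>P\<^esub> h) k [^]\<^bsub>A\<^esub> n \<otimes>\<^bsub>A\<^esub> \<alpha> k (f g h [^]\<^bsub>A\<^esub> n)
     = (d2 P A \<alpha> f g h k \<otimes>\<^bsub>A\<^esub> f (g \<otimes>\<^bsub>P\<^esub> h) k \<otimes>\<^bsub>A\<^esub> \<alpha> k (f g h)) [^]\<^bsub>A\<^esub> n"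
    by (simp add: A.pow_mult_distrib A.m_comm)
  also have "\<dots> = (f h k \<otimes>\<^bsub>A\<^esub> f g (h \<otimes>\<^bsub>P\<^esub> k)) [^]\<^bsub>A\<^esub> n" by (simp add: d2_eq[where f=f, OF f g h k])
  also have "\<dots> = f h k [^]\<^bsub>A\<^esub> n \<otimes>\<^bsub>A\<^esub> f g (h \<otimes>\<^bsub>P\<^esub> k) [^]\<^bsub>A\<^esub> n"
    by (simp add: A.pow_mult_distrib A.m_comm)
  finally show "d2 P A \<alpha> f g h k [^]\<^bsub>A\<^esub> n \<otimes>\<^bsub>A\<^esub> f (g \<otimes>\<^bsub>P\<^esub> h) k [^]\<^bsub>A\<^esub> n \<otimes>\<^bsub>A\<^esub> \<alpha> k (f g h [^]\<^bsub>A\<^esub> n)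
     = f h k [^]\<^bsub>A\<^esub> n \<otimes>\<^bsub>A\<^esub> f g (h \<otimes>\<^bsub>P\<^esub> k) [^]\<^bsub>A\<^esub> n" .
qed (use f g h k d2_closed[where f=f, OF f] in auto)


lemma Z2_C2: "\<tau> \<in> Z2 P A \<alpha> \<Longrightarrow> \<tau> \<in> C2 P A" by (simp add: Z2_def)

lemma cocycle_eq:
  assumes t: "\<tau> \<in> Z2 P A \<alpha>" and g: "g \<in> carrier P" and h: "h \<in> carrier P" and k: "k \<in> carrier P"
  shows "\<tau> (g \<otimes>\<^bsub>P\<^esub> h) k \<otimes>\<^bsub>A\<^esub> \<alpha> k (\<tau> g h) = \<tau> h k \<otimes>\<^bsub>A\<^esub> \<tau> g (h \<otimes>\<^bsub>P\<^esub> k)"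
proof -
  have c: "\<And>g h. g \<in> carrier P \<Longrightarrow> h \<in> carrier P \<Longrightarrow> \<tau> g h \<in> carrier A"
    using C2_in[OF Z2_C2[OF t]] .
  have "d2 P A \<alpha> \<tau> g h k = \<one>\<^bsub>A\<^esub>" using t g h k by (simp add: Z2_def)
  with d2_eq[where f=\<tau>, OF c g h k] show ?thesis using g h k c by (simp add: A.m_assoc)
qed

lemma Ext_group:
  assumes t: "\<tau> \<in> Z2 P A \<alpha>"
  shows "group (Ext P A \<alpha> \<tau>)"
proof -
  have c[simp]: "\<And>g h. g \<in> carrier P \<Longrightarrow> h \<in> carrier P \<Longrightarrow> \<tau> g h \<in> carrier A"
    using C2_in[OF Z2_C2[OF t]] .
  have t1: "\<And>g. g \<in> carrier P \<Longrightarrow> \<tau> \<one>\<^bsub>P\<^esub> g = \<one>\<^bsub>A\<^esub> \<and> \<tau> g \<one>\<^bsub>P\<^esub> = \<one>\<^bsub>A\<^esub>"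
    using C2_1[OF Z2_C2[OF t]] .
  show ?thesis
  proof (rule groupI)
    fix x y z assume x: "x \<in> carrier (Ext P A \<alpha> \<tau>)" and y: "y \<in> carrier (Ext P A \<alpha> \<tau>)"
      and z: "z \<in> carrier (Ext P A \<alpha> \<tau>)"
    obtain g a where xx: "x = (g, a)" "g \<in> carrier P" "a \<in> carrier A" using x by (auto simp: Ext_def)
    obtain h b where yy: "y = (h, b)" "h \<in> carrier P" "b \<in> carrier A" using y by (auto simp: Ext_def)
    obtain k c where zz: "z = (k, c)" "k \<in> carrier P" "c \<in> carrier A" using z by (auto simp: Ext_def)
    note [simp] = xx yy zz
    have ce: "\<tau> (g \<otimes>\<^bsub>P\<^esub> h) k \<otimes>\<^bsub>A\<^esub> \<alpha> k (\<tau> g h) = \<tau> h k \<otimes>\<^bsub>A\<^esub> \<tau> g (h \<otimes>\<^bsub>P\<^esub> k)"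
      by (rule cocycle_eq[OF t]) simp_all
    have "\<alpha> k (\<alpha> h a \<otimes>\<^bsub>A\<^esub> b \<otimes>\<^bsub>A\<^esub> \<tau> g h) \<otimes>\<^bsub>A\<^esub> c \<otimes>\<^bsub>A\<^esub> \<tau> (g \<otimes>\<^bsub>P\<^esub> h) k
       = \<alpha> k (\<alpha> h a) \<otimes>\<^bsub>A\<^esub> \<alpha> k b \<otimes>\<^bsub>A\<^esub> c \<otimes>\<^bsub>A\<^esub> (\<tau> (g \<otimes>\<^bsub>P\<^esub> h) k \<otimes>\<^bsub>A\<^esub> \<alpha> k (\<tau> g h))"
      by (simp add: A.m_ac)
    also have "\<dots> = \<alpha> k (\<alpha> h a) \<otimes>\<^bsub>A\<^esub> \<alpha> k b \<otimes>\<^bsub>A\<^esub> c \<otimes>\<^bsub>A\<^esub> (\<tau> h k \<otimes>\<^bsub>A\<^esub> \<tau> g (h \<otimes>\<^bsub>P\<^esub> k))"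
      by (simp only: ce)
    also have "\<dots> = \<alpha> (h \<otimes>\<^bsub>P\<^esub> k) a \<otimes>\<^bsub>A\<^esub> (\<alpha> k b \<otimes>\<^bsub>A\<^esub> c \<otimes>\<^bsub>A\<^esub> \<tau> h k) \<otimes>\<^bsub>A\<^esub> \<tau> g (h \<otimes>\<^bsub>P\<^esub> k)"
      by (simp add: A.m_ac amult)
    finally show "x \<otimes>\<^bsub>Ext P A \<alpha> \<tau>\<^esub> y \<otimes>\<^bsub>Ext P A \<alpha> \<tau>\<^esub> z = x \<otimes>\<^bsub>Ext P A \<alpha> \<tau>\<^esub> (y \<otimes>\<^bsub>Ext P A \<alpha> \<tau>\<^esub> z)"
      by (simp add: Ext_def P.m_assoc)
  next
    fix x y assume x: "x \<in> carrier (Ext P A \<alpha> \<tau>)" and y: "y \<in> carrier (Ext P A \<alpha> \<tau>)"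
    thus "x \<otimes>\<^bsub>Ext P A \<alpha> \<tau>\<^esub> y \<in> carrier (Ext P A \<alpha> \<tau>)" by (auto simp: Ext_def)
  next
    show "\<one>\<^bsub>Ext P A \<alpha> \<tau>\<^esub> \<in> carrier (Ext P A \<alpha> \<tau>)" by (simp add: Ext_def)
  next
    fix x assume x: "x \<in> carrier (Ext P A \<alpha> \<tau>)"
    then obtain g a where xx: "x = (g, a)" "g \<in> carrier P" "a \<in> carrier A" by (auto simp: Ext_def)
    thus "\<one>\<^bsub>Ext P A \<alpha> \<tau>\<^esub> \<otimes>\<^bsub>Ext P A \<alpha> \<tau>\<^esub> x = x" using t1 by (simp add: Ext_def)
  next
    fix x assume x: "x \<in> carrier (Ext P A \<alpha> \<tau>)"
    then obtain g a where xx: "x = (g, a)" "g \<in> carrier P" "a \<in> carrier A" by (auto simp: Ext_def)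
    let ?b = "\<alpha> (inv\<^bsub>P\<^esub> g) (inv\<^bsub>A\<^esub> (a \<otimes>\<^bsub>A\<^esub> \<tau> (inv\<^bsub>P\<^esub> g) g))"
    have "(inv\<^bsub>P\<^esub> g, ?b) \<in> carrier (Ext P A \<alpha> \<tau>)" using xx by (simp add: Ext_def)
    moreover have "(inv\<^bsub>P\<^esub> g, ?b) \<otimes>\<^bsub>Ext P A \<alpha> \<tau>\<^esub> x = \<one>\<^bsub>Ext P A \<alpha> \<tau>\<^esub>"
      using xx by (simp add: Ext_def a_invg A.m_assoc del: a_inv)
    ultimately show "\<exists>y\<in>carrier (Ext P A \<alpha> \<tau>). y \<otimes>\<^bsub>Ext P A \<alpha> \<tau>\<^esub> x = \<one>\<^bsub>Ext P A \<alpha> \<tau>\<^esub>" by blast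
  qed
qed

lemma gmod_sub: assumes L: "subgroup L P" shows "gmod (P\<lparr>carrier := L\<rparr>) A \<alpha>"
proof (rule gmod.intro)
  show "group (P\<lparr>carrier := L\<rparr>)" by (rule subgroup.subgroup_is_group[OF L Pg])
  show "comm_group A" by (rule Ag)
  have sub: "L \<subseteq> carrier P" using L by (rule subgroup.subset)
  show "\<And>g. g \<in> carrier (P\<lparr>carrier := L\<rparr>) \<Longrightarrow> \<alpha> g \<in> hom A A" using sub ahom by auto
  show "\<And>t. t \<in> carrier A \<Longrightarrow> \<alpha> \<one>\<^bsub>P\<lparr>carrier := L\<rparr>\<^esub> t = t" using aone by simp
  show "\<And>g h t. g \<in> carrier (P\<lparr>carrier := L\<rparr>) \<Longrightarrow> h \<in> carrier (P\<lparr>carrier := L\<rparr>) \<Longrightarrow> t \<in> carrier A \<Longrightarrow>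
     \<alpha> (g \<otimes>\<^bsub>P\<lparr>carrier := L\<rparr>\<^esub> h) t = \<alpha> h (\<alpha> g t)" using sub by (auto intro!: amult)
qed


lemma split_iff:
  assumes t: "\<tau> \<in> Z2 P A \<alpha>" and L: "subgroup L P"
  shows "splits_over (Ext P A \<alpha> \<tau>) (preim (Ext P A \<alpha> \<tau>) L) (base P A) \<longleftrightarrow>
         (\<exists>f\<in>C1 (P\<lparr>carrier:=L\<rparr>) A. \<forall>g\<in>L. \<forall>h\<in>L. \<tau> g h = d1 (P\<lparr>carrier:=L\<rparr>) A \<alpha> f g h)"
proof -
  let ?E = "Ext P A \<alpha> \<tau>" and ?PL = "P\<lparr>carrier:=L\<rparr>"
  interpret E: group ?E by (rule Ext_group[OF t])
  interpret PL: gmod ?PL A \<alpha> by (rule gmod_sub[OF L])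
  have sub: "L \<subseteq> carrier P" using L by (rule subgroup.subset)
  have tc[simp]: "\<And>g h. g \<in> carrier P \<Longrightarrow> h \<in> carrier P \<Longrightarrow> \<tau> g h \<in> carrier A"
    using C2_in[OF Z2_C2[OF t]] .
  have t1: "\<And>g. g \<in> carrier P \<Longrightarrow> \<tau> \<one>\<^bsub>P\<^esub> g = \<one>\<^bsub>A\<^esub> \<and> \<tau> g \<one>\<^bsub>P\<^esub> = \<one>\<^bsub>A\<^esub>"
    using C2_1[OF Z2_C2[OF t]] .
  have Em: "\<And>g a h b. (g, a) \<otimes>\<^bsub>?E\<^esub> (h, b) = (g \<otimes>\<^bsub>P\<^esub> h, \<alpha> h a \<otimes>\<^bsub>A\<^esub> b \<otimes>\<^bsub>A\<^esub> \<tau> g h)"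
    by (simp add: Ext_def)
  have E1: "\<one>\<^bsub>?E\<^esub> = (\<one>\<^bsub>P\<^esub>, \<one>\<^bsub>A\<^esub>)" by (simp add: Ext_def)
  have Ec: "\<And>x. x \<in> carrier ?E \<longleftrightarrow> fst x \<in> carrier P \<and> snd x \<in> carrier A"
    by (auto simp: Ext_def)
  show ?thesis
  proof
    assume "splits_over ?E (preim ?E L) (base P A)"
    then obtain C where C: "subgroup C ?E" and CY: "C \<subseteq> preim ?E L" and CN: "C \<inter> base P A = {\<one>\<^bsub>?E\<^esub>}"
      and CNY: "C <#>\<^bsub>?E\<^esub> base P A = preim ?E L"
      unfolding splits_over_def by blast
    interpret C: subgroup C ?E by (rule C)
    have Cc: "\<And>g a. (g, a) \<in> C \<Longrightarrow> g \<in> L \<and> a \<in> carrier A"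
      using CY by (auto simp: preim_def Ext_def)
    have uniq: "a = b" if "(g, a) \<in> C" "(g, b) \<in> C" for g a b
    proof -
      let ?u = "inv\<^bsub>?E\<^esub> (g, b) \<otimes>\<^bsub>?E\<^esub> (g, a)"
      have cE: "(g, a) \<in> carrier ?E" "(g, b) \<in> carrier ?E" using that C.subset by auto
      have uC: "?u \<in> C" using that by simp
      hence uE: "?u \<in> carrier ?E" using C.subset by auto
      have yu: "(g, b) \<otimes>\<^bsub>?E\<^esub> ?u = (g, a)" using cE by (simp add: E.m_assoc[symmetric])
      obtain k m where um: "?u = (k, m)" by force
      have km: "k \<in> carrier P" "m \<in> carrier A" using uE um Ec by auto
      have gP: "g \<in> carrier P" using Cc[OF that(1)] sub by auto
      have "g \<otimes>\<^bsub>P\<^esub> k = g" using yu um Em by simp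
      hence "k = \<one>\<^bsub>P\<^esub>" using gP km by simp
      hence "?u \<in> base P A" using um km by (simp add: base_def)
      hence "?u = \<one>\<^bsub>?E\<^esub>" using uC CN by blast
      hence "(g, b) = (g, a)" using yu cE by simp
      thus ?thesis by simp
    qed
    have ex: "\<exists>a. (g, a) \<in> C" if g: "g \<in> L" for g
    proof -
      have "(g, \<one>\<^bsub>A\<^esub>) \<in> preim ?E L" using g sub by (auto simp: preim_def Ext_def)
      hence "(g, \<one>\<^bsub>A\<^esub>) \<in> C <#>\<^bsub>?E\<^esub> base P A" using CNY by simp
      then obtain c n where c: "c \<in> C" and n: "n \<in> base P A" and e: "(g, \<one>\<^bsub>A\<^esub>) = c \<otimes>\<^bsub>?E\<^esub> n"
        unfolding set_mult_def by blast
      obtain k a where ck: "c = (k, a)" by force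
      obtain m where nm: "n = (\<one>\<^bsub>P\<^esub>, m)" using n by (auto simp: base_def)
      have "k \<in> carrier P" using Cc c ck sub by auto
      hence "g = k" using e ck nm Em by simp
      thus ?thesis using c ck by blast
    qed
    define c where "c g = (THE a. (g, a) \<in> C)" for g
    have cC: "(g, c g) \<in> C" if "g \<in> L" for g
      unfolding c_def using ex[OF that] uniq by (metis theI)
    have cA: "c g \<in> carrier A" if "g \<in> L" for g using Cc[OF cC[OF that]] by simp
    have c1: "c \<one>\<^bsub>P\<^esub> = \<one>\<^bsub>A\<^esub>"
    proof -
      have "(\<one>\<^bsub>P\<^esub>, \<one>\<^bsub>A\<^esub>) \<in> C" using C.one_closed E1 by simp
      moreover have "\<one>\<^bsub>P\<^esub> \<in> L" using L by (rule subgroup.one_closed)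
      ultimately show ?thesis using uniq cC by blast
    qed
    have cm: "c (g \<otimes>\<^bsub>P\<^esub> h) = \<alpha> h (c g) \<otimes>\<^bsub>A\<^esub> c h \<otimes>\<^bsub>A\<^esub> \<tau> g h" if "g \<in> L" "h \<in> L" for g h
    proof -
      have "(g, c g) \<otimes>\<^bsub>?E\<^esub> (h, c h) \<in> C" using cC that by simp
      hence "(g \<otimes>\<^bsub>P\<^esub> h, \<alpha> h (c g) \<otimes>\<^bsub>A\<^esub> c h \<otimes>\<^bsub>A\<^esub> \<tau> g h) \<in> C" using Em by simp
      moreover have "g \<otimes>\<^bsub>P\<^esub> h \<in> L" using that L by (simp add: subgroup.m_closed)
      ultimately show ?thesis using cC uniq by blast
    qed
    define f where "f g = (if g \<in> L then inv\<^bsub>A\<^esub> (c g) else \<one>\<^bsub>A\<^esub>)" for g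
    have fC: "f \<in> C1 ?PL A" using cA c1 L by (auto simp: C1_def f_def subgroup.one_closed)
    have "\<forall>g\<in>L. \<forall>h\<in>L. \<tau> g h = d1 ?PL A \<alpha> f g h"
    proof (intro ballI)
      fix g h assume g: "g \<in> L" and h: "h \<in> L"
      have gP: "g \<in> carrier P" and hP: "h \<in> carrier P" using g h sub by auto
      have ghL: "g \<otimes>\<^bsub>P\<^esub> h \<in> L" using g h L by (simp add: subgroup.m_closed)
      note [simp] = cA[OF g] cA[OF h] cA[OF ghL] gP hP
      show "\<tau> g h = d1 ?PL A \<alpha> f g h"
      proof (rule PL.d1_unique[symmetric])
        show "\<And>x. x \<in> carrier ?PL \<Longrightarrow> f x \<in> carrier A" using cA by (simp add: f_def)
        show "g \<in> carrier ?PL" "h \<in> carrier ?PL" using g h by simp_all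
        show "\<tau> g h \<in> carrier A" by simp
        have "\<tau> g h \<otimes>\<^bsub>A\<^esub> inv\<^bsub>A\<^esub> (c (g \<otimes>\<^bsub>P\<^esub> h)) \<otimes>\<^bsub>A\<^esub> c (g \<otimes>\<^bsub>P\<^esub> h) = \<tau> g h"
          by (simp add: A.m_assoc)
        also have "\<dots> = inv\<^bsub>A\<^esub> (c h) \<otimes>\<^bsub>A\<^esub> inv\<^bsub>A\<^esub> (\<alpha> h (c g)) \<otimes>\<^bsub>A\<^esub> c (g \<otimes>\<^bsub>P\<^esub> h)"
          using cm[OF g h] by (simp add: A.frac_eq4)
        finally have "\<tau> g h \<otimes>\<^bsub>A\<^esub> inv\<^bsub>A\<^esub> (c (g \<otimes>\<^bsub>P\<^esub> h)) = inv\<^bsub>A\<^esub> (c h) \<otimes>\<^bsub>A\<^esub> inv\<^bsub>A\<^esub> (\<alpha> h (c g))"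
          by (simp del: A.r_cancel_one A.r_cancel_one')
        thus "\<tau> g h \<otimes>\<^bsub>A\<^esub> f (g \<otimes>\<^bsub>?PL\<^esub> h) = f h \<otimes>\<^bsub>A\<^esub> \<alpha> h (f g)"
          using g h ghL by (simp add: f_def)
      qed
    qed
    thus "\<exists>f\<in>C1 ?PL A. \<forall>g\<in>L. \<forall>h\<in>L. \<tau> g h = d1 ?PL A \<alpha> f g h" using fC by blast
  next
    assume "\<exists>f\<in>C1 ?PL A. \<forall>g\<in>L. \<forall>h\<in>L. \<tau> g h = d1 ?PL A \<alpha> f g h"
    then obtain f where fC: "f \<in> C1 ?PL A" and fd: "\<And>g h. g \<in> L \<Longrightarrow> h \<in> L \<Longrightarrow> \<tau> g h = d1 ?PL A \<alpha> f g h"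
      by blast
    have fA: "\<And>g. g \<in> L \<Longrightarrow> f g \<in> carrier A" using PL.C1_in[OF fC] by simp
    have f1: "f \<one>\<^bsub>P\<^esub> = \<one>\<^bsub>A\<^esub>" using PL.C1_1[OF fC] by simp
    define s where "s g = (g, inv\<^bsub>A\<^esub> (f g))" for g
    have oneL: "\<one>\<^bsub>P\<^esub> \<in> L" using L by (rule subgroup.one_closed)
    have shom: "group_hom ?PL ?E s"
    proof (rule group_hom.intro)
      show "group ?PL" by (rule PL.P.is_group)
      show "group ?E" by (rule E.is_group)
      show "group_hom_axioms ?PL ?E s"
      proof (unfold group_hom_axioms_def hom_def, intro CollectI conjI ballI)
        show "s \<in> carrier ?PL \<rightarrow> carrier ?E" using fA sub by (auto simp: s_def Ext_def)
        fix g h assume g: "g \<in> carrier ?PL" and h: "h \<in> carrier ?PL"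
        hence gL: "g \<in> L" and hL: "h \<in> L" by simp_all
        have gP: "g \<in> carrier P" and hP: "h \<in> carrier P" using gL hL sub by auto
        have ghL: "g \<otimes>\<^bsub>P\<^esub> h \<in> L" using gL hL L by (simp add: subgroup.m_closed)
        note [simp] = fA[OF gL] fA[OF hL] fA[OF ghL] gP hP
        have de: "\<tau> g h \<otimes>\<^bsub>A\<^esub> f (g \<otimes>\<^bsub>P\<^esub> h) = f h \<otimes>\<^bsub>A\<^esub> \<alpha> h (f g)"
          using PL.d1_eq[where f=f, of g h] fd[OF gL hL] fA gL hL by simp
        have "\<alpha> h (inv\<^bsub>A\<^esub> (f g)) \<otimes>\<^bsub>A\<^esub> inv\<^bsub>A\<^esub> (f h) \<otimes>\<^bsub>A\<^esub> \<tau> g h \<otimes>\<^bsub>A\<^esub> f (g \<otimes>\<^bsub>P\<^esub> h)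
            = inv\<^bsub>A\<^esub> (\<alpha> h (f g)) \<otimes>\<^bsub>A\<^esub> inv\<^bsub>A\<^esub> (f h) \<otimes>\<^bsub>A\<^esub> (f h \<otimes>\<^bsub>A\<^esub> \<alpha> h (f g))"
          by (simp add: A.m_assoc de)
        also have "\<dots> = \<one>\<^bsub>A\<^esub>" using A.frac_eq4[of "\<alpha> h (f g)" "f h" "\<one>\<^bsub>A\<^esub>"]
          by (simp add: A.m_ac)
        also have "\<dots> = inv\<^bsub>A\<^esub> (f (g \<otimes>\<^bsub>P\<^esub> h)) \<otimes>\<^bsub>A\<^esub> f (g \<otimes>\<^bsub>P\<^esub> h)" by simp
        finally have eq: "\<alpha> h (inv\<^bsub>A\<^esub> (f g)) \<otimes>\<^bsub>A\<^esub> inv\<^bsub>A\<^esub> (f h) \<otimes>\<^bsub>A\<^esub> \<tau> g h \<otimes>\<^bsub>A\<^esub> f (g \<otimes>\<^bsub>P\<^esub> h) = inv\<^bsub>A\<^esub> (f (g \<otimes>\<^bsub>P\<^esub> h)) \<otimes>\<^bsub>A\<^esub> f (g \<otimes>\<^bsub>P\<^esub> h)" .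
        have "\<alpha> h (inv\<^bsub>A\<^esub> (f g)) \<otimes>\<^bsub>A\<^esub> inv\<^bsub>A\<^esub> (f h) \<otimes>\<^bsub>A\<^esub> \<tau> g h = inv\<^bsub>A\<^esub> (f (g \<otimes>\<^bsub>P\<^esub> h))"
          by (rule A.right_cancel[THEN iffD1, OF _ _ _ eq]) simp_all
        thus "s (g \<otimes>\<^bsub>?PL\<^esub> h) = s g \<otimes>\<^bsub>?E\<^esub> s h" by (simp add: s_def Em)
      qed
    qed
    have Csub: "subgroup (s ` L) ?E" using group_hom.img_is_subgroup[OF shom] by simp
    show "splits_over ?E (preim ?E L) (base P A)"
      unfolding splits_over_def
    proof (intro exI conjI)
      show "subgroup (s ` L) ?E" by (rule Csub)
      show "s ` L \<subseteq> preim ?E L" using fA sub by (auto simp: s_def preim_def Ext_def)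
      show "s ` L \<inter> base P A = {\<one>\<^bsub>?E\<^esub>}"
      proof
        show "s ` L \<inter> base P A \<subseteq> {\<one>\<^bsub>?E\<^esub>}" using f1 by (auto simp: s_def base_def E1)
        show "{\<one>\<^bsub>?E\<^esub>} \<subseteq> s ` L \<inter> base P A"
          using f1 oneL by (auto simp: s_def base_def E1 image_iff intro!: bexI[of _ "\<one>\<^bsub>P\<^esub>"])
      qed
      show "s ` L <#>\<^bsub>?E\<^esub> base P A = preim ?E L"
      proof
        show "s ` L <#>\<^bsub>?E\<^esub> base P A \<subseteq> preim ?E L"
          using fA sub t1 by (auto simp: set_mult_def s_def base_def preim_def Ext_def)
        show "preim ?E L \<subseteq> s ` L <#>\<^bsub>?E\<^esub> base P A"
        proof
          fix x assume "x \<in> preim ?E L"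
          then obtain g a where x: "x = (g, a)" and g: "g \<in> L" and a: "a \<in> carrier A"
            by (auto simp: preim_def Ext_def)
          have gP: "g \<in> carrier P" using g sub by auto
          have "x = s g \<otimes>\<^bsub>?E\<^esub> (\<one>\<^bsub>P\<^esub>, f g \<otimes>\<^bsub>A\<^esub> a)"
            using x fA[OF g] a gP t1 aone by (simp add: s_def Em A.m_assoc[symmetric])
          moreover have "(\<one>\<^bsub>P\<^esub>, f g \<otimes>\<^bsub>A\<^esub> a) \<in> base P A" using fA[OF g] a by (simp add: base_def)
          ultimately show "x \<in> s ` L <#>\<^bsub>?E\<^esub> base P A" using g unfolding set_mult_def by blast
        qed
      qed
    qed
  qed
qed



lemma C1_mult: "f \<in> C1 P A \<Longrightarrow> f' \<in> C1 P A \<Longrightarrow> (\<lambda>g. f g \<otimes>\<^bsub>A\<^esub> f' g) \<in> C1 P A"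
  by (simp add: C1_def)
lemma C1_pow: "f \<in> C1 P A \<Longrightarrow> (\<lambda>g. f g [^]\<^bsub>A\<^esub> (n::nat)) \<in> C1 P A"
  by (simp add: C1_def)
lemma C1_inv: "f \<in> C1 P A \<Longrightarrow> (\<lambda>g. inv\<^bsub>A\<^esub> (f g)) \<in> C1 P A"
  by (simp add: C1_def)
lemma C2_mult: "f \<in> C2 P A \<Longrightarrow> f' \<in> C2 P A \<Longrightarrow> (\<lambda>g h. f g h \<otimes>\<^bsub>A\<^esub> f' g h) \<in> C2 P A"
  by (simp add: C2_def)
lemma C2_pow: "f \<in> C2 P A \<Longrightarrow> (\<lambda>g h. f g h [^]\<^bsub>A\<^esub> (n::nat)) \<in> C2 P A"
  by (simp add: C2_def)
lemma C2_inv: "f \<in> C2 P A \<Longrightarrow> (\<lambda>g h. inv\<^bsub>A\<^esub> (f g h)) \<in> C2 P A"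
  by (simp add: C2_def)

lemma d1_cong: "(\<And>x. x \<in> carrier P \<Longrightarrow> f x = f' x) \<Longrightarrow> g \<in> carrier P \<Longrightarrow> h \<in> carrier P \<Longrightarrow>
   d1 P A \<alpha> f g h = d1 P A \<alpha> f' g h"
  by (simp add: d1_def)
lemma d2_cong: "(\<And>x y. x \<in> carrier P \<Longrightarrow> y \<in> carrier P \<Longrightarrow> f x y = f' x y) \<Longrightarrow>
   g \<in> carrier P \<Longrightarrow> h \<in> carrier P \<Longrightarrow> k \<in> carrier P \<Longrightarrow>
   d2 P A \<alpha> f g h k = d2 P A \<alpha> f' g h k"
  by (simp add: d2_def)

lemma d1_const1: "d1 P A \<alpha> (\<lambda>_. \<one>\<^bsub>A\<^esub>) g h = \<one>\<^bsub>A\<^esub>"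
  by (simp add: d1_def)
lemma d2_const1: "d2 P A \<alpha> (\<lambda>_ _. \<one>\<^bsub>A\<^esub>) g h k = \<one>\<^bsub>A\<^esub>"
  by (simp add: d2_def)

lemma d1_inv:
  assumes f: "\<And>g. g \<in> carrier P \<Longrightarrow> f g \<in> carrier A" and g: "g \<in> carrier P" and h: "h \<in> carrier P"
  shows "d1 P A \<alpha> (\<lambda>x. inv\<^bsub>A\<^esub> (f x)) g h = inv\<^bsub>A\<^esub> (d1 P A \<alpha> f g h)"
proof -
  have fi: "\<And>g. g \<in> carrier P \<Longrightarrow> inv\<^bsub>A\<^esub> (f g) \<in> carrier A" using f by simp
  have "d1 P A \<alpha> (\<lambda>x. inv\<^bsub>A\<^esub> (f x)) g h \<otimes>\<^bsub>A\<^esub> d1 P A \<alpha> f g h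
      = d1 P A \<alpha> (\<lambda>x. inv\<^bsub>A\<^esub> (f x) \<otimes>\<^bsub>A\<^esub> f x) g h"
    using d1_mult[where f="\<lambda>x. inv\<^bsub>A\<^esub> (f x)" and f'=f, OF fi f g h] by simp
  also have "\<dots> = d1 P A \<alpha> (\<lambda>_. \<one>\<^bsub>A\<^esub>) g h" by (rule d1_cong) (simp_all add: f g h)
  also have "\<dots> = \<one>\<^bsub>A\<^esub>" by (rule d1_const1)
  finally show ?thesis using A.inv_equality d1_closed[where f=f, OF f] d1_closed[where f="\<lambda>x. inv\<^bsub>A\<^esub> (f x)", OF fi]
    by metis
qed

lemma Z2I: "f \<in> C2 P A \<Longrightarrow> (\<And>g h k. g \<in> carrier P \<Longrightarrow> h \<in> carrier P \<Longrightarrow> k \<in> carrier P \<Longrightarrow>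
   d2 P A \<alpha> f g h k = \<one>\<^bsub>A\<^esub>) \<Longrightarrow> f \<in> Z2 P A \<alpha>"
  by (simp add: Z2_def)

lemma Z2_d2: "f \<in> Z2 P A \<alpha> \<Longrightarrow> g \<in> carrier P \<Longrightarrow> h \<in> carrier P \<Longrightarrow> k \<in> carrier P \<Longrightarrow>
   d2 P A \<alpha> f g h k = \<one>\<^bsub>A\<^esub>"
  by (simp add: Z2_def)

lemma Z2_mult: assumes "f \<in> Z2 P A \<alpha>" "f' \<in> Z2 P A \<alpha>" shows "(\<lambda>g h. f g h \<otimes>\<^bsub>A\<^esub> f' g h) \<in> Z2 P A \<alpha>"
proof (rule Z2I)
  show "(\<lambda>g h. f g h \<otimes>\<^bsub>A\<^esub> f' g h) \<in> C2 P A" using assms by (simp add: Z2_C2 C2_mult)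
  fix g h k assume ghk: "g \<in> carrier P" "h \<in> carrier P" "k \<in> carrier P"
  have c: "\<And>g h. g \<in> carrier P \<Longrightarrow> h \<in> carrier P \<Longrightarrow> f g h \<in> carrier A"
          "\<And>g h. g \<in> carrier P \<Longrightarrow> h \<in> carrier P \<Longrightarrow> f' g h \<in> carrier A"
    using assms by (simp_all add: Z2_C2 C2_in)
  show "d2 P A \<alpha> (\<lambda>g h. f g h \<otimes>\<^bsub>A\<^esub> f' g h) g h k = \<one>\<^bsub>A\<^esub>"
    using d2_mult[where f=f and f'=f', OF c ghk] assms ghk by (simp add: Z2_d2)
qed

lemma a_finprod:
  assumes g: "g \<in> carrier P" and S: "finite S" and f: "f \<in> S \<rightarrow> carrier A"
  shows "\<alpha> g (finprod A f S) = finprod A (\<lambda>x. \<alpha> g (f x)) S"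
  using S f
proof (induction S rule: finite_induct)
  case empty thus ?case using g by simp
next
  case (insert x S)
  have fS: "f \<in> S \<rightarrow> carrier A" and fx: "f x \<in> carrier A" using insert.prems by auto
  have "finprod A f (insert x S) = f x \<otimes>\<^bsub>A\<^esub> finprod A f S"
    using insert.hyps fS fx by (simp add: A.finprod_insert)
  moreover have "finprod A (\<lambda>x. \<alpha> g (f x)) (insert x S) = \<alpha> g (f x) \<otimes>\<^bsub>A\<^esub> finprod A (\<lambda>x. \<alpha> g (f x)) S"
    using insert.hyps fS fx g by (intro A.finprod_insert) (auto simp: Pi_def)
  ultimately show ?case using insert.IH[OF fS] g fS fx by (simp add: A.finprod_closed)
qed

lemma kill:
  assumes fin: "finite (carrier P)" and s: "\<sigma> \<in> Z2 P A \<alpha>"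
  shows "\<exists>c\<in>C1 P A. \<forall>g\<in>carrier P. \<forall>h\<in>carrier P. \<sigma> g h [^]\<^bsub>A\<^esub> card (carrier P) = d1 P A \<alpha> c g h"
proof -
  have sc: "\<And>g h. g \<in> carrier P \<Longrightarrow> h \<in> carrier P \<Longrightarrow> \<sigma> g h \<in> carrier A"
    using C2_in[OF Z2_C2[OF s]] .
  have s1: "\<And>g. g \<in> carrier P \<Longrightarrow> \<sigma> \<one>\<^bsub>P\<^esub> g = \<one>\<^bsub>A\<^esub> \<and> \<sigma> g \<one>\<^bsub>P\<^esub> = \<one>\<^bsub>A\<^esub>"
    using C2_1[OF Z2_C2[OF s]] .
  define c where "c h = (if h \<in> carrier P then finprod A (\<lambda>g. \<sigma> g h) (carrier P) else \<one>\<^bsub>A\<^esub>)" for h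
  have cc: "\<And>h. c h \<in> carrier A" using sc by (simp add: c_def Pi_def)
  have c1: "c \<one>\<^bsub>P\<^esub> = \<one>\<^bsub>A\<^esub>"
  proof -
    have "finprod A (\<lambda>g. \<sigma> g \<one>\<^bsub>P\<^esub>) (carrier P) = \<one>\<^bsub>A\<^esub>"
      by (rule A.finprod_one_eqI) (simp add: s1)
    thus ?thesis by (simp add: c_def)
  qed
  have cC: "c \<in> C1 P A" unfolding C1_def using cc c1 by (auto simp del: A.finprod_closed) (auto simp: c_def)
  have "\<sigma> h k [^]\<^bsub>A\<^esub> card (carrier P) = d1 P A \<alpha> c h k" if h: "h \<in> carrier P" and k: "k \<in> carrier P" for h k
  proof (rule d1_unique[symmetric])
    show "\<And>g. g \<in> carrier P \<Longrightarrow> c g \<in> carrier A" by (rule cc)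
    show "h \<in> carrier P" "k \<in> carrier P" by (rule h, rule k)
    show "\<sigma> h k [^]\<^bsub>A\<^esub> card (carrier P) \<in> carrier A" using sc h k by simp
    have eq: "\<And>g. g \<in> carrier P \<Longrightarrow> \<sigma> (g \<otimes>\<^bsub>P\<^esub> h) k \<otimes>\<^bsub>A\<^esub> \<alpha> k (\<sigma> g h) = \<sigma> h k \<otimes>\<^bsub>A\<^esub> \<sigma> g (h \<otimes>\<^bsub>P\<^esub> k)"
      using cocycle_eq[OF s] h k by simp
    have "finprod A (\<lambda>g. \<sigma> (g \<otimes>\<^bsub>P\<^esub> h) k \<otimes>\<^bsub>A\<^esub> \<alpha> k (\<sigma> g h)) (carrier P)
        = finprod A (\<lambda>g. \<sigma> h k \<otimes>\<^bsub>A\<^esub> \<sigma> g (h \<otimes>\<^bsub>P\<^esub> k)) (carrier P)"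
      by (rule A.finprod_cong') (use eq sc h k in \<open>auto simp: Pi_def\<close>)
    moreover have "finprod A (\<lambda>g. \<sigma> (g \<otimes>\<^bsub>P\<^esub> h) k \<otimes>\<^bsub>A\<^esub> \<alpha> k (\<sigma> g h)) (carrier P)
        = finprod A (\<lambda>g. \<sigma> (g \<otimes>\<^bsub>P\<^esub> h) k) (carrier P) \<otimes>\<^bsub>A\<^esub> finprod A (\<lambda>g. \<alpha> k (\<sigma> g h)) (carrier P)"
      by (rule A.finprod_multf) (use sc h k in \<open>auto simp: Pi_def\<close>)
    moreover have "finprod A (\<lambda>g. \<sigma> (g \<otimes>\<^bsub>P\<^esub> h) k) (carrier P) = c k"
    proof -
      have im: "(\<lambda>g. g \<otimes>\<^bsub>P\<^esub> h) ` carrier P = carrier P"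
      proof
        show "(\<lambda>g. g \<otimes>\<^bsub>P\<^esub> h) ` carrier P \<subseteq> carrier P" using h by auto
        show "carrier P \<subseteq> (\<lambda>g. g \<otimes>\<^bsub>P\<^esub> h) ` carrier P"
        proof
          fix x assume x: "x \<in> carrier P"
          have "x = (x \<otimes>\<^bsub>P\<^esub> inv\<^bsub>P\<^esub> h) \<otimes>\<^bsub>P\<^esub> h" using x h by (simp add: P.m_assoc)
          thus "x \<in> (\<lambda>g. g \<otimes>\<^bsub>P\<^esub> h) ` carrier P" using x h by blast
        qed
      qed
      have inj: "inj_on (\<lambda>g. g \<otimes>\<^bsub>P\<^esub> h) (carrier P)" using h by (auto simp: inj_on_def)
      have "finprod A (\<lambda>g. \<sigma> g k) ((\<lambda>g. g \<otimes>\<^bsub>P\<^esub> h) ` carrier P) = finprod A (\<lambda>g. \<sigma> (g \<otimes>\<^bsub>P\<^esub> h) k) (carrier P)"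
        by (rule A.finprod_reindex) (use sc k im inj in \<open>auto simp: Pi_def\<close>)
      thus ?thesis using im k by (simp add: c_def)
    qed
    moreover have "finprod A (\<lambda>g. \<alpha> k (\<sigma> g h)) (carrier P) = \<alpha> k (c h)"
      using a_finprod[OF k fin, of "\<lambda>g. \<sigma> g h"] sc h by (simp add: c_def Pi_def)
    moreover have "finprod A (\<lambda>g. \<sigma> h k \<otimes>\<^bsub>A\<^esub> \<sigma> g (h \<otimes>\<^bsub>P\<^esub> k)) (carrier P)
        = \<sigma> h k [^]\<^bsub>A\<^esub> card (carrier P) \<otimes>\<^bsub>A\<^esub> c (h \<otimes>\<^bsub>P\<^esub> k)"
    proof -
      have "finprod A (\<lambda>g. \<sigma> h k \<otimes>\<^bsub>A\<^esub> \<sigma> g (h \<otimes>\<^bsub>P\<^esub> k)) (carrier P)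
          = finprod A (\<lambda>g. \<sigma> h k) (carrier P) \<otimes>\<^bsub>A\<^esub> finprod A (\<lambda>g. \<sigma> g (h \<otimes>\<^bsub>P\<^esub> k)) (carrier P)"
        by (rule A.finprod_multf) (use sc h k in \<open>auto simp: Pi_def\<close>)
      thus ?thesis using sc h k by (simp add: A.finprod_const c_def)
    qed
    ultimately show "\<sigma> h k [^]\<^bsub>A\<^esub> card (carrier P) \<otimes>\<^bsub>A\<^esub> c (h \<otimes>\<^bsub>P\<^esub> k) = c k \<otimes>\<^bsub>A\<^esub> \<alpha> k (c h)"
      by simp
  qed
  thus ?thesis using cC by blast
qed

lemma kill_p:
  assumes fin: "finite (carrier P)" and s: "\<sigma> \<in> Z2 P A \<alpha>" and card: "card (carrier P) = p ^ j"
    and jN: "j \<le> N"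
  shows "\<exists>c\<in>C1 P A. \<forall>g\<in>carrier P. \<forall>h\<in>carrier P. \<sigma> g h [^]\<^bsub>A\<^esub> (p ^ N) = d1 P A \<alpha> c g h"
proof -
  obtain c where cC: "c \<in> C1 P A" and cd: "\<And>g h. g \<in> carrier P \<Longrightarrow> h \<in> carrier P \<Longrightarrow>
      \<sigma> g h [^]\<^bsub>A\<^esub> card (carrier P) = d1 P A \<alpha> c g h"
    using kill[OF fin s] by blast
  have sc: "\<And>g h. g \<in> carrier P \<Longrightarrow> h \<in> carrier P \<Longrightarrow> \<sigma> g h \<in> carrier A"
    using C2_in[OF Z2_C2[OF s]] .
  have cc: "\<And>g. g \<in> carrier P \<Longrightarrow> c g \<in> carrier A" using C1_in[OF cC] .
  have "\<sigma> g h [^]\<^bsub>A\<^esub> (p ^ N) = d1 P A \<alpha> (\<lambda>x. c x [^]\<^bsub>A\<^esub> (p ^ (N - j))) g h"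
    if g: "g \<in> carrier P" and h: "h \<in> carrier P" for g h
  proof -
    have "p ^ N = p ^ j * p ^ (N - j)" using jN by (simp flip: power_add)
    hence "\<sigma> g h [^]\<^bsub>A\<^esub> (p ^ N) = (\<sigma> g h [^]\<^bsub>A\<^esub> (p ^ j)) [^]\<^bsub>A\<^esub> (p ^ (N - j))"
      using sc g h by (simp add: A.nat_pow_pow)
    also have "\<dots> = d1 P A \<alpha> c g h [^]\<^bsub>A\<^esub> (p ^ (N - j))" using cd[OF g h] card by simp
    also have "\<dots> = d1 P A \<alpha> (\<lambda>x. c x [^]\<^bsub>A\<^esub> (p ^ (N - j))) g h"
      using d1_pow[where f=c, OF cc g h] by simp
    finally show ?thesis .
  qed
  moreover have "(\<lambda>x. c x [^]\<^bsub>A\<^esub> (p ^ (N - j))) \<in> C1 P A" using C1_pow[OF cC] .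
  ultimately show ?thesis by blast
qed

lemma root2:
  assumes s: "s \<in> C2 P A" and sp: "\<And>g h. g \<in> carrier P \<Longrightarrow> h \<in> carrier P \<Longrightarrow> s g h \<in> pT A p N"
  shows "\<exists>u\<in>C2 P A. \<forall>g\<in>carrier P. \<forall>h\<in>carrier P. s g h = u g h [^]\<^bsub>A\<^esub> (p ^ N)"
proof -
  define u where "u g h = (if g \<in> carrier P \<and> h \<in> carrier P \<and> s g h \<noteq> \<one>\<^bsub>A\<^esub>
      then (SOME v. v \<in> carrier A \<and> s g h = v [^]\<^bsub>A\<^esub> (p ^ N)) else \<one>\<^bsub>A\<^esub>)" for g h
  have ex: "\<exists>v. v \<in> carrier A \<and> s g h = v [^]\<^bsub>A\<^esub> (p ^ N)" if "g \<in> carrier P" "h \<in> carrier P" for g h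
    using sp[OF that] by (auto simp: pT_def)
  have u: "u g h \<in> carrier A \<and> s g h = u g h [^]\<^bsub>A\<^esub> (p ^ N)" if "g \<in> carrier P" "h \<in> carrier P" for g h
  proof (cases "s g h = \<one>\<^bsub>A\<^esub>")
    case True thus ?thesis by (simp add: u_def)
  next
    case False thus ?thesis using someI_ex[OF ex[OF that]] that by (simp add: u_def)
  qed
  have "u \<in> C2 P A" using u C2_1[OF s] by (auto simp: C2_def u_def)
  thus ?thesis using u by blast
qed


lemma d2_inv:
  assumes f: "\<And>g h. g \<in> carrier P \<Longrightarrow> h \<in> carrier P \<Longrightarrow> f g h \<in> carrier A"
    and g: "g \<in> carrier P" and h: "h \<in> carrier P" and k: "k \<in> carrier P"
  shows "d2 P A \<alpha> (\<lambda>x y. inv\<^bsub>A\<^esub> (f x y)) g h k = inv\<^bsub>A\<^esub> (d2 P A \<alpha> f g h k)"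
proof -
  have fi: "\<And>g h. g \<in> carrier P \<Longrightarrow> h \<in> carrier P \<Longrightarrow> inv\<^bsub>A\<^esub> (f g h) \<in> carrier A" using f by simp
  have "d2 P A \<alpha> (\<lambda>x y. inv\<^bsub>A\<^esub> (f x y)) g h k \<otimes>\<^bsub>A\<^esub> d2 P A \<alpha> f g h k
      = d2 P A \<alpha> (\<lambda>x y. inv\<^bsub>A\<^esub> (f x y) \<otimes>\<^bsub>A\<^esub> f x y) g h k"
    using d2_mult[where f="\<lambda>x y. inv\<^bsub>A\<^esub> (f x y)" and f'=f, OF fi f g h k] by simp
  also have "\<dots> = d2 P A \<alpha> (\<lambda>_ _. \<one>\<^bsub>A\<^esub>) g h k" by (rule d2_cong) (simp_all add: f g h k)
  also have "\<dots> = \<one>\<^bsub>A\<^esub>" by (rule d2_const1)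
  finally show ?thesis using A.inv_equality d2_closed[where f=f, OF f] d2_closed[where f="\<lambda>x y. inv\<^bsub>A\<^esub> (f x y)", OF fi]
    by metis
qed

lemma B3_iff:
  "F \<in> B3 P A \<alpha> \<longleftrightarrow> (\<exists>\<omega>\<in>C2 P A. \<forall>g\<in>carrier P. \<forall>h\<in>carrier P. \<forall>l\<in>carrier P. F g h l = d2 P A \<alpha> \<omega> g h l)
     \<and> (\<forall>g h l. \<not> (g \<in> carrier P \<and> h \<in> carrier P \<and> l \<in> carrier P) \<longrightarrow> F g h l = \<one>\<^bsub>A\<^esub>)"
proof
  assume "F \<in> B3 P A \<alpha>"
  then obtain \<omega> where w: "\<omega> \<in> C2 P A" and F: "F = d2 P A \<alpha> \<omega>" by (auto simp: B3_def)
  thus "(\<exists>\<omega>\<in>C2 P A. \<forall>g\<in>carrier P. \<forall>h\<in>carrier P. \<forall>l\<in>carrier P. F g h l = d2 P A \<alpha> \<omega> g h l)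
     \<and> (\<forall>g h l. \<not> (g \<in> carrier P \<and> h \<in> carrier P \<and> l \<in> carrier P) \<longrightarrow> F g h l = \<one>\<^bsub>A\<^esub>)"
    by (auto simp: d2_def)
next
  assume a: "(\<exists>\<omega>\<in>C2 P A. \<forall>g\<in>carrier P. \<forall>h\<in>carrier P. \<forall>l\<in>carrier P. F g h l = d2 P A \<alpha> \<omega> g h l)
     \<and> (\<forall>g h l. \<not> (g \<in> carrier P \<and> h \<in> carrier P \<and> l \<in> carrier P) \<longrightarrow> F g h l = \<one>\<^bsub>A\<^esub>)"
  then obtain \<omega> where w: "\<omega> \<in> C2 P A" and e: "\<forall>g\<in>carrier P. \<forall>h\<in>carrier P. \<forall>l\<in>carrier P. F g h l = d2 P A \<alpha> \<omega> g h l"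
    by blast
  have "F = d2 P A \<alpha> \<omega>"
  proof (intro ext)
    fix g h l show "F g h l = d2 P A \<alpha> \<omega> g h l"
      using a e by (cases "g \<in> carrier P \<and> h \<in> carrier P \<and> l \<in> carrier P") (auto simp: d2_def)
  qed
  thus "F \<in> B3 P A \<alpha>" using w by (auto simp: B3_def)
qed

lemma const1_C2: "(\<lambda>_ _. \<one>\<^bsub>A\<^esub>) \<in> C2 P A" by (simp add: C2_def)
lemma const1_C3: "(\<lambda>_ _ _. \<one>\<^bsub>A\<^esub>) \<in> C3 P A" by (simp add: C3_def)

lemma const1_B3: "(\<lambda>_ _ _. \<one>\<^bsub>A\<^esub>) \<in> B3 P A \<alpha>"
  unfolding B3_iff by (auto intro!: bexI[OF _ const1_C2] simp: d2_const1)

lemma const1_Z3: "(\<lambda>_ _ _. \<one>\<^bsub>A\<^esub>) \<in> Z3 P A \<alpha>"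
  by (simp add: Z3_def const1_C3 d3_def)

lemma C3_in: "w \<in> C3 P A \<Longrightarrow> g \<in> carrier P \<Longrightarrow> h \<in> carrier P \<Longrightarrow> l \<in> carrier P \<Longrightarrow> w g h l \<in> carrier A"
  by (simp add: C3_def)
lemma C3_out: "w \<in> C3 P A \<Longrightarrow> \<not> (g \<in> carrier P \<and> h \<in> carrier P \<and> l \<in> carrier P) \<Longrightarrow> w g h l = \<one>\<^bsub>A\<^esub>"
  by (auto simp: C3_def)

lemma self_cls3: assumes w: "w \<in> Z3 P A \<alpha>" shows "w \<in> cls3 P A \<alpha> w"
proof -
  have wc: "w \<in> C3 P A" using w by (simp add: Z3_def)
  have "(\<lambda>g h k. w g h k \<otimes>\<^bsub>A\<^esub> inv\<^bsub>A\<^esub> (w g h k)) = (\<lambda>_ _ _. \<one>\<^bsub>A\<^esub>)"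
  proof (intro ext)
    fix g h k show "w g h k \<otimes>\<^bsub>A\<^esub> inv\<^bsub>A\<^esub> (w g h k) = \<one>\<^bsub>A\<^esub>"
      using C3_in[OF wc] C3_out[OF wc] by (cases "g \<in> carrier P \<and> h \<in> carrier P \<and> k \<in> carrier P") auto
  qed
  thus ?thesis using w const1_B3 by (simp add: cls3_def)
qed

lemma cls3_zero_iff:
  assumes Xf: "Xf \<in> C3 P A"
  shows "cls3 P A \<alpha> Xf = cls3 P A \<alpha> (\<lambda>_ _ _. \<one>\<^bsub>A\<^esub>) \<longleftrightarrow>
         (\<exists>\<omega>\<in>C2 P A. \<forall>g\<in>carrier P. \<forall>h\<in>carrier P. \<forall>l\<in>carrier P. Xf g h l = d2 P A \<alpha> \<omega> g h l)"
proof
  assume e: "cls3 P A \<alpha> Xf = cls3 P A \<alpha> (\<lambda>_ _ _. \<one>\<^bsub>A\<^esub>)"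
  have "(\<lambda>_ _ _. \<one>\<^bsub>A\<^esub>) \<in> cls3 P A \<alpha> Xf" using e self_cls3[OF const1_Z3] by simp
  hence "(\<lambda>g h k. \<one>\<^bsub>A\<^esub> \<otimes>\<^bsub>A\<^esub> inv\<^bsub>A\<^esub> (Xf g h k)) \<in> B3 P A \<alpha>" by (simp add: cls3_def)
  then obtain \<omega> where w: "\<omega> \<in> C2 P A" and we: "\<And>g h l. g \<in> carrier P \<Longrightarrow> h \<in> carrier P \<Longrightarrow> l \<in> carrier P \<Longrightarrow>
      \<one>\<^bsub>A\<^esub> \<otimes>\<^bsub>A\<^esub> inv\<^bsub>A\<^esub> (Xf g h l) = d2 P A \<alpha> \<omega> g h l"
    unfolding B3_iff by blast
  have wc: "\<And>g h. g \<in> carrier P \<Longrightarrow> h \<in> carrier P \<Longrightarrow> \<omega> g h \<in> carrier A" using C2_in[OF w] .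
  have "Xf g h l = d2 P A \<alpha> (\<lambda>x y. inv\<^bsub>A\<^esub> (\<omega> x y)) g h l"
    if g: "g \<in> carrier P" and h: "h \<in> carrier P" and l: "l \<in> carrier P" for g h l
  proof -
    have "d2 P A \<alpha> (\<lambda>x y. inv\<^bsub>A\<^esub> (\<omega> x y)) g h l = inv\<^bsub>A\<^esub> (d2 P A \<alpha> \<omega> g h l)"
      by (rule d2_inv[where f=\<omega>, OF wc g h l])
    also have "\<dots> = Xf g h l" using we[OF g h l] C3_in[OF Xf g h l] by (metis A.inv_inv A.l_one A.inv_closed)
    finally show ?thesis by simp
  qed
  thus "\<exists>\<omega>\<in>C2 P A. \<forall>g\<in>carrier P. \<forall>h\<in>carrier P. \<forall>l\<in>carrier P. Xf g h l = d2 P A \<alpha> \<omega> g h l"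
    using C2_inv[OF w] by blast
next
  assume "\<exists>\<omega>\<in>C2 P A. \<forall>g\<in>carrier P. \<forall>h\<in>carrier P. \<forall>l\<in>carrier P. Xf g h l = d2 P A \<alpha> \<omega> g h l"
  then obtain \<omega> where w: "\<omega> \<in> C2 P A" and we: "\<And>g h l. g \<in> carrier P \<Longrightarrow> h \<in> carrier P \<Longrightarrow> l \<in> carrier P \<Longrightarrow>
      Xf g h l = d2 P A \<alpha> \<omega> g h l" by blast
  have wc: "\<And>g h. g \<in> carrier P \<Longrightarrow> h \<in> carrier P \<Longrightarrow> \<omega> g h \<in> carrier A" using C2_in[OF w] .
  have key: "(\<lambda>g h k. v g h k \<otimes>\<^bsub>A\<^esub> inv\<^bsub>A\<^esub> (Xf g h k)) \<in> B3 P A \<alpha> \<longleftrightarrow>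
             (\<lambda>g h k. v g h k \<otimes>\<^bsub>A\<^esub> inv\<^bsub>A\<^esub> \<one>\<^bsub>A\<^esub>) \<in> B3 P A \<alpha>" if v: "v \<in> Z3 P A \<alpha>" for v
  proof -
    have vc: "v \<in> C3 P A" using v by (simp add: Z3_def)
    have out1: "\<forall>g h l. \<not> (g \<in> carrier P \<and> h \<in> carrier P \<and> l \<in> carrier P) \<longrightarrow> v g h l \<otimes>\<^bsub>A\<^esub> inv\<^bsub>A\<^esub> (Xf g h l) = \<one>\<^bsub>A\<^esub>"
      using C3_out[OF vc] C3_out[OF Xf] by simp
    have out2: "\<forall>g h l. \<not> (g \<in> carrier P \<and> h \<in> carrier P \<and> l \<in> carrier P) \<longrightarrow> v g h l \<otimes>\<^bsub>A\<^esub> inv\<^bsub>A\<^esub> \<one>\<^bsub>A\<^esub> = \<one>\<^bsub>A\<^esub>"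
      using C3_out[OF vc] by simp
    have "(\<exists>\<omega>'\<in>C2 P A. \<forall>g\<in>carrier P. \<forall>h\<in>carrier P. \<forall>l\<in>carrier P. v g h l \<otimes>\<^bsub>A\<^esub> inv\<^bsub>A\<^esub> (Xf g h l) = d2 P A \<alpha> \<omega>' g h l)
      \<longleftrightarrow> (\<exists>\<omega>'\<in>C2 P A. \<forall>g\<in>carrier P. \<forall>h\<in>carrier P. \<forall>l\<in>carrier P. v g h l \<otimes>\<^bsub>A\<^esub> inv\<^bsub>A\<^esub> \<one>\<^bsub>A\<^esub> = d2 P A \<alpha> \<omega>' g h l)"
    proof
      assume "\<exists>\<omega>'\<in>C2 P A. \<forall>g\<in>carrier P. \<forall>h\<in>carrier P. \<forall>l\<in>carrier P. v g h l \<otimes>\<^bsub>A\<^esub> inv\<^bsub>A\<^esub> (Xf g h l) = d2 P A \<alpha> \<omega>' g h l"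
      then obtain \<omega>' where w': "\<omega>' \<in> C2 P A" and e: "\<And>g h l. g \<in> carrier P \<Longrightarrow> h \<in> carrier P \<Longrightarrow> l \<in> carrier P \<Longrightarrow>
          v g h l \<otimes>\<^bsub>A\<^esub> inv\<^bsub>A\<^esub> (Xf g h l) = d2 P A \<alpha> \<omega>' g h l" by blast
      have w'c: "\<And>g h. g \<in> carrier P \<Longrightarrow> h \<in> carrier P \<Longrightarrow> \<omega>' g h \<in> carrier A" using C2_in[OF w'] .
      have "v g h l \<otimes>\<^bsub>A\<^esub> inv\<^bsub>A\<^esub> \<one>\<^bsub>A\<^esub> = d2 P A \<alpha> (\<lambda>x y. \<omega>' x y \<otimes>\<^bsub>A\<^esub> \<omega> x y) g h l"
        if g: "g \<in> carrier P" and h: "h \<in> carrier P" and l: "l \<in> carrier P" for g h l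
      proof -
        have "d2 P A \<alpha> (\<lambda>x y. \<omega>' x y \<otimes>\<^bsub>A\<^esub> \<omega> x y) g h l = d2 P A \<alpha> \<omega>' g h l \<otimes>\<^bsub>A\<^esub> d2 P A \<alpha> \<omega> g h l"
          by (rule d2_mult[where f=\<omega>' and f'=\<omega>, OF w'c wc g h l])
        also have "\<dots> = v g h l \<otimes>\<^bsub>A\<^esub> inv\<^bsub>A\<^esub> (Xf g h l) \<otimes>\<^bsub>A\<^esub> Xf g h l" using e[OF g h l] we[OF g h l] by simp
        also have "\<dots> = v g h l" using C3_in[OF vc g h l] C3_in[OF Xf g h l] by (simp add: A.m_assoc)
        finally show ?thesis using C3_in[OF vc g h l] by simp
      qed
      thus "\<exists>\<omega>'\<in>C2 P A. \<forall>g\<in>carrier P. \<forall>h\<in>carrier P. \<forall>l\<in>carrier P. v g h l \<otimes>\<^bsub>A\<^esub> inv\<^bsub>A\<^esub> \<one>\<^bsub>A\<^esub> = d2 P A \<alpha> \<omega>' g h l"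
        using C2_mult[OF w' w] by blast
    next
      assume "\<exists>\<omega>'\<in>C2 P A. \<forall>g\<in>carrier P. \<forall>h\<in>carrier P. \<forall>l\<in>carrier P. v g h l \<otimes>\<^bsub>A\<^esub> inv\<^bsub>A\<^esub> \<one>\<^bsub>A\<^esub> = d2 P A \<alpha> \<omega>' g h l"
      then obtain \<omega>' where w': "\<omega>' \<in> C2 P A" and e: "\<And>g h l. g \<in> carrier P \<Longrightarrow> h \<in> carrier P \<Longrightarrow> l \<in> carrier P \<Longrightarrow>
          v g h l \<otimes>\<^bsub>A\<^esub> inv\<^bsub>A\<^esub> \<one>\<^bsub>A\<^esub> = d2 P A \<alpha> \<omega>' g h l" by blast
      have w'c: "\<And>g h. g \<in> carrier P \<Longrightarrow> h \<in> carrier P \<Longrightarrow> \<omega>' g h \<in> carrier A" using C2_in[OF w'] .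
      have wic: "\<And>g h. g \<in> carrier P \<Longrightarrow> h \<in> carrier P \<Longrightarrow> inv\<^bsub>A\<^esub> (\<omega> g h) \<in> carrier A" using wc by simp
      have "v g h l \<otimes>\<^bsub>A\<^esub> inv\<^bsub>A\<^esub> (Xf g h l) = d2 P A \<alpha> (\<lambda>x y. \<omega>' x y \<otimes>\<^bsub>A\<^esub> inv\<^bsub>A\<^esub> (\<omega> x y)) g h l"
        if g: "g \<in> carrier P" and h: "h \<in> carrier P" and l: "l \<in> carrier P" for g h l
      proof -
        have "d2 P A \<alpha> (\<lambda>x y. \<omega>' x y \<otimes>\<^bsub>A\<^esub> inv\<^bsub>A\<^esub> (\<omega> x y)) g h l
            = d2 P A \<alpha> \<omega>' g h l \<otimes>\<^bsub>A\<^esub> d2 P A \<alpha> (\<lambda>x y. inv\<^bsub>A\<^esub> (\<omega> x y)) g h l"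
          by (rule d2_mult[where f=\<omega>' and f'="\<lambda>x y. inv\<^bsub>A\<^esub> (\<omega> x y)", OF w'c wic g h l])
        also have "\<dots> = v g h l \<otimes>\<^bsub>A\<^esub> inv\<^bsub>A\<^esub> (Xf g h l)"
          using e[OF g h l] we[OF g h l] d2_inv[where f=\<omega>, OF wc g h l] C3_in[OF vc g h l] by simp
        finally show ?thesis by simp
      qed
      thus "\<exists>\<omega>'\<in>C2 P A. \<forall>g\<in>carrier P. \<forall>h\<in>carrier P. \<forall>l\<in>carrier P. v g h l \<otimes>\<^bsub>A\<^esub> inv\<^bsub>A\<^esub> (Xf g h l) = d2 P A \<alpha> \<omega>' g h l"
        using C2_mult[OF w' C2_inv[OF w]] by blast
    qed
    thus ?thesis unfolding B3_iff using out1 out2 by blast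
  qed
  show "cls3 P A \<alpha> Xf = cls3 P A \<alpha> (\<lambda>_ _ _. \<one>\<^bsub>A\<^esub>)"
    unfolding cls3_def using key by blast
qed

lemma pT_mono: "N \<le> k \<Longrightarrow> pT A p k \<subseteq> pT A p N"
proof
  fix x assume Nk: "N \<le> k" and "x \<in> pT A p k"
  then obtain t where t: "t \<in> carrier A" "x = t [^]\<^bsub>A\<^esub> (p ^ k)" by (auto simp: pT_def)
  have "p ^ k = p ^ (k - N) * p ^ N" using Nk by (simp flip: power_add)
  hence "x = (t [^]\<^bsub>A\<^esub> (p ^ (k - N))) [^]\<^bsub>A\<^esub> (p ^ N)" using t by (simp add: A.nat_pow_pow)
  thus "x \<in> pT A p N" using t by (auto simp: pT_def)
qed

lemma pow_in_pT: "t \<in> carrier A \<Longrightarrow> t [^]\<^bsub>A\<^esub> (p ^ k) \<in> pT A p k"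
  by (auto simp: pT_def)

lemma res2_C2: assumes L: "subgroup L P" and f: "f \<in> C2 P A" shows "res2 A L f \<in> C2 (P\<lparr>carrier := L\<rparr>) A"
proof -
  have sub: "L \<subseteq> carrier P" using subgroup.subset[OF L] .
  have one: "\<one>\<^bsub>P\<^esub> \<in> L" using subgroup.one_closed[OF L] .
  have a: "\<And>g h. g \<in> L \<Longrightarrow> h \<in> L \<Longrightarrow> f g h \<in> carrier A" using C2_in[OF f] sub by blast
  have b: "\<And>g. g \<in> L \<Longrightarrow> f \<one>\<^bsub>P\<^esub> g = \<one>\<^bsub>A\<^esub> \<and> f g \<one>\<^bsub>P\<^esub> = \<one>\<^bsub>A\<^esub>" using C2_1[OF f] sub by blast
  show ?thesis unfolding C2_def res2_def using a b one by simp
qed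

lemma res3_C3: assumes L: "subgroup L P" and f: "f \<in> C3 P A" shows "res3 A L f \<in> C3 (P\<lparr>carrier := L\<rparr>) A"
proof -
  have sub: "L \<subseteq> carrier P" using subgroup.subset[OF L] .
  have one: "\<one>\<^bsub>P\<^esub> \<in> L" using subgroup.one_closed[OF L] .
  have a: "\<And>g h l. g \<in> L \<Longrightarrow> h \<in> L \<Longrightarrow> l \<in> L \<Longrightarrow> f g h l \<in> carrier A" using C3_in[OF f] sub by blast
  have b: "\<And>g h. g \<in> L \<Longrightarrow> h \<in> L \<Longrightarrow> f \<one>\<^bsub>P\<^esub> g h = \<one>\<^bsub>A\<^esub> \<and> f g \<one>\<^bsub>P\<^esub> h = \<one>\<^bsub>A\<^esub> \<and> f g h \<one>\<^bsub>P\<^esub> = \<one>\<^bsub>A\<^esub>"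
  proof -
    fix g h assume gh: "g \<in> L" "h \<in> L"
    hence "g \<in> carrier P" "h \<in> carrier P" using sub by auto
    thus "f \<one>\<^bsub>P\<^esub> g h = \<one>\<^bsub>A\<^esub> \<and> f g \<one>\<^bsub>P\<^esub> h = \<one>\<^bsub>A\<^esub> \<and> f g h \<one>\<^bsub>P\<^esub> = \<one>\<^bsub>A\<^esub>"
      using f unfolding C3_def by blast
  qed
  show ?thesis unfolding C3_def res3_def using a b one by simp
qed

lemma res_d2: assumes L: "subgroup L P" and g: "g \<in> L" and h: "h \<in> L" and l: "l \<in> L"
  shows "d2 (P\<lparr>carrier := L\<rparr>) A \<alpha> (res2 A L f) g h l = d2 P A \<alpha> f g h l"
proof -
  have sub: "L \<subseteq> carrier P" using subgroup.subset[OF L] .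
  have gP: "g \<in> carrier P" and hP: "h \<in> carrier P" and lP: "l \<in> carrier P" using g h l sub by auto
  have ghL: "g \<otimes>\<^bsub>P\<^esub> h \<in> L" and hlL: "h \<otimes>\<^bsub>P\<^esub> l \<in> L"
    using subgroup.m_closed[OF L] g h l by auto
  show ?thesis unfolding d2_def res2_def using g h l gP hP lP ghL hlL by simp
qed

lemma pT_sub: "subgroup (pT A p k) A"
proof (rule A.subgroupI)
  show "pT A p k \<subseteq> carrier A" by (auto simp: pT_def)
  show "pT A p k \<noteq> {}" by (auto simp: pT_def)
  show "\<And>a. a \<in> pT A p k \<Longrightarrow> inv\<^bsub>A\<^esub> a \<in> pT A p k"
    by (auto simp: pT_def A.nat_pow_inv[symmetric])
  show "\<And>a b. a \<in> pT A p k \<Longrightarrow> b \<in> pT A p k \<Longrightarrow> a \<otimes>\<^bsub>A\<^esub> b \<in> pT A p k"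
  proof -
    fix a b assume "a \<in> pT A p k" "b \<in> pT A p k"
    then obtain s t where st: "s \<in> carrier A" "t \<in> carrier A" "a = s [^]\<^bsub>A\<^esub> (p ^ k)" "b = t [^]\<^bsub>A\<^esub> (p ^ k)"
      by (auto simp: pT_def)
    hence "a \<otimes>\<^bsub>A\<^esub> b = (s \<otimes>\<^bsub>A\<^esub> t) [^]\<^bsub>A\<^esub> (p ^ k)" by (simp add: A.pow_mult_distrib A.m_comm)
    thus "a \<otimes>\<^bsub>A\<^esub> b \<in> pT A p k" using st by (auto simp: pT_def)
  qed
qed

lemma pT_inv: "g \<in> carrier P \<Longrightarrow> \<alpha> g ` pT A p k \<subseteq> pT A p k"
  by (auto simp: pT_def)

end

locale gquot = gmod +
  fixes H
  assumes Hsub: "subgroup H A" and Hinv: "\<And>g. g \<in> carrier P \<Longrightarrow> \<alpha> g ` H \<subseteq> H"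
begin

sublocale H: normal H A using A.subgroup_imp_normal[OF Hsub] by simp

abbreviation "cst t \<equiv> H #>\<^bsub>A\<^esub> t"

lemma Hsubset: "H \<subseteq> carrier A" by (rule subgroup.subset[OF Hsub])

lemma Hinv_eq: "g \<in> carrier P \<Longrightarrow> \<alpha> g ` H = H"
proof
  assume g: "g \<in> carrier P"
  show "\<alpha> g ` H \<subseteq> H" using Hinv[OF g] .
  show "H \<subseteq> \<alpha> g ` H"
  proof
    fix x assume x: "x \<in> H"
    hence "\<alpha> (inv\<^bsub>P\<^esub> g) x \<in> H" using Hinv[of "inv\<^bsub>P\<^esub> g"] g by auto
    moreover have "\<alpha> g (\<alpha> (inv\<^bsub>P\<^esub> g) x) = x" using a_invg g x Hsubset by auto
    ultimately show "x \<in> \<alpha> g ` H" by (metis image_eqI)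
  qed
qed

lemma cos_act: "g \<in> carrier P \<Longrightarrow> t \<in> carrier A \<Longrightarrow> actM \<alpha> g (cst t) = cst (\<alpha> g t)"
proof -
  assume g: "g \<in> carrier P" and t: "t \<in> carrier A"
  have "actM \<alpha> g (cst t) = (\<lambda>h. \<alpha> g h \<otimes>\<^bsub>A\<^esub> \<alpha> g t) ` H"
    using g t Hsubset by (auto simp: actM_def r_coset_def image_iff)
  also have "\<dots> = (\<lambda>h. h \<otimes>\<^bsub>A\<^esub> \<alpha> g t) ` (\<alpha> g ` H)" by (simp add: image_image)
  also have "\<dots> = cst (\<alpha> g t)" using Hinv_eq[OF g] by (auto simp: r_coset_def)
  finally show ?thesis .
qed

lemma M_cg: "comm_group (A Mod H)" by (rule A.abelian_FactGroup[OF Hsub])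

lemma cos_carrier: "carrier (A Mod H) = cst ` carrier A" by (rule carrier_FactGroup)

lemma cos_in: "t \<in> carrier A \<Longrightarrow> cst t \<in> carrier (A Mod H)" by (simp add: cos_carrier)

lemma cos_mult: "a \<in> carrier A \<Longrightarrow> b \<in> carrier A \<Longrightarrow> cst a \<otimes>\<^bsub>A Mod H\<^esub> cst b = cst (a \<otimes>\<^bsub>A\<^esub> b)"
  by (simp add: H.rcos_sum)

lemma cos_inv: "a \<in> carrier A \<Longrightarrow> inv\<^bsub>A Mod H\<^esub> (cst a) = cst (inv\<^bsub>A\<^esub> a)"
  by (simp add: H.inv_FactGroup cos_in H.rcos_inv)

lemma cos_one: "cst \<one>\<^bsub>A\<^esub> = \<one>\<^bsub>A Mod H\<^esub>"
  using A.coset_join2[OF A.one_closed Hsub] Hsub by (simp add: subgroup.one_closed)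

lemma cos_pow: "a \<in> carrier A \<Longrightarrow> cst a [^]\<^bsub>A Mod H\<^esub> (n::nat) = cst (a [^]\<^bsub>A\<^esub> n)"
  by (simp add: H.FactGroup_pow)

lemma cos_eq: "a \<in> carrier A \<Longrightarrow> b \<in> carrier A \<Longrightarrow> cst a = cst b \<longleftrightarrow> a \<otimes>\<^bsub>A\<^esub> inv\<^bsub>A\<^esub> b \<in> H"
proof
  assume a: "a \<in> carrier A" and b: "b \<in> carrier A"
  { assume "cst a = cst b"
    hence "a \<in> cst b" using A.rcos_self[OF a Hsub] by simp
    thus "a \<otimes>\<^bsub>A\<^esub> inv\<^bsub>A\<^esub> b \<in> H" using subgroup.rcos_module_imp[OF Hsub A.is_group b] by simp }
  { assume "a \<otimes>\<^bsub>A\<^esub> inv\<^bsub>A\<^esub> b \<in> H"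
    hence "a \<in> cst b" using subgroup.rcos_module_rev[OF Hsub A.is_group b a] by simp
    thus "cst a = cst b" using A.repr_independence[OF _ b Hsub] by simp }
qed

lemma cos_eq_one: "a \<in> carrier A \<Longrightarrow> cst a = \<one>\<^bsub>A Mod H\<^esub> \<longleftrightarrow> a \<in> H"
  using cos_eq[of a "\<one>\<^bsub>A\<^esub>"] cos_one by simp

lemma M_gmod: "gmod P (A Mod H) (actM \<alpha>)"
proof (rule gmod.intro)
  show "group P" by (rule Pg)
  show "comm_group (A Mod H)" by (rule M_cg)
  show "actM \<alpha> g \<in> hom (A Mod H) (A Mod H)" if g: "g \<in> carrier P" for g
  proof (unfold hom_def, intro CollectI conjI ballI)
    show "actM \<alpha> g \<in> carrier (A Mod H) \<rightarrow> carrier (A Mod H)"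
      using g by (auto simp: cos_carrier cos_act)
    fix U V assume "U \<in> carrier (A Mod H)" "V \<in> carrier (A Mod H)"
    then obtain a b where U: "U = cst a" "a \<in> carrier A" and V: "V = cst b" "b \<in> carrier A"
      by (auto simp: cos_carrier)
    show "actM \<alpha> g (U \<otimes>\<^bsub>A Mod H\<^esub> V) = actM \<alpha> g U \<otimes>\<^bsub>A Mod H\<^esub> actM \<alpha> g V"
      using U V g by (simp add: H.rcos_sum cos_act)
  qed
  show "actM \<alpha> \<one>\<^bsub>P\<^esub> U = U" if "U \<in> carrier (A Mod H)" for U
    using that aone by (auto simp: cos_carrier cos_act)
  show "actM \<alpha> (g \<otimes>\<^bsub>P\<^esub> h) U = actM \<alpha> h (actM \<alpha> g U)"
    if "g \<in> carrier P" "h \<in> carrier P" "U \<in> carrier (A Mod H)" for g h U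
    using that amult by (auto simp: cos_carrier cos_act)
qed

sublocale M: gmod P "A Mod H" "actM \<alpha>" by (rule M_gmod)

lemma cos_d1:
  assumes f: "\<And>g. g \<in> carrier P \<Longrightarrow> f g \<in> carrier A" and g: "g \<in> carrier P" and h: "h \<in> carrier P"
  shows "d1 P (A Mod H) (actM \<alpha>) (\<lambda>x. cst (f x)) g h = cst (d1 P A \<alpha> f g h)"
  using f g h by (simp add: d1_def cos_inv cos_act H.rcos_sum)

lemma cos_d2:
  assumes f: "\<And>g h. g \<in> carrier P \<Longrightarrow> h \<in> carrier P \<Longrightarrow> f g h \<in> carrier A"
    and g: "g \<in> carrier P" and h: "h \<in> carrier P" and k: "k \<in> carrier P"
  shows "d2 P (A Mod H) (actM \<alpha>) (\<lambda>x y. cst (f x y)) g h k = cst (d2 P A \<alpha> f g h k)"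
  using f g h k by (simp add: d2_def cos_inv cos_act H.rcos_sum)

lemma lift2:
  assumes k: "\<kappa> \<in> C2 P (A Mod H)"
  shows "\<exists>\<kappa>'\<in>C2 P A. \<forall>g\<in>carrier P. \<forall>h\<in>carrier P. \<kappa> g h = cst (\<kappa>' g h)"
proof -
  define \<kappa>' where "\<kappa>' g h = (if g \<in> carrier P \<and> h \<in> carrier P \<and> \<kappa> g h \<noteq> H
      then (SOME t. t \<in> carrier A \<and> \<kappa> g h = cst t) else \<one>\<^bsub>A\<^esub>)" for g h
  have ex: "\<exists>t. t \<in> carrier A \<and> \<kappa> g h = cst t" if "g \<in> carrier P" "h \<in> carrier P" for g h
    using M.C2_in[OF k that] by (auto simp: cos_carrier)
  have kk: "\<kappa>' g h \<in> carrier A \<and> \<kappa> g h = cst (\<kappa>' g h)" if "g \<in> carrier P" "h \<in> carrier P" for g h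
  proof (cases "\<kappa> g h = H")
    case True thus ?thesis using cos_one that by (simp add: \<kappa>'_def)
  next
    case False
    have P: "(SOME t. t \<in> carrier A \<and> \<kappa> g h = cst t) \<in> carrier A \<and> \<kappa> g h = cst (SOME t. t \<in> carrier A \<and> \<kappa> g h = cst t)"
      by (rule someI_ex[OF ex[OF that]])
    have eq: "\<kappa>' g h = (SOME t. t \<in> carrier A \<and> \<kappa> g h = cst t)" using False that by (simp add: \<kappa>'_def)
    show ?thesis unfolding eq by (rule P)
  qed
  have o1: "\<kappa>' g h = \<one>\<^bsub>A\<^esub>" if "g \<notin> carrier P \<or> h \<notin> carrier P" for g h
    using that by (auto simp: \<kappa>'_def)
  have o2: "\<kappa>' \<one>\<^bsub>P\<^esub> g = \<one>\<^bsub>A\<^esub> \<and> \<kappa>' g \<one>\<^bsub>P\<^esub> = \<one>\<^bsub>A\<^esub>" if "g \<in> carrier P" for g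
  proof -
    have "\<kappa> \<one>\<^bsub>P\<^esub> g = H" "\<kappa> g \<one>\<^bsub>P\<^esub> = H" using M.C2_1[OF k that] by simp_all
    thus ?thesis unfolding \<kappa>'_def by simp
  qed
  have "\<kappa>' \<in> C2 P A" unfolding C2_def using kk o1 o2 by blast
  thus ?thesis using kk by blast
qed

lemma lift1:
  assumes f: "f \<in> C1 P (A Mod H)"
  shows "\<exists>f'\<in>C1 P A. \<forall>g\<in>carrier P. f g = cst (f' g)"
proof -
  define f' where "f' g = (if g \<in> carrier P \<and> f g \<noteq> H
      then (SOME t. t \<in> carrier A \<and> f g = cst t) else \<one>\<^bsub>A\<^esub>)" for g
  have ex: "\<exists>t. t \<in> carrier A \<and> f g = cst t" if "g \<in> carrier P" for g
    using M.C1_in[OF f that] by (auto simp: cos_carrier)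
  have ff: "f' g \<in> carrier A \<and> f g = cst (f' g)" if "g \<in> carrier P" for g
  proof (cases "f g = H")
    case True thus ?thesis using cos_one that by (simp add: f'_def)
  next
    case False
    have P: "(SOME t. t \<in> carrier A \<and> f g = cst t) \<in> carrier A \<and> f g = cst (SOME t. t \<in> carrier A \<and> f g = cst t)"
      by (rule someI_ex[OF ex[OF that]])
    have eq: "f' g = (SOME t. t \<in> carrier A \<and> f g = cst t)" using False that by (simp add: f'_def)
    show ?thesis unfolding eq by (rule P)
  qed
  have o1: "f' g = \<one>\<^bsub>A\<^esub>" if "g \<notin> carrier P" for g using that by (simp add: f'_def)
  have o2: "f' \<one>\<^bsub>P\<^esub> = \<one>\<^bsub>A\<^esub>"
  proof -
    have "f \<one>\<^bsub>P\<^esub> = H" using M.C1_1[OF f] by simp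
    thus ?thesis unfolding f'_def by simp
  qed
  have "f' \<in> C1 P A" unfolding C1_def using ff o1 o2 by blast
  thus ?thesis using ff by blast
qed

lemma Z2_cst:
  assumes r: "\<rho> \<in> Z2 P A \<alpha>"
  shows "(\<lambda>g h. cst (\<rho> g h)) \<in> Z2 P (A Mod H) (actM \<alpha>)"
proof (rule M.Z2I)
  have rc: "\<And>g h. g \<in> carrier P \<Longrightarrow> h \<in> carrier P \<Longrightarrow> \<rho> g h \<in> carrier A" using C2_in[OF Z2_C2[OF r]] .
  show "(\<lambda>g h. cst (\<rho> g h)) \<in> C2 P (A Mod H)"
  proof -
    have a: "\<forall>g\<in>carrier P. \<forall>h\<in>carrier P. cst (\<rho> g h) \<in> carrier (A Mod H)" using rc cos_in by blast
    have b: "\<forall>g h. (g \<notin> carrier P \<or> h \<notin> carrier P) \<longrightarrow> cst (\<rho> g h) = \<one>\<^bsub>A Mod H\<^esub>"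
      using C2_out[OF Z2_C2[OF r]] cos_one by simp
    have c: "\<forall>g\<in>carrier P. cst (\<rho> \<one>\<^bsub>P\<^esub> g) = \<one>\<^bsub>A Mod H\<^esub> \<and> cst (\<rho> g \<one>\<^bsub>P\<^esub>) = \<one>\<^bsub>A Mod H\<^esub>"
      using C2_1[OF Z2_C2[OF r]] cos_one by simp
    show ?thesis unfolding C2_def using a b c by blast
  qed
  fix g h k assume ghk: "g \<in> carrier P" "h \<in> carrier P" "k \<in> carrier P"
  show "d2 P (A Mod H) (actM \<alpha>) (\<lambda>g h. cst (\<rho> g h)) g h k = \<one>\<^bsub>A Mod H\<^esub>"
    using cos_d2[where f=\<rho>, OF rc ghk] Z2_d2[OF r ghk] cos_one by simp
qed

lemma gquot_sub: "subgroup L P \<Longrightarrow> gquot (P\<lparr>carrier := L\<rparr>) A \<alpha> H"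
  apply (rule gquot.intro)
   apply (erule gmod_sub)
  apply (rule gquot_axioms.intro)
  using Hsub Hinv subgroup.subset by auto

end

context gmod begin
lemma gquot_pT: "gquot P A \<alpha> (pT A p k)"
  by (rule gquot.intro[OF gmod_axioms]) (simp add: gquot_axioms_def pT_sub pT_inv)



lemma conn_ex:
  assumes k: "\<kappa> \<in> Z2 P (A Mod pT A p n) (actM \<alpha>)"
  shows "\<exists>z. z \<in> C3 P A \<and> (\<exists>\<kappa>'\<in>C2 P A. (\<forall>g\<in>carrier P. \<forall>h\<in>carrier P. \<kappa> g h = r_coset A (pT A p n) (\<kappa>' g h))
      \<and> (\<forall>g\<in>carrier P. \<forall>h\<in>carrier P. \<forall>l\<in>carrier P. z g h l [^]\<^bsub>A\<^esub> (p ^ n) = d2 P A \<alpha> \<kappa>' g h l))"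
proof -
  interpret Q: gquot P A \<alpha> "pT A p n" by (rule gquot_pT)
  obtain \<kappa>' where k': "\<kappa>' \<in> C2 P A" and ke: "\<And>g h. g \<in> carrier P \<Longrightarrow> h \<in> carrier P \<Longrightarrow> \<kappa> g h = Q.cst (\<kappa>' g h)"
    using Q.lift2[OF Q.M.Z2_C2[OF k]] by blast
  have kc: "\<And>g h. g \<in> carrier P \<Longrightarrow> h \<in> carrier P \<Longrightarrow> \<kappa>' g h \<in> carrier A" using C2_in[OF k'] .
  have dp: "d2 P A \<alpha> \<kappa>' g h l \<in> pT A p n" if g: "g \<in> carrier P" and h: "h \<in> carrier P" and l: "l \<in> carrier P" for g h l
  proof -
    have "Q.cst (d2 P A \<alpha> \<kappa>' g h l) = d2 P (A Mod pT A p n) (actM \<alpha>) (\<lambda>x y. Q.cst (\<kappa>' x y)) g h l"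
      using Q.cos_d2[where f=\<kappa>', OF kc g h l] by simp
    also have "\<dots> = d2 P (A Mod pT A p n) (actM \<alpha>) \<kappa> g h l"
      by (rule Q.M.d2_cong) (simp_all add: ke g h l)
    also have "\<dots> = \<one>\<^bsub>A Mod pT A p n\<^esub>" using Q.M.Z2_d2[OF k g h l] .
    finally have "Q.cst (d2 P A \<alpha> \<kappa>' g h l) = \<one>\<^bsub>A Mod pT A p n\<^esub>" .
    thus ?thesis using Q.cos_eq_one[OF d2_closed[where f=\<kappa>', OF kc]] by simp
  qed
  define z where "z g h l = (if g \<in> carrier P \<and> h \<in> carrier P \<and> l \<in> carrier P \<and> d2 P A \<alpha> \<kappa>' g h l \<noteq> \<one>\<^bsub>A\<^esub>
      then (SOME v. v \<in> carrier A \<and> d2 P A \<alpha> \<kappa>' g h l = v [^]\<^bsub>A\<^esub> (p ^ n)) else \<one>\<^bsub>A\<^esub>)" for g h l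
  have ex: "\<exists>v. v \<in> carrier A \<and> d2 P A \<alpha> \<kappa>' g h l = v [^]\<^bsub>A\<^esub> (p ^ n)"
    if "g \<in> carrier P" "h \<in> carrier P" "l \<in> carrier P" for g h l
    using dp[OF that] unfolding pT_def by blast
  have zz: "z g h l \<in> carrier A \<and> z g h l [^]\<^bsub>A\<^esub> (p ^ n) = d2 P A \<alpha> \<kappa>' g h l"
    if "g \<in> carrier P" "h \<in> carrier P" "l \<in> carrier P" for g h l
  proof (cases "d2 P A \<alpha> \<kappa>' g h l = \<one>\<^bsub>A\<^esub>")
    case True thus ?thesis by (simp add: z_def)
  next
    case False
    have P: "(SOME v. v \<in> carrier A \<and> d2 P A \<alpha> \<kappa>' g h l = v [^]\<^bsub>A\<^esub> (p ^ n)) \<in> carrier A \<and>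
       d2 P A \<alpha> \<kappa>' g h l = (SOME v. v \<in> carrier A \<and> d2 P A \<alpha> \<kappa>' g h l = v [^]\<^bsub>A\<^esub> (p ^ n)) [^]\<^bsub>A\<^esub> (p ^ n)"
      by (rule someI_ex[OF ex[OF that]])
    have eq: "z g h l = (SOME v. v \<in> carrier A \<and> d2 P A \<alpha> \<kappa>' g h l = v [^]\<^bsub>A\<^esub> (p ^ n))" using False that by (simp add: z_def)
    show ?thesis unfolding eq by (rule conjI[OF conjunct1[OF P] sym[OF conjunct2[OF P]]])
  qed
  have dC: "d2 P A \<alpha> \<kappa>' \<in> C3 P A" by (rule d2_C3[OF k'])
  have zo: "z g h l = \<one>\<^bsub>A\<^esub>" if "\<not> (g \<in> carrier P \<and> h \<in> carrier P \<and> l \<in> carrier P)" for g h l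
    unfolding z_def by (rule if_not_P) (use that in blast)
  have z1: "z g h l = \<one>\<^bsub>A\<^esub>" if "d2 P A \<alpha> \<kappa>' g h l = \<one>\<^bsub>A\<^esub>" for g h l
    unfolding z_def by (rule if_not_P) (use that in blast)
  have "z \<in> C3 P A"
  proof -
    have n: "d2 P A \<alpha> \<kappa>' \<one>\<^bsub>P\<^esub> g h = \<one>\<^bsub>A\<^esub> \<and> d2 P A \<alpha> \<kappa>' g \<one>\<^bsub>P\<^esub> h = \<one>\<^bsub>A\<^esub> \<and> d2 P A \<alpha> \<kappa>' g h \<one>\<^bsub>P\<^esub> = \<one>\<^bsub>A\<^esub>"
      if "g \<in> carrier P" "h \<in> carrier P" for g h using dC that unfolding C3_def by blast
    have a: "\<forall>g h. g \<in> carrier P \<longrightarrow> h \<in> carrier P \<longrightarrow>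
        z \<one>\<^bsub>P\<^esub> g h = \<one>\<^bsub>A\<^esub> \<and> z g \<one>\<^bsub>P\<^esub> h = \<one>\<^bsub>A\<^esub> \<and> z g h \<one>\<^bsub>P\<^esub> = \<one>\<^bsub>A\<^esub>"
    proof (intro allI impI)
      fix g h assume "g \<in> carrier P" "h \<in> carrier P"
      from n[OF this] show "z \<one>\<^bsub>P\<^esub> g h = \<one>\<^bsub>A\<^esub> \<and> z g \<one>\<^bsub>P\<^esub> h = \<one>\<^bsub>A\<^esub> \<and> z g h \<one>\<^bsub>P\<^esub> = \<one>\<^bsub>A\<^esub>"
        using z1 by blast
    qed
    have b: "\<forall>g h l. (g \<notin> carrier P \<or> h \<notin> carrier P \<or> l \<notin> carrier P) \<longrightarrow> z g h l = \<one>\<^bsub>A\<^esub>"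
      using zo by blast
    have c: "\<forall>g\<in>carrier P. \<forall>h\<in>carrier P. \<forall>l\<in>carrier P. z g h l \<in> carrier A" using zz by blast
    show ?thesis unfolding C3_def using a b c by blast
  qed
  moreover have "\<forall>g\<in>carrier P. \<forall>h\<in>carrier P. \<kappa> g h = r_coset A (pT A p n) (\<kappa>' g h)" using ke by blast
  moreover have "\<forall>g\<in>carrier P. \<forall>h\<in>carrier P. \<forall>l\<in>carrier P. z g h l [^]\<^bsub>A\<^esub> (p ^ n) = d2 P A \<alpha> \<kappa>' g h l"
    using zz by blast
  ultimately show ?thesis using k' by (intro exI[of _ z] conjI bexI[of _ \<kappa>'])
qed


end

locale tfmod = gmod +
  fixes p :: nat
  assumes TF: "\<And>t j. t \<in> carrier A \<Longrightarrow> t [^]\<^bsub>A\<^esub> (p ^ j) = \<one>\<^bsub>A\<^esub> \<Longrightarrow> t = \<one>\<^bsub>A\<^esub>"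
begin

lemma pow_inj:
  assumes a: "a \<in> carrier A" and b: "b \<in> carrier A" and e: "a [^]\<^bsub>A\<^esub> (p ^ j) = b [^]\<^bsub>A\<^esub> (p ^ j)"
  shows "a = b"
proof -
  have "(a \<otimes>\<^bsub>A\<^esub> inv\<^bsub>A\<^esub> b) [^]\<^bsub>A\<^esub> (p ^ j) = a [^]\<^bsub>A\<^esub> (p ^ j) \<otimes>\<^bsub>A\<^esub> inv\<^bsub>A\<^esub> (b [^]\<^bsub>A\<^esub> (p ^ j))"
    using a b by (simp add: A.pow_mult_distrib A.m_comm A.nat_pow_inv)
  also have "\<dots> = \<one>\<^bsub>A\<^esub>" using e b by simp
  finally have "a \<otimes>\<^bsub>A\<^esub> inv\<^bsub>A\<^esub> b = \<one>\<^bsub>A\<^esub>" using TF a b by simp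
  thus ?thesis using a b by (metis A.inv_equality A.inv_inv A.inv_closed A.m_comm)
qed

lemma tfmod_sub: "subgroup L P \<Longrightarrow> tfmod (P\<lparr>carrier := L\<rparr>) A \<alpha> p"
  by (rule tfmod.intro[OF gmod_sub]) (simp_all add: tfmod_axioms_def TF)

lemma stepA:
  assumes fin: "finite (carrier P)" and card: "card (carrier P) = p ^ j" and jN: "j \<le> N"
    and k': "\<kappa>' \<in> C2 P A" and kp: "\<And>g h. g \<in> carrier P \<Longrightarrow> h \<in> carrier P \<Longrightarrow> \<kappa>' g h \<in> pT A p N"
    and w: "\<omega> \<in> C2 P A"
    and dz: "\<And>g h l. g \<in> carrier P \<Longrightarrow> h \<in> carrier P \<Longrightarrow> l \<in> carrier P \<Longrightarrow>
              d2 P A \<alpha> \<omega> g h l [^]\<^bsub>A\<^esub> (p ^ (N + m)) = d2 P A \<alpha> \<kappa>' g h l"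
  shows "\<exists>c\<in>C1 P A. \<forall>g\<in>carrier P. \<forall>h\<in>carrier P.
           \<kappa>' g h = d1 P A \<alpha> c g h \<otimes>\<^bsub>A\<^esub> \<omega> g h [^]\<^bsub>A\<^esub> (p ^ (N + m))"
proof -
  obtain k2 where k2: "k2 \<in> C2 P A" and k2e: "\<And>g h. g \<in> carrier P \<Longrightarrow> h \<in> carrier P \<Longrightarrow>
      \<kappa>' g h = k2 g h [^]\<^bsub>A\<^esub> (p ^ N)"
    using root2[OF k' kp] by blast
  define \<sigma> where "\<sigma> g h = k2 g h \<otimes>\<^bsub>A\<^esub> inv\<^bsub>A\<^esub> (\<omega> g h [^]\<^bsub>A\<^esub> (p ^ m))" for g h
  have sC: "\<sigma> \<in> C2 P A" unfolding \<sigma>_def by (intro C2_mult C2_inv C2_pow k2 w)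
  have wc: "\<And>g h. g \<in> carrier P \<Longrightarrow> h \<in> carrier P \<Longrightarrow> \<omega> g h \<in> carrier A" using C2_in[OF w] .
  have k2c: "\<And>g h. g \<in> carrier P \<Longrightarrow> h \<in> carrier P \<Longrightarrow> k2 g h \<in> carrier A" using C2_in[OF k2] .
  have sc: "\<And>g h. g \<in> carrier P \<Longrightarrow> h \<in> carrier P \<Longrightarrow> \<sigma> g h \<in> carrier A" using C2_in[OF sC] .
  have wpc: "\<And>g h. g \<in> carrier P \<Longrightarrow> h \<in> carrier P \<Longrightarrow> \<omega> g h [^]\<^bsub>A\<^esub> (p ^ m) \<in> carrier A" using wc by simp
  have kk: "k2 g h = \<sigma> g h \<otimes>\<^bsub>A\<^esub> \<omega> g h [^]\<^bsub>A\<^esub> (p ^ m)" if "g \<in> carrier P" "h \<in> carrier P" for g h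
    using that wc k2c by (simp add: \<sigma>_def A.m_assoc)
  have d2s: "d2 P A \<alpha> \<sigma> g h l = \<one>\<^bsub>A\<^esub>" if g: "g \<in> carrier P" and h: "h \<in> carrier P" and l: "l \<in> carrier P" for g h l
  proof -
    have dsc: "d2 P A \<alpha> \<sigma> g h l \<in> carrier A" and dwc: "d2 P A \<alpha> \<omega> g h l \<in> carrier A"
      using d2_closed[where f=\<sigma>, OF sc] d2_closed[where f=\<omega>, OF wc] by auto
    have "d2 P A \<alpha> \<kappa>' g h l = d2 P A \<alpha> (\<lambda>x y. k2 x y [^]\<^bsub>A\<^esub> (p ^ N)) g h l"
      by (rule d2_cong) (simp_all add: k2e g h l)
    also have "\<dots> = d2 P A \<alpha> k2 g h l [^]\<^bsub>A\<^esub> (p ^ N)" by (rule d2_pow[where f=k2, OF k2c g h l])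
    also have "d2 P A \<alpha> k2 g h l = d2 P A \<alpha> (\<lambda>x y. \<sigma> x y \<otimes>\<^bsub>A\<^esub> \<omega> x y [^]\<^bsub>A\<^esub> (p ^ m)) g h l"
      by (rule d2_cong) (simp_all add: kk g h l)
    also have "\<dots> = d2 P A \<alpha> \<sigma> g h l \<otimes>\<^bsub>A\<^esub> d2 P A \<alpha> (\<lambda>x y. \<omega> x y [^]\<^bsub>A\<^esub> (p ^ m)) g h l"
      by (rule d2_mult[where f=\<sigma> and f'="\<lambda>x y. \<omega> x y [^]\<^bsub>A\<^esub> (p ^ m)", OF sc wpc g h l])
    also have "d2 P A \<alpha> (\<lambda>x y. \<omega> x y [^]\<^bsub>A\<^esub> (p ^ m)) g h l = d2 P A \<alpha> \<omega> g h l [^]\<^bsub>A\<^esub> (p ^ m)"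
      by (rule d2_pow[where f=\<omega>, OF wc g h l])
    also have "(d2 P A \<alpha> \<sigma> g h l \<otimes>\<^bsub>A\<^esub> d2 P A \<alpha> \<omega> g h l [^]\<^bsub>A\<^esub> (p ^ m)) [^]\<^bsub>A\<^esub> (p ^ N)
        = d2 P A \<alpha> \<sigma> g h l [^]\<^bsub>A\<^esub> (p ^ N) \<otimes>\<^bsub>A\<^esub> d2 P A \<alpha> \<omega> g h l [^]\<^bsub>A\<^esub> (p ^ (N + m))"
      using dsc dwc by (simp add: A.pow_mult_distrib A.m_comm A.nat_pow_pow power_add mult.commute)
    finally have "d2 P A \<alpha> \<kappa>' g h l = d2 P A \<alpha> \<sigma> g h l [^]\<^bsub>A\<^esub> (p ^ N) \<otimes>\<^bsub>A\<^esub> d2 P A \<alpha> \<omega> g h l [^]\<^bsub>A\<^esub> (p ^ (N + m))" .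
    hence e2: "d2 P A \<alpha> \<kappa>' g h l = d2 P A \<alpha> \<sigma> g h l [^]\<^bsub>A\<^esub> (p ^ N) \<otimes>\<^bsub>A\<^esub> d2 P A \<alpha> \<kappa>' g h l"
      using dz[OF g h l] by simp
    have kc': "d2 P A \<alpha> \<kappa>' g h l \<in> carrier A" using d2_closed[where f=\<kappa>', OF C2_in[OF k']] by auto
    have "d2 P A \<alpha> \<sigma> g h l [^]\<^bsub>A\<^esub> (p ^ N) = \<one>\<^bsub>A\<^esub>"
    proof -
      have pc: "d2 P A \<alpha> \<sigma> g h l [^]\<^bsub>A\<^esub> (p ^ N) \<in> carrier A" using dsc by simp
      show ?thesis using e2 A.r_cancel_one'[OF kc' pc] by blast
    qed
    thus ?thesis using TF dsc by blast
  qed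
  have sZ: "\<sigma> \<in> Z2 P A \<alpha>" using sC d2s by (rule Z2I)
  obtain c where cC: "c \<in> C1 P A" and cd: "\<And>g h. g \<in> carrier P \<Longrightarrow> h \<in> carrier P \<Longrightarrow>
      \<sigma> g h [^]\<^bsub>A\<^esub> (p ^ N) = d1 P A \<alpha> c g h"
    using kill_p[OF fin sZ card jN] by blast
  have "\<kappa>' g h = d1 P A \<alpha> c g h \<otimes>\<^bsub>A\<^esub> \<omega> g h [^]\<^bsub>A\<^esub> (p ^ (N + m))" if g: "g \<in> carrier P" and h: "h \<in> carrier P" for g h
  proof -
    have "\<kappa>' g h = (\<sigma> g h \<otimes>\<^bsub>A\<^esub> \<omega> g h [^]\<^bsub>A\<^esub> (p ^ m)) [^]\<^bsub>A\<^esub> (p ^ N)" using k2e kk g h by simp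
    also have "\<dots> = \<sigma> g h [^]\<^bsub>A\<^esub> (p ^ N) \<otimes>\<^bsub>A\<^esub> \<omega> g h [^]\<^bsub>A\<^esub> (p ^ (N + m))"
      using sc wc g h by (simp add: A.pow_mult_distrib A.m_comm A.nat_pow_pow power_add mult.commute)
    finally show ?thesis using cd g h by simp
  qed
  thus ?thesis using cC by blast
qed

lemma stepB:
  assumes r: "\<rho> \<in> Z2 P A \<alpha>" and k': "\<kappa>' \<in> C2 P A" and f: "f' \<in> C1 P A"
    and q: "\<And>g h. g \<in> carrier P \<Longrightarrow> h \<in> carrier P \<Longrightarrow>
             \<rho> g h \<otimes>\<^bsub>A\<^esub> \<kappa>' g h \<otimes>\<^bsub>A\<^esub> inv\<^bsub>A\<^esub> (d1 P A \<alpha> f' g h) \<in> pT A p K"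
    and z: "\<And>g h l. g \<in> carrier P \<Longrightarrow> h \<in> carrier P \<Longrightarrow> l \<in> carrier P \<Longrightarrow>
             z g h l \<in> carrier A \<and> z g h l [^]\<^bsub>A\<^esub> (p ^ K) = d2 P A \<alpha> \<kappa>' g h l"
  shows "\<exists>\<omega>\<in>C2 P A. \<forall>g\<in>carrier P. \<forall>h\<in>carrier P. \<forall>l\<in>carrier P. z g h l = d2 P A \<alpha> \<omega> g h l"
proof -
  have rc: "\<And>g h. g \<in> carrier P \<Longrightarrow> h \<in> carrier P \<Longrightarrow> \<rho> g h \<in> carrier A" using C2_in[OF Z2_C2[OF r]] .
  have kc: "\<And>g h. g \<in> carrier P \<Longrightarrow> h \<in> carrier P \<Longrightarrow> \<kappa>' g h \<in> carrier A" using C2_in[OF k'] .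
  have fc: "\<And>g. g \<in> carrier P \<Longrightarrow> f' g \<in> carrier A" using C1_in[OF f] .
  have dfC: "d1 P A \<alpha> f' \<in> C2 P A" by (rule d1_C2[OF f])
  have dfc: "\<And>g h. d1 P A \<alpha> f' g h \<in> carrier A" using d1_closed[where f=f', OF fc] .
  define q' where "q' g h = (if g \<in> carrier P \<and> h \<in> carrier P
      then \<rho> g h \<otimes>\<^bsub>A\<^esub> \<kappa>' g h \<otimes>\<^bsub>A\<^esub> inv\<^bsub>A\<^esub> (d1 P A \<alpha> f' g h) else \<one>\<^bsub>A\<^esub>)" for g h
  have qC: "q' \<in> C2 P A"
    using rc kc dfc C2_1[OF Z2_C2[OF r]] C2_1[OF k'] C2_1[OF dfC] by (auto simp: C2_def q'_def)
  obtain u where uC: "u \<in> C2 P A" and ue: "\<And>g h. g \<in> carrier P \<Longrightarrow> h \<in> carrier P \<Longrightarrow>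
      q' g h = u g h [^]\<^bsub>A\<^esub> (p ^ K)"
  proof -
    have qp: "\<And>g h. g \<in> carrier P \<Longrightarrow> h \<in> carrier P \<Longrightarrow> q' g h \<in> pT A p K" using q by (simp add: q'_def)
    show ?thesis using root2[OF qC qp] that by blast
  qed
  have uc: "\<And>g h. g \<in> carrier P \<Longrightarrow> h \<in> carrier P \<Longrightarrow> u g h \<in> carrier A" using C2_in[OF uC] .
  have upc: "\<And>g h. g \<in> carrier P \<Longrightarrow> h \<in> carrier P \<Longrightarrow> u g h [^]\<^bsub>A\<^esub> (p ^ K) \<in> carrier A" using uc by simp
  have eq: "\<rho> g h \<otimes>\<^bsub>A\<^esub> \<kappa>' g h = d1 P A \<alpha> f' g h \<otimes>\<^bsub>A\<^esub> u g h [^]\<^bsub>A\<^esub> (p ^ K)" if "g \<in> carrier P" "h \<in> carrier P" for g h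
  proof -
    have "u g h [^]\<^bsub>A\<^esub> (p ^ K) = \<rho> g h \<otimes>\<^bsub>A\<^esub> \<kappa>' g h \<otimes>\<^bsub>A\<^esub> inv\<^bsub>A\<^esub> (d1 P A \<alpha> f' g h)"
      using ue[OF that] that by (simp add: q'_def)
    hence "d1 P A \<alpha> f' g h \<otimes>\<^bsub>A\<^esub> u g h [^]\<^bsub>A\<^esub> (p ^ K)
        = d1 P A \<alpha> f' g h \<otimes>\<^bsub>A\<^esub> (\<rho> g h \<otimes>\<^bsub>A\<^esub> \<kappa>' g h \<otimes>\<^bsub>A\<^esub> inv\<^bsub>A\<^esub> (d1 P A \<alpha> f' g h))" by simp
    also have "\<dots> = \<rho> g h \<otimes>\<^bsub>A\<^esub> \<kappa>' g h" using that rc kc dfc by (simp add: A.frac_eq5)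
    finally show ?thesis by simp
  qed
  have "z g h l = d2 P A \<alpha> u g h l" if g: "g \<in> carrier P" and h: "h \<in> carrier P" and l: "l \<in> carrier P" for g h l
  proof -
    have "d2 P A \<alpha> (\<lambda>x y. \<rho> x y \<otimes>\<^bsub>A\<^esub> \<kappa>' x y) g h l = d2 P A \<alpha> (\<lambda>x y. d1 P A \<alpha> f' x y \<otimes>\<^bsub>A\<^esub> u x y [^]\<^bsub>A\<^esub> (p ^ K)) g h l"
      by (rule d2_cong) (simp_all add: eq g h l)
    moreover have "d2 P A \<alpha> (\<lambda>x y. \<rho> x y \<otimes>\<^bsub>A\<^esub> \<kappa>' x y) g h l = d2 P A \<alpha> \<kappa>' g h l"
      using d2_mult[where f=\<rho> and f'=\<kappa>', OF rc kc g h l] Z2_d2[OF r g h l] d2_closed[where f=\<kappa>', OF kc] by simp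
    moreover have "d2 P A \<alpha> (\<lambda>x y. d1 P A \<alpha> f' x y \<otimes>\<^bsub>A\<^esub> u x y [^]\<^bsub>A\<^esub> (p ^ K)) g h l = d2 P A \<alpha> u g h l [^]\<^bsub>A\<^esub> (p ^ K)"
      using d2_mult[where f="d1 P A \<alpha> f'" and f'="\<lambda>x y. u x y [^]\<^bsub>A\<^esub> (p ^ K)", OF _ upc g h l]
            d2_pow[where f=u, OF uc g h l] d2_d1[where f=f', OF fc g h l] dfc d2_closed[where f=u, OF uc]
      by simp
    ultimately have "z g h l [^]\<^bsub>A\<^esub> (p ^ K) = d2 P A \<alpha> u g h l [^]\<^bsub>A\<^esub> (p ^ K)" using z[OF g h l] by simp
    thus ?thesis using pow_inj z[OF g h l] d2_closed[where f=u, OF uc] by blast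
  qed
  thus ?thesis using uC by blast
qed

lemma stepC:
  assumes fin: "finite (carrier P)" and card: "card (carrier P) = p ^ j" and jK: "j \<le> K"
    and r: "\<rho> \<in> Z2 P A \<alpha>" and f: "f' \<in> C1 P A" and c: "c \<in> C1 P A"
    and q: "\<And>g h. g \<in> carrier P \<Longrightarrow> h \<in> carrier P \<Longrightarrow>
             \<rho> g h \<otimes>\<^bsub>A\<^esub> d1 P A \<alpha> c g h \<otimes>\<^bsub>A\<^esub> inv\<^bsub>A\<^esub> (d1 P A \<alpha> f' g h) \<in> pT A p K"
  shows "\<exists>b\<in>C1 P A. \<forall>g\<in>carrier P. \<forall>h\<in>carrier P. \<rho> g h = d1 P A \<alpha> b g h"
proof -
  have rc: "\<And>g h. g \<in> carrier P \<Longrightarrow> h \<in> carrier P \<Longrightarrow> \<rho> g h \<in> carrier A" using C2_in[OF Z2_C2[OF r]] .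
  have fc: "\<And>g. g \<in> carrier P \<Longrightarrow> f' g \<in> carrier A" using C1_in[OF f] .
  have cc: "\<And>g. g \<in> carrier P \<Longrightarrow> c g \<in> carrier A" using C1_in[OF c] .
  have dfC: "d1 P A \<alpha> f' \<in> C2 P A" by (rule d1_C2[OF f])
  have dcC: "d1 P A \<alpha> c \<in> C2 P A" by (rule d1_C2[OF c])
  have dfc: "\<And>g h. d1 P A \<alpha> f' g h \<in> carrier A" using d1_closed[where f=f', OF fc] .
  have dcc: "\<And>g h. d1 P A \<alpha> c g h \<in> carrier A" using d1_closed[where f=c, OF cc] .
  define s' where "s' g h = (if g \<in> carrier P \<and> h \<in> carrier P
      then \<rho> g h \<otimes>\<^bsub>A\<^esub> d1 P A \<alpha> c g h \<otimes>\<^bsub>A\<^esub> inv\<^bsub>A\<^esub> (d1 P A \<alpha> f' g h) else \<one>\<^bsub>A\<^esub>)" for g h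
  have sC: "s' \<in> C2 P A"
    using rc dcc dfc C2_1[OF Z2_C2[OF r]] C2_1[OF dcC] C2_1[OF dfC] by (auto simp: C2_def s'_def)
  have scc: "\<And>g h. g \<in> carrier P \<Longrightarrow> h \<in> carrier P \<Longrightarrow> s' g h \<in> carrier A" using C2_in[OF sC] .
  obtain u where uC: "u \<in> C2 P A" and ue: "\<And>g h. g \<in> carrier P \<Longrightarrow> h \<in> carrier P \<Longrightarrow>
      s' g h = u g h [^]\<^bsub>A\<^esub> (p ^ K)"
  proof -
    have qp: "\<And>g h. g \<in> carrier P \<Longrightarrow> h \<in> carrier P \<Longrightarrow> s' g h \<in> pT A p K" using q by (simp add: s'_def)
    show ?thesis using root2[OF sC qp] that by blast
  qed
  have uc: "\<And>g h. g \<in> carrier P \<Longrightarrow> h \<in> carrier P \<Longrightarrow> u g h \<in> carrier A" using C2_in[OF uC] .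
  have eq: "\<rho> g h \<otimes>\<^bsub>A\<^esub> d1 P A \<alpha> c g h = s' g h \<otimes>\<^bsub>A\<^esub> d1 P A \<alpha> f' g h" if "g \<in> carrier P" "h \<in> carrier P" for g h
    using that rc dfc dcc by (simp add: s'_def A.m_assoc)
  have d2s: "d2 P A \<alpha> s' g h l = \<one>\<^bsub>A\<^esub>" if g: "g \<in> carrier P" and h: "h \<in> carrier P" and l: "l \<in> carrier P" for g h l
  proof -
    have "d2 P A \<alpha> (\<lambda>x y. \<rho> x y \<otimes>\<^bsub>A\<^esub> d1 P A \<alpha> c x y) g h l = d2 P A \<alpha> (\<lambda>x y. s' x y \<otimes>\<^bsub>A\<^esub> d1 P A \<alpha> f' x y) g h l"
      by (rule d2_cong) (simp_all add: eq g h l)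
    moreover have "d2 P A \<alpha> (\<lambda>x y. \<rho> x y \<otimes>\<^bsub>A\<^esub> d1 P A \<alpha> c x y) g h l = \<one>\<^bsub>A\<^esub>"
      using d2_mult[where f=\<rho> and f'="d1 P A \<alpha> c", OF rc _ g h l] Z2_d2[OF r g h l] d2_d1[where f=c, OF cc g h l] dcc
      by simp
    moreover have "d2 P A \<alpha> (\<lambda>x y. s' x y \<otimes>\<^bsub>A\<^esub> d1 P A \<alpha> f' x y) g h l = d2 P A \<alpha> s' g h l"
      using d2_mult[where f=s' and f'="d1 P A \<alpha> f'", OF scc _ g h l] d2_d1[where f=f', OF fc g h l] dfc
        d2_closed[where f=s', OF scc] by simp
    ultimately show ?thesis by simp
  qed
  have d2u: "d2 P A \<alpha> u g h l = \<one>\<^bsub>A\<^esub>" if g: "g \<in> carrier P" and h: "h \<in> carrier P" and l: "l \<in> carrier P" for g h l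
  proof -
    have "d2 P A \<alpha> s' g h l = d2 P A \<alpha> (\<lambda>x y. u x y [^]\<^bsub>A\<^esub> (p ^ K)) g h l"
      by (rule d2_cong) (simp_all add: ue g h l)
    also have "\<dots> = d2 P A \<alpha> u g h l [^]\<^bsub>A\<^esub> (p ^ K)" by (rule d2_pow[where f=u, OF uc g h l])
    finally show ?thesis using d2s[OF g h l] TF d2_closed[where f=u, OF uc] by metis
  qed
  have uZ: "u \<in> Z2 P A \<alpha>" using uC d2u by (rule Z2I)
  obtain c1 where c1C: "c1 \<in> C1 P A" and c1d: "\<And>g h. g \<in> carrier P \<Longrightarrow> h \<in> carrier P \<Longrightarrow>
      u g h [^]\<^bsub>A\<^esub> (p ^ K) = d1 P A \<alpha> c1 g h"
    using kill_p[OF fin uZ card jK] by blast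
  have c1c: "\<And>g. g \<in> carrier P \<Longrightarrow> c1 g \<in> carrier A" using C1_in[OF c1C] .
  define b where "b x = c1 x \<otimes>\<^bsub>A\<^esub> f' x \<otimes>\<^bsub>A\<^esub> inv\<^bsub>A\<^esub> (c x)" for x
  have bC: "b \<in> C1 P A" unfolding b_def by (intro C1_mult C1_inv c1C f c)
  have "\<rho> g h = d1 P A \<alpha> b g h" if g: "g \<in> carrier P" and h: "h \<in> carrier P" for g h
  proof -
    have cfc: "\<And>x. x \<in> carrier P \<Longrightarrow> c1 x \<otimes>\<^bsub>A\<^esub> f' x \<in> carrier A" using c1c fc by simp
    have ic: "\<And>x. x \<in> carrier P \<Longrightarrow> inv\<^bsub>A\<^esub> (c x) \<in> carrier A" using cc by simp
    have "d1 P A \<alpha> b g h = d1 P A \<alpha> (\<lambda>x. c1 x \<otimes>\<^bsub>A\<^esub> f' x) g h \<otimes>\<^bsub>A\<^esub> d1 P A \<alpha> (\<lambda>x. inv\<^bsub>A\<^esub> (c x)) g h"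
      unfolding b_def by (rule d1_mult[where f="\<lambda>x. c1 x \<otimes>\<^bsub>A\<^esub> f' x" and f'="\<lambda>x. inv\<^bsub>A\<^esub> (c x)", OF cfc ic g h])
    also have "\<dots> = d1 P A \<alpha> c1 g h \<otimes>\<^bsub>A\<^esub> d1 P A \<alpha> f' g h \<otimes>\<^bsub>A\<^esub> inv\<^bsub>A\<^esub> (d1 P A \<alpha> c g h)"
      using d1_mult[where f=c1 and f'=f', OF c1c fc g h] d1_inv[where f=c, OF cc g h] by simp
    also have "\<dots> = s' g h \<otimes>\<^bsub>A\<^esub> d1 P A \<alpha> f' g h \<otimes>\<^bsub>A\<^esub> inv\<^bsub>A\<^esub> (d1 P A \<alpha> c g h)"
      using c1d[OF g h] ue[OF g h] by simp
    also have "\<dots> = \<rho> g h \<otimes>\<^bsub>A\<^esub> d1 P A \<alpha> c g h \<otimes>\<^bsub>A\<^esub> inv\<^bsub>A\<^esub> (d1 P A \<alpha> c g h)"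
      using eq[OF g h] by simp
    also have "\<dots> = \<rho> g h" using rc g h dcc by (simp add: A.m_assoc)
    finally show ?thesis by simp
  qed
  thus ?thesis using bC by blast
qed

end



theorem lemma5p1:
  fixes P :: "'g monoid" and T :: "'a monoid" and \<alpha> :: "'g \<Rightarrow> 'a \<Rightarrow> 'a"
    and p m d :: nat and \<rho> :: "'g \<Rightarrow> 'g \<Rightarrow> 'a" and \<eta> :: "('g \<Rightarrow> 'g \<Rightarrow> 'g \<Rightarrow> 'a) set"
    and K :: "nat \<Rightarrow> ('g \<Rightarrow> 'g \<Rightarrow> 'a set) set" and L :: "'g set" and x :: nat
  assumes p_prime: "Factorial_Ring.prime p"
    and P_group: "group P" and P_finite: "finite (carrier P)" and P_order: "card (carrier P) = p ^ m"
    and T_group: "comm_group T" and T_Zpd: "T \<cong> product_group {..<d} (\<lambda>_. Zp p)"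
    and act_aut: "\<forall>g\<in>carrier P. \<alpha> g \<in> iso T T"
    and act_one: "\<forall>t\<in>carrier T. \<alpha> \<one>\<^bsub>P\<^esub> t = t"
    and act_mult: "\<forall>g\<in>carrier P. \<forall>h\<in>carrier P. \<forall>t\<in>carrier T. \<alpha> (g \<otimes>\<^bsub>P\<^esub> h) t = \<alpha> h (\<alpha> g t)"
    and rho_cocycle: "\<rho> \<in> Z2 P T \<alpha>"
    and S_infinite: "infinite (carrier (Ext P T \<alpha> \<rho>))"
    and S_coclass: "finite_coclass (Ext P T \<alpha> \<rho>) p"
    and T_gamma: "\<exists>l\<ge>1. lcs (Ext P T \<alpha> \<rho>) l = base P T"
    and T_series: "\<forall>i. card (rcosets\<^bsub>(Ext P T \<alpha> \<rho>)\<lparr>carrier := Tser (Ext P T \<alpha> \<rho>) (base P T) i\<rparr>\<^esub>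
                          (Tser (Ext P T \<alpha> \<rho>) (base P T) (Suc i))) = p"
    and eta_H3: "\<eta> \<in> H3 P T \<alpha>"
    and K_compl: "\<forall>y. is_complement2 (Mq T p (y + 3 * m)) (Z2 P (Mq T p (y + 3 * m)) (actM \<alpha>))
                                     (I2 P T \<alpha> p (y + 3 * m)) (K y)"
    and K_J: "\<forall>y. K y \<subseteq> J2 P T \<alpha> p m (y + 3 * m)"
    and K_mul: "\<forall>y. mul2 P T p (y + 3 * m) ` K y = K (Suc y)"
    and K_iso: "\<forall>y. bij_betw (conn P T \<alpha> p (y + 3 * m)) (K y) (H3 P T \<alpha>)"
    and L_elab: "elem_abelian P p L"
  shows "(splits_over (Gx P T \<alpha> p m \<rho> K \<eta> x) (preim (Gx P T \<alpha> p m \<rho> K \<eta> x) L)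
                      (base P (Mq T p (x + 3 * m)))
            \<longleftrightarrow> L \<in> calL_eta P T \<alpha> p \<rho> \<eta>)
       \<and> (splits_over (Gx P T \<alpha> p m \<rho> K \<eta> x) (preim (Gx P T \<alpha> p m \<rho> K \<eta> x) L)
                      (base P (Mq T p (x + 3 * m)))
            \<longrightarrow> splits_over (Ext P T \<alpha> \<rho>) (preim (Ext P T \<alpha> \<rho>) L) (base P T))"
  proof -
  have p0: "p > 0" using p_prime by (simp add: prime_gt_0_nat)
  have gm: "gmod P T \<alpha>"
  proof (rule gmod.intro)
    show "group P" by (rule P_group)
    show "comm_group T" by (rule T_group)
    show "\<And>g. g \<in> carrier P \<Longrightarrow> \<alpha> g \<in> hom T T" using act_aut by (simp add: iso_def)
    show "\<And>t. t \<in> carrier T \<Longrightarrow> \<alpha> \<one>\<^bsub>P\<^esub> t = t" using act_one by simp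
    show "\<And>g h t. g \<in> carrier P \<Longrightarrow> h \<in> carrier P \<Longrightarrow> t \<in> carrier T \<Longrightarrow> \<alpha> (g \<otimes>\<^bsub>P\<^esub> h) t = \<alpha> h (\<alpha> g t)"
      using act_mult by simp
  qed
  interpret G: gmod P T \<alpha> by (rule gm)
  interpret G: tfmod P T \<alpha> p
    by (rule tfmod.intro[OF gm]) (simp add: tfmod_axioms_def TF_from_iso[OF T_group T_Zpd p0])
  define k where "k = x + 3 * m"
  define H where "H = pT T p k"
  interpret Q: gquot P T \<alpha> H unfolding H_def by (rule G.gquot_pT)
  have Lsub: "subgroup L P" using L_elab by (simp add: elem_abelian_def)
  have Lc: "L \<subseteq> carrier P" using subgroup.subset[OF Lsub] .
  let ?PL = "P\<lparr>carrier := L\<rparr>"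
  interpret QL: gquot ?PL T \<alpha> H by (rule Q.gquot_sub[OF Lsub])
  interpret TL: tfmod ?PL T \<alpha> p by (rule G.tfmod_sub[OF Lsub])
  have finL: "finite L" using P_finite Lc finite_subset by blast
  obtain j where cardL: "card L = p ^ j" and jm: "j \<le> m"
  proof -
    have "card (rcosets\<^bsub>P\<^esub> L) * card L = order P" by (rule G.P.lagrange[OF Lsub])
    hence "card L dvd p ^ m" using P_order by (metis dvd_triv_right order_def)
    thus ?thesis using that divides_primepow_nat[OF p_prime] by blast
  qed
  have MqH: "Mq T p k = T Mod H" by (simp add: Mq_def H_def)
  define \<kappa> where "\<kappa> = eta_x P T \<alpha> p m K \<eta> x"
  have \<kappa>prop: "\<kappa> \<in> K x \<and> conn P T \<alpha> p k \<kappa> = \<eta>"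
  proof -
    have bij: "bij_betw (conn P T \<alpha> p k) (K x) (H3 P T \<alpha>)" using K_iso by (simp add: k_def)
    obtain \<kappa>0 where k0: "\<kappa>0 \<in> K x" "conn P T \<alpha> p k \<kappa>0 = \<eta>"
      using bij eta_H3 unfolding bij_betw_def by (metis imageE)
    have "\<exists>!\<kappa>. \<kappa> \<in> K x \<and> conn P T \<alpha> p k \<kappa> = \<eta>"
      using k0 bij unfolding bij_betw_def inj_on_def by blast
    hence "(THE \<kappa>. \<kappa> \<in> K x \<and> conn P T \<alpha> p k \<kappa> = \<eta>) \<in> K x \<and> conn P T \<alpha> p k (THE \<kappa>. \<kappa> \<in> K x \<and> conn P T \<alpha> p k \<kappa> = \<eta>) = \<eta>"
      by (rule theI')
    thus ?thesis by (simp add: \<kappa>_def eta_x_def k_def)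
  qed
  have \<kappa>Z: "\<kappa> \<in> Z2 P (T Mod H) (actM \<alpha>)"
  proof -
    have "K x \<subseteq> Z2 P (Mq T p (x + 3 * m)) (actM \<alpha>)" using K_compl by (simp add: is_complement2_def)
    thus ?thesis using \<kappa>prop MqH unfolding k_def by auto
  qed
  have \<kappa>J: "\<And>g h. g \<in> carrier P \<Longrightarrow> h \<in> carrier P \<Longrightarrow> \<kappa> g h \<in> (\<lambda>t. r_coset T H t) ` pT T p (k - m)"
  proof -
    fix g h assume gh: "g \<in> carrier P" "h \<in> carrier P"
    have "\<kappa> \<in> J2 P T \<alpha> p m k" using K_J \<kappa>prop by (auto simp: k_def)
    thus "\<kappa> g h \<in> (\<lambda>t. r_coset T H t) ` pT T p (k - m)"
      using gh unfolding J2_def Z2_def C2_def H_def by auto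
  qed
  define z where "z = (SOME z. z \<in> C3 P T \<and> (\<exists>\<kappa>'\<in>C2 P T. (\<forall>g\<in>carrier P. \<forall>h\<in>carrier P. \<kappa> g h = r_coset T (pT T p k) (\<kappa>' g h))
      \<and> (\<forall>g\<in>carrier P. \<forall>h\<in>carrier P. \<forall>l\<in>carrier P. z g h l [^]\<^bsub>T\<^esub> (p ^ k) = d2 P T \<alpha> \<kappa>' g h l)))"
  have \<eta>z: "\<eta> = cls3 P T \<alpha> z" using \<kappa>prop by (simp add: conn_def z_def)
  have zspec: "z \<in> C3 P T \<and> (\<exists>\<kappa>'\<in>C2 P T. (\<forall>g\<in>carrier P. \<forall>h\<in>carrier P. \<kappa> g h = r_coset T (pT T p k) (\<kappa>' g h))
      \<and> (\<forall>g\<in>carrier P. \<forall>h\<in>carrier P. \<forall>l\<in>carrier P. z g h l [^]\<^bsub>T\<^esub> (p ^ k) = d2 P T \<alpha> \<kappa>' g h l))"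
    unfolding z_def by (rule someI_ex[OF G.conn_ex]) (use \<kappa>Z in \<open>simp add: H_def\<close>)
  then obtain \<kappa>' where zC: "z \<in> C3 P T" and k'C: "\<kappa>' \<in> C2 P T"
    and \<kappa>e: "\<And>g h. g \<in> carrier P \<Longrightarrow> h \<in> carrier P \<Longrightarrow> \<kappa> g h = Q.cst (\<kappa>' g h)"
    and zp: "\<And>g h l. g \<in> carrier P \<Longrightarrow> h \<in> carrier P \<Longrightarrow> l \<in> carrier P \<Longrightarrow> z g h l [^]\<^bsub>T\<^esub> (p ^ k) = d2 P T \<alpha> \<kappa>' g h l"
    by (auto simp: H_def)
  have k'c: "\<And>g h. g \<in> carrier P \<Longrightarrow> h \<in> carrier P \<Longrightarrow> \<kappa>' g h \<in> carrier T" using G.C2_in[OF k'C] .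
  have k'pT: "\<kappa>' g h \<in> pT T p (k - m)" if g: "g \<in> carrier P" and h: "h \<in> carrier P" for g h
  proof -
    obtain t where t: "t \<in> pT T p (k - m)" and e: "\<kappa> g h = Q.cst t" using \<kappa>J[OF g h] by blast
    have tc: "t \<in> carrier T" using t by (auto simp: pT_def)
    have "\<kappa>' g h \<otimes>\<^bsub>T\<^esub> inv\<^bsub>T\<^esub> t \<in> H" using Q.cos_eq[OF k'c[OF g h] tc] e \<kappa>e[OF g h] by simp
    moreover have "H \<subseteq> pT T p (k - m)" unfolding H_def by (rule G.pT_mono) simp
    ultimately have a: "\<kappa>' g h \<otimes>\<^bsub>T\<^esub> inv\<^bsub>T\<^esub> t \<in> pT T p (k - m)" by blast
    have "\<kappa>' g h = (\<kappa>' g h \<otimes>\<^bsub>T\<^esub> inv\<^bsub>T\<^esub> t) \<otimes>\<^bsub>T\<^esub> t" using k'c[OF g h] tc by (simp add: G.A.m_assoc)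
    thus ?thesis using subgroup.m_closed[OF G.pT_sub a t] by simp
  qed
  have zc: "\<And>g h l. g \<in> carrier P \<Longrightarrow> h \<in> carrier P \<Longrightarrow> l \<in> carrier P \<Longrightarrow> z g h l \<in> carrier T"
    using G.C3_in[OF zC] .
  define z1 where "z1 = (SOME w. w \<in> \<eta>)"
  have z1\<eta>: "z1 \<in> \<eta>"
  proof -
    obtain w0 where "w0 \<in> Z3 P T \<alpha>" "\<eta> = cls3 P T \<alpha> w0" using eta_H3 by (auto simp: H3_def)
    hence "w0 \<in> \<eta>" using G.self_cls3 by simp
    thus ?thesis unfolding z1_def by (rule someI[where P="\<lambda>w. w \<in> \<eta>"])
  qed
  hence z1Z: "z1 \<in> Z3 P T \<alpha>" and z1B: "(\<lambda>g h l. z1 g h l \<otimes>\<^bsub>T\<^esub> inv\<^bsub>T\<^esub> (z g h l)) \<in> B3 P T \<alpha>"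
    using \<eta>z by (simp_all add: cls3_def)
  obtain v where vC: "v \<in> C2 P T" and ve: "\<And>g h l. g \<in> carrier P \<Longrightarrow> h \<in> carrier P \<Longrightarrow> l \<in> carrier P \<Longrightarrow>
      z1 g h l \<otimes>\<^bsub>T\<^esub> inv\<^bsub>T\<^esub> (z g h l) = d2 P T \<alpha> v g h l"
    using z1B unfolding G.B3_iff by blast
  have z1C: "z1 \<in> C3 P T" using z1Z by (simp add: Z3_def)
  have z1e: "z1 g h l = d2 P T \<alpha> v g h l \<otimes>\<^bsub>T\<^esub> z g h l" if "g \<in> carrier P" "h \<in> carrier P" "l \<in> carrier P" for g h l
  proof -
    have "d2 P T \<alpha> v g h l \<otimes>\<^bsub>T\<^esub> z g h l = z1 g h l \<otimes>\<^bsub>T\<^esub> inv\<^bsub>T\<^esub> (z g h l) \<otimes>\<^bsub>T\<^esub> z g h l"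
      using ve[OF that] by simp
    also have "\<dots> = z1 g h l" using G.C3_in[OF z1C that] zc[OF that] by (simp add: G.A.m_assoc)
    finally show ?thesis by simp
  qed
  let ?rv = "res2 T L v"
  have rvC: "?rv \<in> C2 ?PL T" by (rule G.res2_C2[OF Lsub vC])
  have rvc: "\<And>g h. g \<in> L \<Longrightarrow> h \<in> L \<Longrightarrow> ?rv g h \<in> carrier T" using QL.C2_in[OF rvC] by simp
  have rvd: "d2 ?PL T \<alpha> ?rv g h l = d2 P T \<alpha> v g h l" if "g \<in> L" "h \<in> L" "l \<in> L" for g h l
    using G.res_d2[OF Lsub that] .
  have d2rvc: "\<And>g h l. d2 ?PL T \<alpha> ?rv g h l \<in> carrier T"
    using QL.d2_closed[where f="?rv"] rvc by simp
  have resH3_iff: "resH3 P T \<alpha> L \<eta> = cls3 ?PL T \<alpha> (\<lambda>_ _ _. \<one>\<^bsub>T\<^esub>) \<longleftrightarrow>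
      (\<exists>\<omega>\<in>C2 ?PL T. \<forall>g\<in>L. \<forall>h\<in>L. \<forall>l\<in>L. z g h l = d2 ?PL T \<alpha> \<omega> g h l)"
  proof -
    have r3C: "res3 T L z1 \<in> C3 ?PL T" by (rule G.res3_C3[OF Lsub z1C])
    have "resH3 P T \<alpha> L \<eta> = cls3 ?PL T \<alpha> (res3 T L z1)" by (simp add: resH3_def z1_def)
    hence "resH3 P T \<alpha> L \<eta> = cls3 ?PL T \<alpha> (\<lambda>_ _ _. \<one>\<^bsub>T\<^esub>) \<longleftrightarrow>
        (\<exists>\<omega>\<in>C2 ?PL T. \<forall>g\<in>L. \<forall>h\<in>L. \<forall>l\<in>L. res3 T L z1 g h l = d2 ?PL T \<alpha> \<omega> g h l)"
      using QL.cls3_zero_iff[OF r3C] by simp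
    also have "\<dots> \<longleftrightarrow> (\<exists>\<omega>\<in>C2 ?PL T. \<forall>g\<in>L. \<forall>h\<in>L. \<forall>l\<in>L. z g h l = d2 ?PL T \<alpha> \<omega> g h l)"
    proof
      assume "\<exists>\<omega>\<in>C2 ?PL T. \<forall>g\<in>L. \<forall>h\<in>L. \<forall>l\<in>L. res3 T L z1 g h l = d2 ?PL T \<alpha> \<omega> g h l"
      then obtain \<omega> where wC: "\<omega> \<in> C2 ?PL T" and we: "\<And>g h l. g \<in> L \<Longrightarrow> h \<in> L \<Longrightarrow> l \<in> L \<Longrightarrow>
          res3 T L z1 g h l = d2 ?PL T \<alpha> \<omega> g h l" by blast
      have wc: "\<And>g h. g \<in> L \<Longrightarrow> h \<in> L \<Longrightarrow> \<omega> g h \<in> carrier T" using QL.C2_in[OF wC] by simp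
      have rvic: "\<And>g h. g \<in> L \<Longrightarrow> h \<in> L \<Longrightarrow> inv\<^bsub>T\<^esub> (?rv g h) \<in> carrier T" using rvc by simp
      have "z g h l = d2 ?PL T \<alpha> (\<lambda>x y. inv\<^bsub>T\<^esub> (?rv x y) \<otimes>\<^bsub>T\<^esub> \<omega> x y) g h l"
        if g: "g \<in> L" and h: "h \<in> L" and l: "l \<in> L" for g h l
      proof -
        have gP: "g \<in> carrier P" "h \<in> carrier P" "l \<in> carrier P" using g h l Lc by auto
        have "d2 ?PL T \<alpha> (\<lambda>x y. inv\<^bsub>T\<^esub> (?rv x y) \<otimes>\<^bsub>T\<^esub> \<omega> x y) g h l
            = d2 ?PL T \<alpha> (\<lambda>x y. inv\<^bsub>T\<^esub> (?rv x y)) g h l \<otimes>\<^bsub>T\<^esub> d2 ?PL T \<alpha> \<omega> g h l"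
          using QL.d2_mult[where f="\<lambda>x y. inv\<^bsub>T\<^esub> (?rv x y)" and f'=\<omega>] rvic wc g h l by simp
        also have "\<dots> = inv\<^bsub>T\<^esub> (d2 P T \<alpha> v g h l) \<otimes>\<^bsub>T\<^esub> z1 g h l"
          using QL.d2_inv[where f="?rv"] rvc g h l rvd[OF g h l] we[OF g h l] by (simp add: res3_def)
        also have "\<dots> = z g h l" using z1e[OF gP] zc[OF gP] G.d2_closed[where f=v] G.C2_in[OF vC]
          by (simp add: G.A.m_assoc[symmetric])
        finally show ?thesis by simp
      qed
      moreover have "(\<lambda>x y. inv\<^bsub>T\<^esub> (?rv x y) \<otimes>\<^bsub>T\<^esub> \<omega> x y) \<in> C2 ?PL T"
        by (rule QL.C2_mult[OF QL.C2_inv[OF rvC] wC])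
      ultimately show "\<exists>\<omega>\<in>C2 ?PL T. \<forall>g\<in>L. \<forall>h\<in>L. \<forall>l\<in>L. z g h l = d2 ?PL T \<alpha> \<omega> g h l" by blast
    next
      assume "\<exists>\<omega>\<in>C2 ?PL T. \<forall>g\<in>L. \<forall>h\<in>L. \<forall>l\<in>L. z g h l = d2 ?PL T \<alpha> \<omega> g h l"
      then obtain \<omega> where wC: "\<omega> \<in> C2 ?PL T" and we: "\<And>g h l. g \<in> L \<Longrightarrow> h \<in> L \<Longrightarrow> l \<in> L \<Longrightarrow>
          z g h l = d2 ?PL T \<alpha> \<omega> g h l" by blast
      have wc: "\<And>g h. g \<in> L \<Longrightarrow> h \<in> L \<Longrightarrow> \<omega> g h \<in> carrier T" using QL.C2_in[OF wC] by simp
      have "res3 T L z1 g h l = d2 ?PL T \<alpha> (\<lambda>x y. ?rv x y \<otimes>\<^bsub>T\<^esub> \<omega> x y) g h l"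
        if g: "g \<in> L" and h: "h \<in> L" and l: "l \<in> L" for g h l
      proof -
        have gP: "g \<in> carrier P" "h \<in> carrier P" "l \<in> carrier P" using g h l Lc by auto
        have "d2 ?PL T \<alpha> (\<lambda>x y. ?rv x y \<otimes>\<^bsub>T\<^esub> \<omega> x y) g h l
            = d2 ?PL T \<alpha> ?rv g h l \<otimes>\<^bsub>T\<^esub> d2 ?PL T \<alpha> \<omega> g h l"
          using QL.d2_mult[where f="?rv" and f'=\<omega>] rvc wc g h l by simp
        also have "\<dots> = z1 g h l" using rvd[OF g h l] we[OF g h l] z1e[OF gP] by simp
        finally show ?thesis using g h l by (simp add: res3_def)
      qed
      moreover have "(\<lambda>x y. ?rv x y \<otimes>\<^bsub>T\<^esub> \<omega> x y) \<in> C2 ?PL T" by (rule QL.C2_mult[OF rvC wC])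
      ultimately show "\<exists>\<omega>\<in>C2 ?PL T. \<forall>g\<in>L. \<forall>h\<in>L. \<forall>l\<in>L. res3 T L z1 g h l = d2 ?PL T \<alpha> \<omega> g h l" by blast
    qed
    finally show ?thesis .
  qed
  have rc: "\<And>g h. g \<in> carrier P \<Longrightarrow> h \<in> carrier P \<Longrightarrow> \<rho> g h \<in> carrier T"
    using G.C2_in[OF G.Z2_C2[OF rho_cocycle]] .
  have ghP: "g \<in> carrier P" if "g \<in> L" for g using that Lc by auto
  let ?r\<rho> = "res2 T L \<rho>" and ?r\<kappa> = "res2 T L \<kappa>'"
  have r\<rho>Z: "?r\<rho> \<in> Z2 ?PL T \<alpha>"
  proof (rule QL.Z2I)
    show "?r\<rho> \<in> C2 ?PL T" by (rule G.res2_C2[OF Lsub G.Z2_C2[OF rho_cocycle]])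
    fix g h l assume "g \<in> carrier ?PL" "h \<in> carrier ?PL" "l \<in> carrier ?PL"
    hence gl: "g \<in> L" "h \<in> L" "l \<in> L" by simp_all
    show "d2 ?PL T \<alpha> ?r\<rho> g h l = \<one>\<^bsub>T\<^esub>"
      using G.res_d2[OF Lsub gl] G.Z2_d2[OF rho_cocycle ghP[OF gl(1)] ghP[OF gl(2)] ghP[OF gl(3)]] by simp
  qed
  have r\<kappa>C: "?r\<kappa> \<in> C2 ?PL T" by (rule G.res2_C2[OF Lsub k'C])
  have B2L_iff: "?r\<rho> \<in> B2 ?PL T \<alpha> \<longleftrightarrow> (\<exists>b\<in>C1 ?PL T. \<forall>g\<in>L. \<forall>h\<in>L. \<rho> g h = d1 ?PL T \<alpha> b g h)"
  proof
    assume "?r\<rho> \<in> B2 ?PL T \<alpha>"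
    then obtain b where b: "b \<in> C1 ?PL T" and e: "?r\<rho> = d1 ?PL T \<alpha> b" by (auto simp: B2_def)
    have "\<forall>g\<in>L. \<forall>h\<in>L. \<rho> g h = d1 ?PL T \<alpha> b g h"
    proof (intro ballI)
      fix g h assume "g \<in> L" "h \<in> L"
      thus "\<rho> g h = d1 ?PL T \<alpha> b g h" using fun_cong[OF fun_cong[OF e, of g], of h] by (simp add: res2_def)
    qed
    thus "\<exists>b\<in>C1 ?PL T. \<forall>g\<in>L. \<forall>h\<in>L. \<rho> g h = d1 ?PL T \<alpha> b g h" using b by blast
  next
    assume "\<exists>b\<in>C1 ?PL T. \<forall>g\<in>L. \<forall>h\<in>L. \<rho> g h = d1 ?PL T \<alpha> b g h"
    then obtain b where b: "b \<in> C1 ?PL T" and e: "\<And>g h. g \<in> L \<Longrightarrow> h \<in> L \<Longrightarrow> \<rho> g h = d1 ?PL T \<alpha> b g h" by blast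
    have "?r\<rho> = d1 ?PL T \<alpha> b"
    proof (intro ext)
      fix g h show "?r\<rho> g h = d1 ?PL T \<alpha> b g h"
        using e by (cases "g \<in> L \<and> h \<in> L") (auto simp: res2_def d1_def)
    qed
    thus "?r\<rho> \<in> B2 ?PL T \<alpha>" using b by (auto simp: B2_def)
  qed
  define \<tau> where "\<tau> = cadd2 (T Mod H) (proj2 P T p k \<rho>) \<kappa>"
  have proj: "proj2 P T p k \<rho> = (\<lambda>g h. Q.cst (\<rho> g h))"
  proof (intro ext)
    fix g h show "proj2 P T p k \<rho> g h = Q.cst (\<rho> g h)"
    proof (cases "g \<in> carrier P \<and> h \<in> carrier P")
      case True thus ?thesis by (simp add: proj2_def H_def)
    next
      case False
      hence "\<rho> g h = \<one>\<^bsub>T\<^esub>" using G.C2_out[OF G.Z2_C2[OF rho_cocycle]] by blast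
      thus ?thesis using False Q.cos_one by (simp add: proj2_def H_def)
    qed
  qed
  have \<tau>Z: "\<tau> \<in> Z2 P (T Mod H) (actM \<alpha>)"
    unfolding \<tau>_def cadd2_def proj using Q.M.Z2_mult[OF Q.Z2_cst[OF rho_cocycle] \<kappa>Z] by simp
  have \<tau>v: "\<tau> g h = Q.cst (\<rho> g h \<otimes>\<^bsub>T\<^esub> \<kappa>' g h)" if "g \<in> carrier P" "h \<in> carrier P" for g h
    using that \<kappa>e[OF that] rc[OF that] k'c[OF that] by (simp add: \<tau>_def cadd2_def proj Q.H.rcos_sum)
  have Gx_eq: "Gx P T \<alpha> p m \<rho> K \<eta> x = Ext P (T Mod H) (actM \<alpha>) \<tau>"
    by (simp add: Gx_def \<tau>_def \<kappa>_def k_def[symmetric] MqH)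
  have base_eq: "base P (Mq T p (x + 3 * m)) = base P (T Mod H)"
    by (simp add: k_def[symmetric] MqH)
  have splitiff: "splits_over (Gx P T \<alpha> p m \<rho> K \<eta> x) (preim (Gx P T \<alpha> p m \<rho> K \<eta> x) L) (base P (Mq T p (x + 3 * m)))
      \<longleftrightarrow> (\<exists>f\<in>C1 ?PL (T Mod H). \<forall>g\<in>L. \<forall>h\<in>L. \<tau> g h = d1 ?PL (T Mod H) (actM \<alpha>) f g h)"
    unfolding Gx_eq base_eq by (rule Q.M.split_iff[OF \<tau>Z Lsub])
  have cardPL: "card (carrier ?PL) = p ^ j" using cardL by simp
  have finPL: "finite (carrier ?PL)" using finL by simp
  have km: "k - m + m = k" by (simp add: k_def)
  have jkm: "j \<le> k - m" using jm by (simp add: k_def)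
  have jk: "j \<le> k" using jm by (simp add: k_def)
  have r\<kappa>pT: "\<And>g h. g \<in> carrier ?PL \<Longrightarrow> h \<in> carrier ?PL \<Longrightarrow> ?r\<kappa> g h \<in> pT T p (k - m)"
    using k'pT ghP by (simp add: res2_def)
  have cst_pow: "Q.cst (t [^]\<^bsub>T\<^esub> (p ^ k)) = \<one>\<^bsub>T Mod H\<^esub>" if "t \<in> carrier T" for t
    using Q.cos_eq_one[of "t [^]\<^bsub>T\<^esub> (p ^ k)"] G.pow_in_pT[OF that] that by (simp add: H_def)
  have stA: "\<exists>c\<in>C1 ?PL T. \<forall>g\<in>L. \<forall>h\<in>L. Q.cst (\<kappa>' g h) = Q.cst (d1 ?PL T \<alpha> c g h)"
    if w: "\<omega> \<in> C2 ?PL T" and we: "\<And>g h l. g \<in> L \<Longrightarrow> h \<in> L \<Longrightarrow> l \<in> L \<Longrightarrow> z g h l = d2 ?PL T \<alpha> \<omega> g h l" for \<omega>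
  proof -
    have dz: "d2 ?PL T \<alpha> \<omega> g h l [^]\<^bsub>T\<^esub> (p ^ (k - m + m)) = d2 ?PL T \<alpha> ?r\<kappa> g h l"
      if "g \<in> carrier ?PL" "h \<in> carrier ?PL" "l \<in> carrier ?PL" for g h l
    proof -
      have gl: "g \<in> L" "h \<in> L" "l \<in> L" using that by simp_all
      show ?thesis using we[OF gl] zp[OF ghP[OF gl(1)] ghP[OF gl(2)] ghP[OF gl(3)]] G.res_d2[OF Lsub gl] km by simp
    qed
    obtain c where cC: "c \<in> C1 ?PL T" and ce: "\<And>g h. g \<in> carrier ?PL \<Longrightarrow> h \<in> carrier ?PL \<Longrightarrow>
        ?r\<kappa> g h = d1 ?PL T \<alpha> c g h \<otimes>\<^bsub>T\<^esub> \<omega> g h [^]\<^bsub>T\<^esub> (p ^ (k - m + m))"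
      using TL.stepA[OF finPL cardPL jkm r\<kappa>C r\<kappa>pT w dz] by blast
    have cc: "\<And>g. g \<in> L \<Longrightarrow> c g \<in> carrier T" using QL.C1_in[OF cC] by simp
    have wc: "\<And>g h. g \<in> L \<Longrightarrow> h \<in> L \<Longrightarrow> \<omega> g h \<in> carrier T" using QL.C2_in[OF w] by simp
    have "Q.cst (\<kappa>' g h) = Q.cst (d1 ?PL T \<alpha> c g h)" if g: "g \<in> L" and h: "h \<in> L" for g h
    proof -
      have dc: "d1 ?PL T \<alpha> c g h \<in> carrier T" using QL.d1_closed[where f=c] cc by simp
      have "\<kappa>' g h = d1 ?PL T \<alpha> c g h \<otimes>\<^bsub>T\<^esub> \<omega> g h [^]\<^bsub>T\<^esub> (p ^ k)" using ce[of g h] g h km by (simp add: res2_def)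
      hence "Q.cst (\<kappa>' g h) = Q.cst (d1 ?PL T \<alpha> c g h) \<otimes>\<^bsub>T Mod H\<^esub> Q.cst (\<omega> g h [^]\<^bsub>T\<^esub> (p ^ k))"
        using Q.cos_mult dc wc[OF g h] by simp
      also have "\<dots> = Q.cst (d1 ?PL T \<alpha> c g h)"
        by (subst cst_pow[OF wc[OF g h]]) (rule Q.M.A.r_one[OF Q.cos_in[OF dc]])
      finally show ?thesis .
    qed
    thus ?thesis using cC by blast
  qed
  have fwd: "L \<in> calL_eta P T \<alpha> p \<rho> \<eta>"
    if sp: "\<exists>f\<in>C1 ?PL (T Mod H). \<forall>g\<in>L. \<forall>h\<in>L. \<tau> g h = d1 ?PL (T Mod H) (actM \<alpha>) f g h"
  proof -
    obtain f where fC: "f \<in> C1 ?PL (T Mod H)" and fe: "\<And>g h. g \<in> L \<Longrightarrow> h \<in> L \<Longrightarrow> \<tau> g h = d1 ?PL (T Mod H) (actM \<alpha>) f g h"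
      using sp by blast
    obtain f' where f'C: "f' \<in> C1 ?PL T" and f'e: "\<And>g. g \<in> carrier ?PL \<Longrightarrow> f g = QL.cst (f' g)"
      using QL.lift1[OF fC] by blast
    have f'c: "\<And>g. g \<in> carrier ?PL \<Longrightarrow> f' g \<in> carrier T" using QL.C1_in[OF f'C] .
    have df'c: "\<And>g h. d1 ?PL T \<alpha> f' g h \<in> carrier T" using QL.d1_closed[where f=f', OF f'c] .
    have eqM: "Q.cst (\<rho> g h \<otimes>\<^bsub>T\<^esub> \<kappa>' g h) = Q.cst (d1 ?PL T \<alpha> f' g h)" if g: "g \<in> L" and h: "h \<in> L" for g h
    proof -
      have "\<tau> g h = d1 ?PL (T Mod H) (actM \<alpha>) (\<lambda>x. QL.cst (f' x)) g h"
        using fe[OF g h] QL.M.d1_cong[of f "\<lambda>x. QL.cst (f' x)" g h] f'e g h by simp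
      also have "\<dots> = QL.cst (d1 ?PL T \<alpha> f' g h)" using QL.cos_d1[where f=f', OF f'c] g h by simp
      finally show ?thesis using \<tau>v[OF ghP[OF g] ghP[OF h]] by simp
    qed
    have qB: "?r\<rho> g h \<otimes>\<^bsub>T\<^esub> ?r\<kappa> g h \<otimes>\<^bsub>T\<^esub> inv\<^bsub>T\<^esub> (d1 ?PL T \<alpha> f' g h) \<in> pT T p k"
      if "g \<in> carrier ?PL" "h \<in> carrier ?PL" for g h
    proof -
      have gh: "g \<in> L" "h \<in> L" using that by simp_all
      have "\<rho> g h \<otimes>\<^bsub>T\<^esub> \<kappa>' g h \<otimes>\<^bsub>T\<^esub> inv\<^bsub>T\<^esub> (d1 ?PL T \<alpha> f' g h) \<in> H"
        using Q.cos_eq eqM[OF gh] rc k'c ghP gh df'c by simp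
      thus ?thesis using gh by (simp add: res2_def H_def)
    qed
    have zB: "z g h l \<in> carrier T \<and> z g h l [^]\<^bsub>T\<^esub> (p ^ k) = d2 ?PL T \<alpha> ?r\<kappa> g h l"
      if "g \<in> carrier ?PL" "h \<in> carrier ?PL" "l \<in> carrier ?PL" for g h l
    proof -
      have gl: "g \<in> L" "h \<in> L" "l \<in> L" using that by simp_all
      show ?thesis using zc zp ghP gl G.res_d2[OF Lsub gl] by simp
    qed
    obtain \<omega> where wC: "\<omega> \<in> C2 ?PL T" and we: "\<And>g h l. g \<in> carrier ?PL \<Longrightarrow> h \<in> carrier ?PL \<Longrightarrow> l \<in> carrier ?PL \<Longrightarrow>
        z g h l = d2 ?PL T \<alpha> \<omega> g h l"
      using TL.stepB[OF r\<rho>Z r\<kappa>C f'C qB zB] by blast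
    have we': "\<And>g h l. g \<in> L \<Longrightarrow> h \<in> L \<Longrightarrow> l \<in> L \<Longrightarrow> z g h l = d2 ?PL T \<alpha> \<omega> g h l" using we by simp
    have resz: "resH3 P T \<alpha> L \<eta> = cls3 ?PL T \<alpha> (\<lambda>_ _ _. \<one>\<^bsub>T\<^esub>)" using resH3_iff wC we' by blast
    obtain c where cC: "c \<in> C1 ?PL T" and ce: "\<And>g h. g \<in> L \<Longrightarrow> h \<in> L \<Longrightarrow> Q.cst (\<kappa>' g h) = Q.cst (d1 ?PL T \<alpha> c g h)"
      using stA[OF wC we'] by blast
    have cc: "\<And>g. g \<in> carrier ?PL \<Longrightarrow> c g \<in> carrier T" using QL.C1_in[OF cC] .
    have dcc: "\<And>g h. d1 ?PL T \<alpha> c g h \<in> carrier T" using QL.d1_closed[where f=c, OF cc] .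
    have qC: "?r\<rho> g h \<otimes>\<^bsub>T\<^esub> d1 ?PL T \<alpha> c g h \<otimes>\<^bsub>T\<^esub> inv\<^bsub>T\<^esub> (d1 ?PL T \<alpha> f' g h) \<in> pT T p k"
      if "g \<in> carrier ?PL" "h \<in> carrier ?PL" for g h
    proof -
      have gh: "g \<in> L" "h \<in> L" using that by simp_all
      have "Q.cst (\<rho> g h \<otimes>\<^bsub>T\<^esub> d1 ?PL T \<alpha> c g h) = Q.cst (\<rho> g h) \<otimes>\<^bsub>T Mod H\<^esub> Q.cst (d1 ?PL T \<alpha> c g h)"
        using Q.cos_mult rc ghP gh dcc by simp
      also have "\<dots> = Q.cst (\<rho> g h) \<otimes>\<^bsub>T Mod H\<^esub> Q.cst (\<kappa>' g h)" using ce[OF gh] by simp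
      also have "\<dots> = Q.cst (d1 ?PL T \<alpha> f' g h)" using Q.cos_mult rc k'c ghP gh eqM[OF gh] by simp
      finally have "\<rho> g h \<otimes>\<^bsub>T\<^esub> d1 ?PL T \<alpha> c g h \<otimes>\<^bsub>T\<^esub> inv\<^bsub>T\<^esub> (d1 ?PL T \<alpha> f' g h) \<in> H"
        using Q.cos_eq rc ghP gh dcc df'c by simp
      thus ?thesis using gh by (simp add: res2_def H_def)
    qed
    obtain b where bC: "b \<in> C1 ?PL T" and be: "\<And>g h. g \<in> carrier ?PL \<Longrightarrow> h \<in> carrier ?PL \<Longrightarrow> ?r\<rho> g h = d1 ?PL T \<alpha> b g h"
      using TL.stepC[OF finPL cardPL jk r\<rho>Z f'C cC qC] by blast
    have "\<forall>g\<in>L. \<forall>h\<in>L. \<rho> g h = d1 ?PL T \<alpha> b g h" using be by (simp add: res2_def)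
    hence "?r\<rho> \<in> B2 ?PL T \<alpha>" using B2L_iff bC by blast
    thus ?thesis using L_elab resz by (simp add: calL_eta_def calL_def)
  qed
  have bwd: "\<exists>f\<in>C1 ?PL (T Mod H). \<forall>g\<in>L. \<forall>h\<in>L. \<tau> g h = d1 ?PL (T Mod H) (actM \<alpha>) f g h"
    if Le: "L \<in> calL_eta P T \<alpha> p \<rho> \<eta>"
  proof -
    have "?r\<rho> \<in> B2 ?PL T \<alpha>" and resz: "resH3 P T \<alpha> L \<eta> = cls3 ?PL T \<alpha> (\<lambda>_ _ _. \<one>\<^bsub>T\<^esub>)"
      using Le by (simp_all add: calL_eta_def calL_def)
    then obtain b where bC: "b \<in> C1 ?PL T" and be: "\<And>g h. g \<in> L \<Longrightarrow> h \<in> L \<Longrightarrow> \<rho> g h = d1 ?PL T \<alpha> b g h"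
      using B2L_iff by blast
    obtain \<omega> where wC: "\<omega> \<in> C2 ?PL T" and we: "\<And>g h l. g \<in> L \<Longrightarrow> h \<in> L \<Longrightarrow> l \<in> L \<Longrightarrow> z g h l = d2 ?PL T \<alpha> \<omega> g h l"
      using resz resH3_iff by blast
    obtain c where cC: "c \<in> C1 ?PL T" and ce: "\<And>g h. g \<in> L \<Longrightarrow> h \<in> L \<Longrightarrow> Q.cst (\<kappa>' g h) = Q.cst (d1 ?PL T \<alpha> c g h)"
      using stA[OF wC we] by blast
    have bc: "\<And>g. g \<in> carrier ?PL \<Longrightarrow> b g \<in> carrier T" using QL.C1_in[OF bC] .
    have cc: "\<And>g. g \<in> carrier ?PL \<Longrightarrow> c g \<in> carrier T" using QL.C1_in[OF cC] .
    have bcc: "\<And>g. g \<in> carrier ?PL \<Longrightarrow> b g \<otimes>\<^bsub>T\<^esub> c g \<in> carrier T" using bc cc by simp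
    define f where "f x = QL.cst (b x \<otimes>\<^bsub>T\<^esub> c x)" for x
    have fC: "f \<in> C1 ?PL (T Mod H)"
    proof -
      have bcC: "(\<lambda>x. b x \<otimes>\<^bsub>T\<^esub> c x) \<in> C1 ?PL T" by (rule QL.C1_mult[OF bC cC])
      have a: "\<forall>g\<in>carrier ?PL. f g \<in> carrier (T Mod H)" using bcc Q.cos_in by (simp add: f_def)
      have o: "\<forall>g. g \<notin> carrier ?PL \<longrightarrow> f g = \<one>\<^bsub>T Mod H\<^esub>"
        using QL.C1_out[OF bcC] Q.cos_one by (simp add: f_def)
      have i: "f \<one>\<^bsub>?PL\<^esub> = \<one>\<^bsub>T Mod H\<^esub>" using QL.C1_1[OF bcC] Q.cos_one by (simp add: f_def)
      show ?thesis unfolding C1_def using a o i by blast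
    qed
    have "\<tau> g h = d1 ?PL (T Mod H) (actM \<alpha>) f g h" if g: "g \<in> L" and h: "h \<in> L" for g h
    proof -
      have dbc: "\<And>g h. d1 ?PL T \<alpha> b g h \<in> carrier T" using QL.d1_closed[where f=b, OF bc] .
      have dcc: "\<And>g h. d1 ?PL T \<alpha> c g h \<in> carrier T" using QL.d1_closed[where f=c, OF cc] .
      have "\<tau> g h = Q.cst (\<rho> g h) \<otimes>\<^bsub>T Mod H\<^esub> Q.cst (\<kappa>' g h)"
        using \<tau>v[OF ghP[OF g] ghP[OF h]] Q.cos_mult rc k'c ghP g h by simp
      also have "\<dots> = Q.cst (d1 ?PL T \<alpha> b g h) \<otimes>\<^bsub>T Mod H\<^esub> Q.cst (d1 ?PL T \<alpha> c g h)"
        using be[OF g h] ce[OF g h] by simp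
      also have "\<dots> = Q.cst (d1 ?PL T \<alpha> (\<lambda>x. b x \<otimes>\<^bsub>T\<^esub> c x) g h)"
        using Q.cos_mult dbc dcc QL.d1_mult[where f=b and f'=c, OF bc cc] g h by simp
      also have "\<dots> = d1 ?PL (T Mod H) (actM \<alpha>) f g h"
        unfolding f_def using QL.cos_d1[where f="\<lambda>x. b x \<otimes>\<^bsub>T\<^esub> c x", OF bcc] g h by simp
      finally show ?thesis .
    qed
    thus ?thesis using fC by blast
  qed
  have Tsplit: "splits_over (Ext P T \<alpha> \<rho>) (preim (Ext P T \<alpha> \<rho>) L) (base P T)"
    if "L \<in> calL_eta P T \<alpha> p \<rho> \<eta>"
  proof -
    have "?r\<rho> \<in> B2 ?PL T \<alpha>" using that by (simp add: calL_eta_def calL_def)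
    hence "\<exists>b\<in>C1 ?PL T. \<forall>g\<in>L. \<forall>h\<in>L. \<rho> g h = d1 ?PL T \<alpha> b g h" using B2L_iff by blast
    thus ?thesis using G.split_iff[OF rho_cocycle Lsub] by simp
  qed
  show ?thesis using splitiff fwd bwd Tsplit by blast
qed

end
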